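(* Let $r_0>0$ and let $(X_t)_{t\in(0,r_0]}$ be a family of Banach spaces with bounded linear injective operators $j_{s,r}\in L(X_r;X_s)$ with dense image for $0<s\le r\le r_0$, such that $j_{s,s}=\mathrm{Id}$ and $j_{s,c}j_{c,r}=j_{s,r}$ for $0<s\le c\le r\le r_0$. Let $\mathcal{B}$ be a Banach space and $U\subset\mathcal{B}$ a non-empty open convex set. Let $(Q_{s,r}(u))$ be an equivariant $(\gamma,0)$-regular family, write $Q_s(u)=Q_{s,s}(u)\in L(X_s)$, and suppose $\mathbf{1}-Q_s(u)$ is invertible for all $0<s\le r_0$, $u\in U$, with inverse $R_s(u)=(\mathbf{1}-Q_s(u))^{-1}$ uniformly bounded for $\epsilon<s\le r_0$ (and $u\in U$) for every $\epsilon>0$. Then the family $R_{s,r}(u)=j_{s,r}R_r(u)$, $0<s<r\le r_0$, is again equivariant and $(\gamma,0)$-regular.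
   Context: For $\gamma>0$ with $\gamma\le r_0$, let $I_0=\{(s,r)\in(0,r_0]^2:s\le r\}$. A family of operators $M_{s,r}(u)\in L(X_r,X_s)$, $(s,r)\in I_0$, $u\in U$, is equivariant and $(\gamma,0)$-regular if (i) $j_{s,s'}M_{s',r'}(u)=M_{s,r}(u)j_{r,r'}$ for all $(s,r),(s',r')\in I_0$ with $s<s'$, $r<r'$, and (ii) $u\mapsto M_{s,r}(u)\in L(X_r,X_s)$ is $C^t$ for all $(s,r)\in I_0$ and $0\le t<\gamma\wedge(r-s)$. For $t=k+\alpha$ ($k\in\mathbb{N}_0$, $\alpha\in(0,1]$), $C^t$ means $k$ times Fréchet differentiable with bounded derivatives and $\alpha$-Hölder $k$-th derivative; $C^0$ means continuous. *)

theory Defs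
  imports "HOL-Analysis.Analysis"
begin

text \<open>Scale of Banach spaces X_t, t in (0,r0], realised as subspaces V t of one ambient
real vector space, each with its own norm nrm t.\<close>

definition is_norm_on :: "'x::real_vector set \<Rightarrow> ('x \<Rightarrow> real) \<Rightarrow> bool" where
  "is_norm_on W n \<longleftrightarrow>
     (\<forall>x\<in>W. 0 \<le> n x) \<and> (\<forall>x\<in>W. n x = 0 \<longleftrightarrow> x = 0) \<and>
     (\<forall>x\<in>W. \<forall>a. n (a *\<^sub>R x) = \<bar>a\<bar> * n x) \<and>
     (\<forall>x\<in>W. \<forall>y\<in>W. n (x + y) \<le> n x + n y)"

definition is_banach_on :: "'x::real_vector set \<Rightarrow> ('x \<Rightarrow> real) \<Rightarrow> bool" where
  "is_banach_on W n \<longleftrightarrow> subspace W \<and> is_norm_on W n \<and>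
     (\<forall>f::nat \<Rightarrow> 'x. (\<forall>i. f i \<in> W) \<longrightarrow>
        (\<forall>e>0. \<exists>N. \<forall>m\<ge>N. \<forall>k\<ge>N. n (f m - f k) < e) \<longrightarrow>
        (\<exists>x\<in>W. \<forall>e>0. \<exists>N. \<forall>m\<ge>N. n (f m - x) < e))"

definition bounded_op ::
  "(real \<Rightarrow> 'x::real_vector set) \<Rightarrow> (real \<Rightarrow> 'x \<Rightarrow> real) \<Rightarrow> real \<Rightarrow> real \<Rightarrow> ('x \<Rightarrow> 'x) \<Rightarrow> bool" where
  "bounded_op V nrm s r T \<longleftrightarrow>
     (\<forall>x\<in>V r. T x \<in> V s) \<and>
     (\<forall>x\<in>V r. \<forall>y\<in>V r. T (x + y) = T x + T y) \<and>
     (\<forall>x\<in>V r. \<forall>a. T (a *\<^sub>R x) = a *\<^sub>R T x) \<and>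
     (\<exists>C. \<forall>x\<in>V r. nrm s (T x) \<le> C * nrm r x)"

definition opnorm ::
  "(real \<Rightarrow> 'x::real_vector set) \<Rightarrow> (real \<Rightarrow> 'x \<Rightarrow> real) \<Rightarrow> real \<Rightarrow> real \<Rightarrow> ('x \<Rightarrow> 'x) \<Rightarrow> real" where
  "opnorm V nrm s r T = Sup {nrm s (T x) | x. x \<in> V r \<and> nrm r x \<le> 1}"

definition banach_scale ::
  "real \<Rightarrow> (real \<Rightarrow> 'x::real_vector set) \<Rightarrow> (real \<Rightarrow> 'x \<Rightarrow> real) \<Rightarrow> (real \<Rightarrow> real \<Rightarrow> 'x \<Rightarrow> 'x) \<Rightarrow> bool" where
  "banach_scale r0 V nrm j \<longleftrightarrow>
     (\<forall>t. 0 < t \<and> t \<le> r0 \<longrightarrow> is_banach_on (V t) (nrm t)) \<and>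
     (\<forall>s r. 0 < s \<and> s \<le> r \<and> r \<le> r0 \<longrightarrow>
        bounded_op V nrm s r (j s r) \<and> inj_on (j s r) (V r) \<and>
        (\<forall>y\<in>V s. \<forall>e>0. \<exists>x\<in>V r. nrm s (j s r x - y) < e)) \<and>
     (\<forall>s. 0 < s \<and> s \<le> r0 \<longrightarrow> (\<forall>x\<in>V s. j s s x = x)) \<and>
     (\<forall>s c r. 0 < s \<and> s \<le> c \<and> c \<le> r \<and> r \<le> r0 \<longrightarrow>
        (\<forall>x\<in>V r. j s c (j c r x) = j s r x))"

text \<open>For t = k + alpha, k in N, alpha in (0,1]:
  D j u hs is the j-th Frechet derivative at u applied to the directions hs.\<close>
definition C_k_alpha ::
  "(real \<Rightarrow> 'x::real_vector set) \<Rightarrow> (real \<Rightarrow> 'x \<Rightarrow> real) \<Rightarrow> real \<Rightarrow> real \<Rightarrow>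
   'b::real_normed_vector set \<Rightarrow> nat \<Rightarrow> real \<Rightarrow> ('b \<Rightarrow> 'x \<Rightarrow> 'x) \<Rightarrow> bool" where
  "C_k_alpha V nrm s r U k \<alpha> F \<longleftrightarrow>
    (\<exists>D :: nat \<Rightarrow> 'b \<Rightarrow> 'b list \<Rightarrow> 'x \<Rightarrow> 'x.
      (\<forall>u\<in>U. \<forall>x\<in>V r. D 0 u [] x = F u x) \<and>
      (\<forall>i\<le>k. \<forall>u\<in>U. \<forall>hs. length hs = i \<longrightarrow> bounded_op V nrm s r (D i u hs)) \<and>
      (\<forall>i\<le>k. \<forall>u\<in>U. \<forall>hs p a h h'. length hs = i \<and> p < i \<longrightarrow>
          (\<forall>x\<in>V r. D i u (hs[p := a *\<^sub>R h + h']) x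
                      = a *\<^sub>R D i u (hs[p := h]) x + D i u (hs[p := h']) x)) \<and>
      (\<forall>i\<le>k. \<forall>u\<in>U. \<exists>C. \<forall>hs. length hs = i \<longrightarrow>
          opnorm V nrm s r (D i u hs) \<le> C * prod_list (map norm hs)) \<and>
      (\<forall>i<k. \<forall>u\<in>U. \<forall>e>0. \<exists>d>0. \<forall>h. norm h < d \<and> u + h \<in> U \<longrightarrow>
          (\<forall>hs. length hs = i \<longrightarrow>
             opnorm V nrm s r (\<lambda>x. D i (u + h) hs x - D i u hs x - D (Suc i) u (h # hs) x)
               \<le> e * norm h * prod_list (map norm hs))) \<and>
      (\<forall>i. 1 \<le> i \<and> i \<le> k \<longrightarrow> (\<exists>C. \<forall>u\<in>U. \<forall>hs. length hs = i \<longrightarrow>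
          opnorm V nrm s r (D i u hs) \<le> C * prod_list (map norm hs))) \<and>
      (\<exists>C. \<forall>u\<in>U. \<forall>v\<in>U. \<forall>hs. length hs = k \<longrightarrow>
          opnorm V nrm s r (\<lambda>x. D k u hs x - D k v hs x)
            \<le> C * norm (u - v) powr \<alpha> * prod_list (map norm hs)))"

definition C_t ::
  "(real \<Rightarrow> 'x::real_vector set) \<Rightarrow> (real \<Rightarrow> 'x \<Rightarrow> real) \<Rightarrow> real \<Rightarrow> real \<Rightarrow>
   'b::real_normed_vector set \<Rightarrow> real \<Rightarrow> ('b \<Rightarrow> 'x \<Rightarrow> 'x) \<Rightarrow> bool" where
  "C_t V nrm s r U t F \<longleftrightarrow>
     (if t = 0 then
        (\<forall>u\<in>U. \<forall>e>0. \<exists>d>0. \<forall>v\<in>U. norm (v - u) < d \<longrightarrow>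
            opnorm V nrm s r (\<lambda>x. F v x - F u x) < e)
      else C_k_alpha V nrm s r U (nat (\<lceil>t\<rceil> - 1)) (t - real (nat (\<lceil>t\<rceil> - 1))) F)"

definition equivariant_regular ::
  "real \<Rightarrow> (real \<Rightarrow> 'x::real_vector set) \<Rightarrow> (real \<Rightarrow> 'x \<Rightarrow> real) \<Rightarrow> (real \<Rightarrow> real \<Rightarrow> 'x \<Rightarrow> 'x) \<Rightarrow>
   'b::real_normed_vector set \<Rightarrow> real \<Rightarrow> (real \<Rightarrow> real \<Rightarrow> 'b \<Rightarrow> 'x \<Rightarrow> 'x) \<Rightarrow> bool" where
  "equivariant_regular r0 V nrm j U \<gamma> M \<longleftrightarrow>
     (\<forall>s r u. 0 < s \<and> s \<le> r \<and> r \<le> r0 \<and> u \<in> U \<longrightarrow> bounded_op V nrm s r (M s r u)) \<and>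
     (\<forall>s r s' r' u. 0 < s \<and> s \<le> r \<and> r \<le> r0 \<and> 0 < s' \<and> s' \<le> r' \<and> r' \<le> r0 \<and>
          s < s' \<and> r < r' \<and> u \<in> U \<longrightarrow>
        (\<forall>x\<in>V r'. j s s' (M s' r' u x) = M s r u (j r r' x))) \<and>
     (\<forall>s r t. 0 < s \<and> s \<le> r \<and> r \<le> r0 \<and> 0 \<le> t \<and> t < min \<gamma> (r - s) \<longrightarrow>
        C_t V nrm s r U t (M s r))"

end

theory Submission
  imports Defs
begin

locale sc =
  fixes r0 :: real and V :: "real \<Rightarrow> 'x::real_vector set" and nrm :: "real \<Rightarrow> 'x \<Rightarrow> real"
    and j :: "real \<Rightarrow> real \<Rightarrow> 'x \<Rightarrow> 'x" and U :: "'b::real_normed_vector set"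
  assumes bs: "banach_scale r0 V nrm j" and opU: "open U"
begin

abbreviation "lev t \<equiv> 0 < t \<and> t \<le> r0"
abbreviation "bop \<equiv> bounded_op V nrm"
abbreviation "opn \<equiv> opnorm V nrm"

lemma isb: "lev t \<Longrightarrow> is_banach_on (V t) (nrm t)"
  using bs unfolding banach_scale_def by blast

lemma sub: assumes "lev t" shows "subspace (V t)"
  using isb[OF assms] unfolding is_banach_on_def by (elim conjE)

lemma isn: assumes "lev t" shows "is_norm_on (V t) (nrm t)"
  using isb[OF assms] unfolding is_banach_on_def by (elim conjE)

lemma V0: "lev t \<Longrightarrow> 0 \<in> V t" by (rule subspace_0[OF sub])
lemma Vadd: "lev t \<Longrightarrow> x \<in> V t \<Longrightarrow> y \<in> V t \<Longrightarrow> x + y \<in> V t" by (rule subspace_add[OF sub])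
lemma Vdiff: "lev t \<Longrightarrow> x \<in> V t \<Longrightarrow> y \<in> V t \<Longrightarrow> x - y \<in> V t" by (rule subspace_diff[OF sub])
lemma Vscale: "lev t \<Longrightarrow> x \<in> V t \<Longrightarrow> c *\<^sub>R x \<in> V t" by (rule subspace_scale[OF sub])
lemma Vneg: "lev t \<Longrightarrow> x \<in> V t \<Longrightarrow> - x \<in> V t" by (rule subspace_neg[OF sub])

lemma isn_parts: assumes "lev t" shows "(\<forall>x\<in>V t. 0 \<le> nrm t x) \<and> (\<forall>x\<in>V t. nrm t x = 0 \<longleftrightarrow> x = 0) \<and>
     (\<forall>x\<in>V t. \<forall>a. nrm t (a *\<^sub>R x) = \<bar>a\<bar> * nrm t x) \<and>
     (\<forall>x\<in>V t. \<forall>y\<in>V t. nrm t (x + y) \<le> nrm t x + nrm t y)"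
  using isn[OF assms] unfolding is_norm_on_def .
lemma nrm_nn: assumes "lev t" "x \<in> V t" shows "0 \<le> nrm t x"
  using bspec[OF conjunct1[OF isn_parts[OF assms(1)]] assms(2)] .
lemma nrm_eq0: assumes "lev t" "x \<in> V t" shows "nrm t x = 0 \<longleftrightarrow> x = 0"
  using bspec[OF conjunct1[OF conjunct2[OF isn_parts[OF assms(1)]]] assms(2)] .
lemma nrm_scale: assumes "lev t" "x \<in> V t" shows "nrm t (c *\<^sub>R x) = \<bar>c\<bar> * nrm t x"
  using bspec[OF conjunct1[OF conjunct2[OF conjunct2[OF isn_parts[OF assms(1)]]]] assms(2)] by (rule spec)
lemma nrm_tri: assumes "lev t" "x \<in> V t" "y \<in> V t" shows "nrm t (x + y) \<le> nrm t x + nrm t y"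
  using bspec[OF bspec[OF conjunct2[OF conjunct2[OF conjunct2[OF isn_parts[OF assms(1)]]]] assms(2)] assms(3)] .
lemma nrm_zero: "lev t \<Longrightarrow> nrm t 0 = 0" using nrm_eq0[OF _ V0] by simp
lemma nrm_neg: "lev t \<Longrightarrow> x \<in> V t \<Longrightarrow> nrm t (- x) = nrm t x"
  using nrm_scale[of t x "-1"] by simp
lemma nrm_diff: "lev t \<Longrightarrow> x \<in> V t \<Longrightarrow> y \<in> V t \<Longrightarrow> nrm t (x - y) \<le> nrm t x + nrm t y"
  using nrm_tri[of t x "-y"] nrm_neg[of t y] Vneg by simp

lemma bop_in: "bop a b T \<Longrightarrow> x \<in> V b \<Longrightarrow> T x \<in> V a" unfolding bounded_op_def by blast
lemma bop_add: "bop a b T \<Longrightarrow> x \<in> V b \<Longrightarrow> y \<in> V b \<Longrightarrow> T (x + y) = T x + T y" unfolding bounded_op_def by blast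
lemma bop_scale: "bop a b T \<Longrightarrow> x \<in> V b \<Longrightarrow> T (c *\<^sub>R x) = c *\<^sub>R T x" unfolding bounded_op_def by blast
lemma bop_0: "lev b \<Longrightarrow> bop a b T \<Longrightarrow> T 0 = 0"
  using bop_scale[of a b T 0 0] V0 by simp
lemma bop_neg: "lev b \<Longrightarrow> bop a b T \<Longrightarrow> x \<in> V b \<Longrightarrow> T (- x) = - T x"
  using bop_scale[of a b T x "-1"] by simp
lemma bop_diff: "lev b \<Longrightarrow> bop a b T \<Longrightarrow> x \<in> V b \<Longrightarrow> y \<in> V b \<Longrightarrow> T (x - y) = T x - T y"
  using bop_add[of a b T x "-y"] bop_neg[of b a T y] Vneg by simp

lemma bop_bdd: "lev a \<Longrightarrow> lev b \<Longrightarrow> bop a b T \<Longrightarrow> bdd_above {nrm a (T x) | x. x \<in> V b \<and> nrm b x \<le> 1}"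
proof -
  assume la: "lev a" and lb: "lev b" and T: "bop a b T"
  then obtain C where C: "\<forall>x\<in>V b. nrm a (T x) \<le> C * nrm b x" unfolding bounded_op_def by blast
  show ?thesis unfolding bdd_above_def
  proof (intro exI[of _ "\<bar>C\<bar>"] ballI)
    fix y assume "y \<in> {nrm a (T x) | x. x \<in> V b \<and> nrm b x \<le> 1}"
    then obtain x where x: "x \<in> V b" "nrm b x \<le> 1" "y = nrm a (T x)" by blast
    have "C * nrm b x \<le> \<bar>C\<bar> * nrm b x" using nrm_nn[OF lb x(1)] by (simp add: mult_right_mono)
    also have "\<dots> \<le> \<bar>C\<bar>" using x(2) nrm_nn[OF lb x(1)] by (simp add: mult_left_le)
    finally show "y \<le> \<bar>C\<bar>" using C x by force
  qed
qed

lemma opn_upper: "lev a \<Longrightarrow> lev b \<Longrightarrow> bop a b T \<Longrightarrow> x \<in> V b \<Longrightarrow> nrm b x \<le> 1 \<Longrightarrow> nrm a (T x) \<le> opn a b T"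
  unfolding opnorm_def by (rule cSup_upper) (auto intro: bop_bdd)

lemma opn_nn: "lev a \<Longrightarrow> lev b \<Longrightarrow> bop a b T \<Longrightarrow> 0 \<le> opn a b T"
proof -
  assume la: "lev a" and lb: "lev b" and T: "bop a b T"
  have "nrm a (T 0) \<le> opn a b T" using opn_upper[OF la lb T V0[OF lb]] nrm_zero[OF lb] by simp
  then show ?thesis using nrm_nn[OF la bop_in[OF T V0[OF lb]]] by linarith
qed

lemma opn_le: assumes la: "lev a" and lb: "lev b" and T: "bop a b T" and x: "x \<in> V b"
  shows "nrm a (T x) \<le> opn a b T * nrm b x"
proof (cases "x = 0")
  case True then show ?thesis using bop_0[OF lb T] nrm_zero[OF la] nrm_zero[OF lb] by simp
next
  case False
  define n where "n = nrm b x"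
  have n: "n > 0" using nrm_nn[OF lb x] nrm_eq0[OF lb x] False n_def by force
  have y: "(1/n) *\<^sub>R x \<in> V b" using Vscale[OF lb x] .
  have "nrm b ((1/n) *\<^sub>R x) = 1" using nrm_scale[OF lb x] n n_def by simp
  then have "nrm a (T ((1/n) *\<^sub>R x)) \<le> opn a b T" using opn_upper[OF la lb T y] by simp
  moreover have "nrm a (T ((1/n) *\<^sub>R x)) = (1/n) * nrm a (T x)"
    using bop_scale[OF T x] nrm_scale[OF la bop_in[OF T x]] n by simp
  ultimately have "(1/n) * nrm a (T x) \<le> opn a b T" by simp
  then show ?thesis using n n_def by (simp add: field_simps)
qed

lemma opn_least: assumes lb: "lev b" and C: "0 \<le> C" and H: "\<forall>x\<in>V b. nrm a (T x) \<le> C * nrm b x"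
  shows "opn a b T \<le> C"
  unfolding opnorm_def
proof (rule cSup_least)
  show "{nrm a (T x) |x. x \<in> V b \<and> nrm b x \<le> 1} \<noteq> {}" using V0[OF lb] nrm_zero[OF lb] by auto
next
  fix y assume "y \<in> {nrm a (T x) |x. x \<in> V b \<and> nrm b x \<le> 1}"
  then obtain x where x: "x \<in> V b" "nrm b x \<le> 1" "y = nrm a (T x)" by blast
  have "C * nrm b x \<le> C" using C x(2) by (simp add: mult_left_le)
  then show "y \<le> C" using H x by force
qed

lemma opn_cong: "(\<And>x. x \<in> V b \<Longrightarrow> T x = T' x) \<Longrightarrow> opn a b T = opn a b T'"
proof -
  assume E: "\<And>x. x \<in> V b \<Longrightarrow> T x = T' x"
  have "{nrm a (T x) |x. x \<in> V b \<and> nrm b x \<le> 1} = {nrm a (T' x) |x. x \<in> V b \<and> nrm b x \<le> 1}"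
    using E by metis
  then show ?thesis unfolding opnorm_def by simp
qed

lemma bop_cong: assumes lb: "lev b" and E: "\<And>x. x \<in> V b \<Longrightarrow> T x = T' x" and T: "bop a b T"
  shows "bop a b T'"
proof -
  obtain C where C: "\<forall>x\<in>V b. nrm a (T x) \<le> C * nrm b x" using T unfolding bounded_op_def by blast
  show ?thesis unfolding bounded_op_def
  proof (intro conjI ballI allI exI)
    fix x assume x: "x \<in> V b"
    show "T' x \<in> V a" using bop_in[OF T x] E[OF x] by simp
    show "nrm a (T' x) \<le> C * nrm b x" using bspec[OF C x] E[OF x] by simp
    fix y assume y: "y \<in> V b"
    show "T' (x + y) = T' x + T' y" using bop_add[OF T x y] E[OF x] E[OF y] E[OF Vadd[OF lb x y]] by simp
  next
    fix x c assume x: "x \<in> V b"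
    show "T' (c *\<^sub>R x) = c *\<^sub>R T' x" using bop_scale[OF T x] E[OF x] E[OF Vscale[OF lb x]] by simp
  qed
qed

lemma bop_of: assumes lb: "lev b" and "\<forall>x\<in>V b. T x \<in> V a" "\<forall>x\<in>V b. \<forall>y\<in>V b. T (x+y) = T x + T y"
  "\<forall>x\<in>V b. \<forall>c. T (c *\<^sub>R x) = c *\<^sub>R T x" "\<forall>x\<in>V b. nrm a (T x) \<le> C * nrm b x"
shows "bop a b T" using assms unfolding bounded_op_def by blast

lemma bop_comp: assumes la: "lev a" and lc: "lev c" and lb: "lev b" and S: "bop a c S" and T: "bop c b T"
  shows "bop a b (\<lambda>x. S (T x))" "opn a b (\<lambda>x. S (T x)) \<le> opn a c S * opn c b T"
proof -
  have *: "\<forall>x\<in>V b. nrm a (S (T x)) \<le> (opn a c S * opn c b T) * nrm b x"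
  proof
    fix x assume x: "x \<in> V b"
    have "nrm a (S (T x)) \<le> opn a c S * nrm c (T x)" using opn_le[OF la lc S bop_in[OF T x]] .
    also have "\<dots> \<le> opn a c S * (opn c b T * nrm b x)"
      using opn_le[OF lc lb T x] opn_nn[OF la lc S] by (simp add: mult_left_mono)
    finally show "nrm a (S (T x)) \<le> (opn a c S * opn c b T) * nrm b x" by (simp add: mult.assoc)
  qed
  show "bop a b (\<lambda>x. S (T x))"
  proof (rule bop_of[OF lb _ _ _ *])
    show "\<forall>x\<in>V b. S (T x) \<in> V a" using bop_in[OF S bop_in[OF T]] by blast
    show "\<forall>x\<in>V b. \<forall>y\<in>V b. S (T (x + y)) = S (T x) + S (T y)"
      using bop_add[OF T] bop_add[OF S bop_in[OF T] bop_in[OF T]] by simp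
    show "\<forall>x\<in>V b. \<forall>c. S (T (c *\<^sub>R x)) = c *\<^sub>R S (T x)"
      using bop_scale[OF T] bop_scale[OF S bop_in[OF T]] by simp
  qed
  show "opn a b (\<lambda>x. S (T x)) \<le> opn a c S * opn c b T"
    using opn_least[OF lb _ *] opn_nn[OF la lc S] opn_nn[OF lc lb T] by simp
qed

lemma bop_plus: assumes la: "lev a" and lb: "lev b" and S: "bop a b S" and T: "bop a b T"
  shows "bop a b (\<lambda>x. S x + T x)" "opn a b (\<lambda>x. S x + T x) \<le> opn a b S + opn a b T"
proof -
  have *: "\<forall>x\<in>V b. nrm a (S x + T x) \<le> (opn a b S + opn a b T) * nrm b x"
  proof
    fix x assume x: "x \<in> V b"
    have "nrm a (S x + T x) \<le> nrm a (S x) + nrm a (T x)" using nrm_tri[OF la bop_in[OF S x] bop_in[OF T x]] .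
    also have "\<dots> \<le> opn a b S * nrm b x + opn a b T * nrm b x" using opn_le[OF la lb S x] opn_le[OF la lb T x] by simp
    finally show "nrm a (S x + T x) \<le> (opn a b S + opn a b T) * nrm b x" by (simp add: algebra_simps)
  qed
  show "bop a b (\<lambda>x. S x + T x)"
  proof (rule bop_of[OF lb _ _ _ *])
    show "\<forall>x\<in>V b. S x + T x \<in> V a" using bop_in[OF S] bop_in[OF T] Vadd[OF la] by blast
    show "\<forall>x\<in>V b. \<forall>y\<in>V b. S (x + y) + T (x + y) = (S x + T x) + (S y + T y)"
      using bop_add[OF T] bop_add[OF S] by (simp add: algebra_simps)
    show "\<forall>x\<in>V b. \<forall>c. S (c *\<^sub>R x) + T (c *\<^sub>R x) = c *\<^sub>R (S x + T x)"
      using bop_scale[OF T] bop_scale[OF S] by (simp add: scaleR_add_right)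
  qed
  show "opn a b (\<lambda>x. S x + T x) \<le> opn a b S + opn a b T"
    using opn_least[OF lb _ *] opn_nn[OF la lb S] opn_nn[OF la lb T] by linarith
qed

lemma bop_smul: assumes la: "lev a" and lb: "lev b" and T: "bop a b T"
  shows "bop a b (\<lambda>x. c *\<^sub>R T x)" "opn a b (\<lambda>x. c *\<^sub>R T x) \<le> \<bar>c\<bar> * opn a b T"
proof -
  have *: "\<forall>x\<in>V b. nrm a (c *\<^sub>R T x) \<le> (\<bar>c\<bar> * opn a b T) * nrm b x"
  proof
    fix x assume x: "x \<in> V b"
    have "nrm a (c *\<^sub>R T x) = \<bar>c\<bar> * nrm a (T x)" using nrm_scale[OF la bop_in[OF T x]] .
    also have "\<dots> \<le> \<bar>c\<bar> * (opn a b T * nrm b x)" using opn_le[OF la lb T x] by (simp add: mult_left_mono)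
    finally show "nrm a (c *\<^sub>R T x) \<le> (\<bar>c\<bar> * opn a b T) * nrm b x" by (simp add: mult.assoc)
  qed
  show "bop a b (\<lambda>x. c *\<^sub>R T x)"
  proof (rule bop_of[OF lb _ _ _ *])
    show "\<forall>x\<in>V b. c *\<^sub>R T x \<in> V a" using bop_in[OF T] Vscale[OF la] by blast
    show "\<forall>x\<in>V b. \<forall>y\<in>V b. c *\<^sub>R T (x + y) = c *\<^sub>R T x + c *\<^sub>R T y"
      using bop_add[OF T] by (simp add: scaleR_add_right)
    show "\<forall>x\<in>V b. \<forall>d. c *\<^sub>R T (d *\<^sub>R x) = d *\<^sub>R (c *\<^sub>R T x)"
    proof (intro ballI allI)
      fix x d assume x: "x \<in> V b"
      have "T (d *\<^sub>R x) = d *\<^sub>R T x" by (rule bop_scale[OF T x])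
      then show "c *\<^sub>R T (d *\<^sub>R x) = d *\<^sub>R (c *\<^sub>R T x)" by (simp add: mult.commute)
    qed
  qed
  show "opn a b (\<lambda>x. c *\<^sub>R T x) \<le> \<bar>c\<bar> * opn a b T"
    by (rule opn_least[OF lb mult_nonneg_nonneg[OF abs_ge_zero opn_nn[OF la lb T]] *])
qed

lemma bop_minus: assumes la: "lev a" and lb: "lev b" and S: "bop a b S" and T: "bop a b T"
  shows "bop a b (\<lambda>x. S x - T x)" "opn a b (\<lambda>x. S x - T x) \<le> opn a b S + opn a b T"
proof -
  have *: "\<forall>x\<in>V b. nrm a (S x - T x) \<le> (opn a b S + opn a b T) * nrm b x"
  proof
    fix x assume x: "x \<in> V b"
    have "nrm a (S x - T x) \<le> nrm a (S x) + nrm a (T x)" using nrm_diff[OF la bop_in[OF S x] bop_in[OF T x]] .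
    also have "\<dots> \<le> opn a b S * nrm b x + opn a b T * nrm b x" using opn_le[OF la lb S x] opn_le[OF la lb T x] by simp
    finally show "nrm a (S x - T x) \<le> (opn a b S + opn a b T) * nrm b x" by (simp add: algebra_simps)
  qed
  show "bop a b (\<lambda>x. S x - T x)"
  proof (rule bop_of[OF lb _ _ _ *])
    show "\<forall>x\<in>V b. S x - T x \<in> V a" using bop_in[OF S] bop_in[OF T] Vdiff[OF la] by blast
    show "\<forall>x\<in>V b. \<forall>y\<in>V b. S (x + y) - T (x + y) = (S x - T x) + (S y - T y)"
      using bop_add[OF T] bop_add[OF S] by (simp add: algebra_simps)
    show "\<forall>x\<in>V b. \<forall>c. S (c *\<^sub>R x) - T (c *\<^sub>R x) = c *\<^sub>R (S x - T x)"
      using bop_scale[OF T] bop_scale[OF S] by (simp add: scaleR_diff_right)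
  qed
  show "opn a b (\<lambda>x. S x - T x) \<le> opn a b S + opn a b T"
    using opn_least[OF lb _ *] opn_nn[OF la lb S] opn_nn[OF la lb T] by linarith
qed

lemma bop_id: "lev a \<Longrightarrow> bop a a (\<lambda>x. x)"
  by (rule bop_of[where C=1]) auto

lemma opn_eq0: assumes la: "lev a" and lb: "lev b" and T: "bop a b T" and z: "opn a b T \<le> 0" and x: "x \<in> V b"
  shows "T x = 0"
proof -
  have "opn a b T * nrm b x \<le> 0" using z nrm_nn[OF lb x] by (simp add: mult_nonpos_nonneg)
  then have "nrm a (T x) \<le> 0" using opn_le[OF la lb T x] by linarith
  then show ?thesis using nrm_nn[OF la bop_in[OF T x]] nrm_eq0[OF la bop_in[OF T x]] by simp
qed

end

abbreviation pn :: "'b::real_normed_vector list \<Rightarrow> real" where "pn hs \<equiv> prod_list (map norm hs)"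

lemma pn_nn: "0 \<le> pn hs" by (induction hs) auto

definition kk :: "real \<Rightarrow> nat" where "kk t = nat (\<lceil>t\<rceil> - 1)"
definition aa :: "real \<Rightarrow> real" where "aa t = t - real (kk t)"

lemma kk_small: "0 < t \<Longrightarrow> t \<le> 1 \<Longrightarrow> kk t = 0"
  unfolding kk_def by (simp add: ceiling_le_one)
lemma aa_small: "0 < t \<Longrightarrow> t \<le> 1 \<Longrightarrow> aa t = t"
  unfolding aa_def using kk_small by simp
lemma kk_big: "1 < t \<Longrightarrow> kk t = Suc (kk (t - 1))"
proof -
  assume t: "1 < t"
  have "\<lceil>t - 1\<rceil> = \<lceil>t\<rceil> - 1" by (simp add: ceiling_diff_one)
  moreover have "\<lceil>t\<rceil> \<ge> 2" using t by (metis ceiling_le_iff le_less_trans linorder_not_le of_int_1 one_add_one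
        of_int_add zle_add1_eq_le)
  moreover have "nat \<lceil>t\<rceil> \<ge> 2" using calculation(2) by (simp add: le_nat_iff)
  ultimately show ?thesis unfolding kk_def by (simp add: nat_diff_distrib')
qed
lemma aa_big: "1 < t \<Longrightarrow> aa t = aa (t - 1)"
  unfolding aa_def using kk_big by simp
lemma aa_pos: "0 < t \<Longrightarrow> 0 < aa t"
proof -
  assume t: "0 < t"
  have "\<lceil>t\<rceil> - 1 < t" by linarith
  moreover have "\<lceil>t\<rceil> \<ge> 1" using t by (simp add: one_le_ceiling)
  ultimately show ?thesis unfolding aa_def kk_def by simp
qed
lemma aa_le1: "0 < t \<Longrightarrow> aa t \<le> 1"
proof -
  assume t: "0 < t"
  have "t \<le> \<lceil>t\<rceil>" by (rule le_of_int_ceiling)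
  moreover have "\<lceil>t\<rceil> \<ge> 1" using t by (simp add: one_le_ceiling)
  ultimately show ?thesis unfolding aa_def kk_def by simp
qed

context sc begin

definition BO :: "real \<Rightarrow> real \<Rightarrow> nat \<Rightarrow> ('b \<Rightarrow> 'b list \<Rightarrow> 'x \<Rightarrow> 'x) \<Rightarrow> bool" where
  "BO a b m F \<longleftrightarrow> (\<forall>u\<in>U. \<forall>hs. length hs = m \<longrightarrow> bop a b (F u hs))"

definition MB :: "real \<Rightarrow> real \<Rightarrow> nat \<Rightarrow> ('b \<Rightarrow> 'b list \<Rightarrow> 'x \<Rightarrow> 'x) \<Rightarrow> bool" where
  "MB a b m F \<longleftrightarrow> BO a b m F \<and>
     (\<forall>u\<in>U. \<forall>hs p c h h'. length hs = m \<and> p < m \<longrightarrow>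
        (\<forall>x\<in>V b. F u (hs[p := c *\<^sub>R h + h']) x = c *\<^sub>R F u (hs[p := h]) x + F u (hs[p := h']) x)) \<and>
     (\<exists>C. \<forall>u\<in>U. \<forall>hs. length hs = m \<longrightarrow> opn a b (F u hs) \<le> C * pn hs)"

definition Cont :: "real \<Rightarrow> real \<Rightarrow> nat \<Rightarrow> ('b \<Rightarrow> 'b list \<Rightarrow> 'x \<Rightarrow> 'x) \<Rightarrow> bool" where
  "Cont a b m F \<longleftrightarrow> (\<forall>u\<in>U. \<forall>e>0. \<exists>d>0. \<forall>v\<in>U. norm (v - u) < d \<longrightarrow>
      (\<forall>hs. length hs = m \<longrightarrow> opn a b (\<lambda>x. F v hs x - F u hs x) \<le> e * pn hs))"

definition Hol :: "real \<Rightarrow> real \<Rightarrow> nat \<Rightarrow> real \<Rightarrow> ('b \<Rightarrow> 'b list \<Rightarrow> 'x \<Rightarrow> 'x) \<Rightarrow> bool" where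
  "Hol a b m \<alpha> F \<longleftrightarrow> (\<exists>C. \<forall>u\<in>U. \<forall>v\<in>U. \<forall>hs. length hs = m \<longrightarrow>
      opn a b (\<lambda>x. F u hs x - F v hs x) \<le> C * norm (u - v) powr \<alpha> * pn hs)"

definition Der :: "real \<Rightarrow> real \<Rightarrow> nat \<Rightarrow> ('b \<Rightarrow> 'b list \<Rightarrow> 'x \<Rightarrow> 'x) \<Rightarrow> ('b \<Rightarrow> 'b list \<Rightarrow> 'x \<Rightarrow> 'x) \<Rightarrow> bool" where
  "Der a b m F G \<longleftrightarrow> (\<forall>u\<in>U. \<forall>e>0. \<exists>d>0. \<forall>h. norm h < d \<and> u + h \<in> U \<longrightarrow>
      (\<forall>hs. length hs = m \<longrightarrow> opn a b (\<lambda>x. F (u + h) hs x - F u hs x - G u (h # hs) x) \<le> e * norm h * pn hs))"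

definition GR :: "real \<Rightarrow> real \<Rightarrow> nat \<Rightarrow> nat \<Rightarrow> real \<Rightarrow> (nat \<Rightarrow> 'b \<Rightarrow> 'b list \<Rightarrow> 'x \<Rightarrow> 'x) \<Rightarrow> bool" where
  "GR a b m k \<alpha> D \<longleftrightarrow> (\<forall>i\<le>k. MB a b (i + m) (D i)) \<and> (\<forall>i<k. Der a b (i + m) (D i) (D (Suc i))) \<and>
     Hol a b (k + m) \<alpha> (D k)"

definition Creg :: "real \<Rightarrow> real \<Rightarrow> nat \<Rightarrow> real \<Rightarrow> ('b \<Rightarrow> 'b list \<Rightarrow> 'x \<Rightarrow> 'x) \<Rightarrow> bool" where
  "Creg a b m t F \<longleftrightarrow> (if t = 0 then MB a b m F \<and> Cont a b m F else
     (\<exists>D. (\<forall>u\<in>U. \<forall>hs. length hs = m \<longrightarrow> (\<forall>x\<in>V b. D 0 u hs x = F u hs x)) \<and> GR a b m (kk t) (aa t) D))"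

abbreviation EQ :: "real \<Rightarrow> nat \<Rightarrow> ('b \<Rightarrow> 'b list \<Rightarrow> 'x \<Rightarrow> 'x) \<Rightarrow> ('b \<Rightarrow> 'b list \<Rightarrow> 'x \<Rightarrow> 'x) \<Rightarrow> bool" where
  "EQ b m F F' \<equiv> (\<forall>u\<in>U. \<forall>hs. length hs = m \<longrightarrow> (\<forall>x\<in>V b. F u hs x = F' u hs x))"

lemma EQ_sym: "EQ b m F F' \<Longrightarrow> EQ b m F' F" by metis

lemma MB_BO: "MB a b m F \<Longrightarrow> BO a b m F" unfolding MB_def by (elim conjE)

lemma BO_D: "BO a b m F \<Longrightarrow> u \<in> U \<Longrightarrow> length hs = m \<Longrightarrow> bop a b (F u hs)" unfolding BO_def by blast

lemma MB_bop: "MB a b m F \<Longrightarrow> u \<in> U \<Longrightarrow> length hs = m \<Longrightarrow> bop a b (F u hs)"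
  using BO_D[OF MB_BO] by blast

lemma MB_lin: "MB a b m F \<Longrightarrow> u \<in> U \<Longrightarrow> length hs = m \<Longrightarrow> p < m \<Longrightarrow> x \<in> V b \<Longrightarrow>
   F u (hs[p := c *\<^sub>R h + h']) x = c *\<^sub>R F u (hs[p := h]) x + F u (hs[p := h']) x"
  unfolding MB_def by blast

lemma MB_bnd: "MB a b m F \<Longrightarrow> \<exists>C. \<forall>u\<in>U. \<forall>hs. length hs = m \<longrightarrow> opn a b (F u hs) \<le> C * pn hs"
  unfolding MB_def by (elim conjE)

lemma MB_bnd': assumes "MB a b m F" "lev a" "lev b" "U \<noteq> {}"
  shows "\<exists>C\<ge>0. \<forall>u\<in>U. \<forall>hs. length hs = m \<longrightarrow> opn a b (F u hs) \<le> C * pn hs"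
proof -
  obtain C where C: "\<forall>u\<in>U. \<forall>hs. length hs = m \<longrightarrow> opn a b (F u hs) \<le> C * pn hs" using MB_bnd[OF assms(1)] by blast
  have "\<forall>u\<in>U. \<forall>hs. length hs = m \<longrightarrow> opn a b (F u hs) \<le> max C 0 * pn hs"
  proof (intro ballI allI impI)
    fix u and hs :: "'b list" assume u: "u \<in> U" and l: "length hs = m"
    have "C * pn hs \<le> max C 0 * pn hs" using pn_nn[of hs] by (simp add: mult_right_mono)
    then show "opn a b (F u hs) \<le> max C 0 * pn hs" using C u l by fastforce
  qed
  then show ?thesis by (intro exI[of _ "max C 0"]) simp
qed

lemma MB_intro:
  assumes "\<And>u hs. u \<in> U \<Longrightarrow> length hs = m \<Longrightarrow> bop a b (F u hs)"
    and "\<And>u hs p c h h' x. u \<in> U \<Longrightarrow> length hs = m \<Longrightarrow> p < m \<Longrightarrow> x \<in> V b \<Longrightarrow>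
           F u (hs[p := c *\<^sub>R h + h']) x = c *\<^sub>R F u (hs[p := h]) x + F u (hs[p := h']) x"
    and "\<And>u hs. u \<in> U \<Longrightarrow> length hs = m \<Longrightarrow> opn a b (F u hs) \<le> C * pn hs"
  shows "MB a b m F"
  unfolding MB_def BO_def using assms by blast

lemma BO_cong: assumes lb: "lev b" and E: "EQ b m F F'" and M: "BO a b m F" shows "BO a b m F'"
  unfolding BO_def
proof (intro ballI allI impI)
  fix u and hs :: "'b list" assume u: "u \<in> U" and l: "length hs = m"
  show "bop a b (F' u hs)" by (rule bop_cong[OF lb _ BO_D[OF M u l]]) (use E u l in blast)
qed

lemma MB_cong: assumes lb: "lev b" and E: "EQ b m F F'" and M: "MB a b m F" shows "MB a b m F'"
proof -
  obtain C where C: "\<forall>u\<in>U. \<forall>hs. length hs = m \<longrightarrow> opn a b (F u hs) \<le> C * pn hs" using MB_bnd[OF M] by blast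
  show ?thesis
  proof (rule MB_intro[where C=C])
    fix u and hs :: "'b list" assume u: "u \<in> U" and l: "length hs = m"
    show "bop a b (F' u hs)" using BO_D[OF BO_cong[OF lb E MB_BO[OF M]] u l] .
    have "opn a b (F' u hs) = opn a b (F u hs)" by (rule opn_cong) (use E u l in metis)
    then show "opn a b (F' u hs) \<le> C * pn hs" using C u l by simp
  next
    fix u and hs :: "'b list" and p and c and h and h' and x assume u: "u \<in> U" and l: "length hs = m" and p: "p < m" and x: "x \<in> V b"
    have e1: "F' u (hs[p := v]) x = F u (hs[p := v]) x" for v using E u l x by simp
    show "F' u (hs[p := c *\<^sub>R h + h']) x = c *\<^sub>R F' u (hs[p := h]) x + F' u (hs[p := h']) x"
      unfolding e1 by (rule MB_lin[OF M u l p x])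
  qed
qed

lemma Cont_cong: assumes E: "EQ b m F F'" and M: "Cont a b m F" shows "Cont a b m F'"
  unfolding Cont_def
proof (intro ballI allI impI)
  fix u e assume u: "u \<in> U" and e: "(0::real) < e"
  obtain d where d: "d > 0" "\<forall>v\<in>U. norm (v - u) < d \<longrightarrow>
      (\<forall>hs. length hs = m \<longrightarrow> opn a b (\<lambda>x. F v hs x - F u hs x) \<le> e * pn hs)"
    using M u e unfolding Cont_def by blast
  show "\<exists>d>0. \<forall>v\<in>U. norm (v - u) < d \<longrightarrow> (\<forall>hs. length hs = m \<longrightarrow> opn a b (\<lambda>x. F' v hs x - F' u hs x) \<le> e * pn hs)"
  proof (intro exI[of _ d] conjI ballI impI allI)
    fix v and hs :: "'b list" assume v: "v \<in> U" "norm (v - u) < d" and l: "length hs = m"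
    have "opn a b (\<lambda>x. F' v hs x - F' u hs x) = opn a b (\<lambda>x. F v hs x - F u hs x)"
      by (rule opn_cong) (use E u v l in simp)
    then show "opn a b (\<lambda>x. F' v hs x - F' u hs x) \<le> e * pn hs" using d v l by simp
  qed (rule d)
qed

lemma Hol_cong: assumes E: "EQ b m F F'" and M: "Hol a b m \<alpha> F" shows "Hol a b m \<alpha> F'"
proof -
  obtain C where C: "\<forall>u\<in>U. \<forall>v\<in>U. \<forall>hs. length hs = m \<longrightarrow>
      opn a b (\<lambda>x. F u hs x - F v hs x) \<le> C * norm (u - v) powr \<alpha> * pn hs" using M unfolding Hol_def by blast
  show ?thesis unfolding Hol_def
  proof (intro exI[of _ C] ballI allI impI)
    fix u and v and hs :: "'b list" assume u: "u \<in> U" and v: "v \<in> U" and l: "length hs = m"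
    have "opn a b (\<lambda>x. F' u hs x - F' v hs x) = opn a b (\<lambda>x. F u hs x - F v hs x)"
      by (rule opn_cong) (use E u v l in simp)
    then show "opn a b (\<lambda>x. F' u hs x - F' v hs x) \<le> C * norm (u - v) powr \<alpha> * pn hs" using C u v l by simp
  qed
qed

lemma Der_cong: assumes E: "EQ b m F F'" and E2: "EQ b (Suc m) G G'" and M: "Der a b m F G" shows "Der a b m F' G'"
  unfolding Der_def
proof (intro ballI allI impI)
  fix u e assume u: "u \<in> U" and e: "(0::real) < e"
  obtain d where d: "d > 0" "\<forall>h. norm h < d \<and> u + h \<in> U \<longrightarrow>
      (\<forall>hs. length hs = m \<longrightarrow> opn a b (\<lambda>x. F (u + h) hs x - F u hs x - G u (h # hs) x) \<le> e * norm h * pn hs)"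
    using M u e unfolding Der_def by blast
  show "\<exists>d>0. \<forall>h. norm h < d \<and> u + h \<in> U \<longrightarrow>
      (\<forall>hs. length hs = m \<longrightarrow> opn a b (\<lambda>x. F' (u + h) hs x - F' u hs x - G' u (h # hs) x) \<le> e * norm h * pn hs)"
  proof (intro exI[of _ d] conjI allI impI)
    fix h and hs :: "'b list" assume h: "norm h < d \<and> u + h \<in> U" and l: "length hs = m"
    have "opn a b (\<lambda>x. F' (u + h) hs x - F' u hs x - G' u (h # hs) x) = opn a b (\<lambda>x. F (u + h) hs x - F u hs x - G u (h # hs) x)"
    proof (rule opn_cong)
      fix x assume x: "x \<in> V b"
      have "length (h # hs) = Suc m" using l by simp
      then show "F' (u + h) hs x - F' u hs x - G' u (h # hs) x = F (u + h) hs x - F u hs x - G u (h # hs) x"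
        using E E2 u h l x by metis
    qed
    then show "opn a b (\<lambda>x. F' (u + h) hs x - F' u hs x - G' u (h # hs) x) \<le> e * norm h * pn hs" using d h l by simp
  qed (rule d)
qed

lemma Hol_Cont: assumes al: "0 < \<alpha>" and H: "Hol a b m \<alpha> F" shows "Cont a b m F"
  unfolding Cont_def
proof (intro ballI allI impI)
  fix u e assume u: "u \<in> U" and e: "(0::real) < e"
  obtain C where C: "\<forall>u\<in>U. \<forall>v\<in>U. \<forall>hs. length hs = m \<longrightarrow>
      opn a b (\<lambda>x. F u hs x - F v hs x) \<le> C * norm (u - v) powr \<alpha> * pn hs" using H unfolding Hol_def by blast
  define d where "d = (e / (\<bar>C\<bar> + 1)) powr (1 / \<alpha>)"
  have ep: "e / (\<bar>C\<bar> + 1) > 0" using e by simp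
  have dp: "d > 0" unfolding d_def using ep by (metis powr_gt_zero order_less_irrefl)
  have dd: "d powr \<alpha> = e / (\<bar>C\<bar> + 1)" unfolding d_def using ep al e by (simp add: powr_powr less_imp_le)
  show "\<exists>d>0. \<forall>v\<in>U. norm (v - u) < d \<longrightarrow> (\<forall>hs. length hs = m \<longrightarrow> opn a b (\<lambda>x. F v hs x - F u hs x) \<le> e * pn hs)"
  proof (intro exI[of _ d] conjI ballI impI allI)
    fix v and hs :: "'b list" assume v: "v \<in> U" and nv: "norm (v - u) < d" and l: "length hs = m"
    have "norm (v - u) powr \<alpha> \<le> d powr \<alpha>" using nv al by (simp add: powr_mono2)
    then have q: "norm (v - u) powr \<alpha> \<le> e / (\<bar>C\<bar> + 1)" using dd by simp
    have "C * norm (v - u) powr \<alpha> \<le> \<bar>C\<bar> * norm (v - u) powr \<alpha>"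
      by (rule mult_right_mono) auto
    also have "\<dots> \<le> \<bar>C\<bar> * (e / (\<bar>C\<bar> + 1))" using q by (rule mult_left_mono) simp
    also have "\<dots> \<le> e" using e by (simp add: field_simps)
    finally have "C * norm (v - u) powr \<alpha> * pn hs \<le> e * pn hs" using pn_nn[of hs] by (simp add: mult_right_mono)
    then show "opn a b (\<lambda>x. F v hs x - F u hs x) \<le> e * pn hs" using C u v l by fastforce
  qed (rule dp)
qed

end

lemma le_eps: fixes X K :: real assumes K: "0 \<le> K" and H: "\<And>e. 0 < e \<Longrightarrow> X \<le> e * K" shows "X \<le> 0"
proof (rule ccontr)
  assume "\<not> X \<le> 0" then have X: "X > 0" by simp
  show False
  proof (cases "K = 0")
    case True then show False using H[of 1] X by simp
  next
    case False
    then have Kp: "K > 0" using K by simp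
    have "X \<le> (X / (2 * K)) * K" using H[of "X / (2*K)"] X Kp by simp
    also have "\<dots> = X / 2" using Kp by simp
    finally show False using X by simp
  qed
qed

context sc begin

lemma creg_MB: assumes lb: "lev b" and t: "0 \<le> t" and C: "Creg a b m t F" shows "MB a b m F"
proof (cases "t = 0")
  case True then show ?thesis using C unfolding Creg_def by simp
next
  case False
  then obtain D where D: "EQ b m (D 0) F" "GR a b m (kk t) (aa t) D" using C unfolding Creg_def by auto
  have "MB a b (0 + m) (D 0)" using D(2) unfolding GR_def by blast
  then show ?thesis using MB_cong[OF lb D(1)] by simp
qed

lemma creg_hol: assumes lb: "lev b" and t: "0 < t" "t \<le> 1" and C: "Creg a b m t F" shows "Hol a b m t F"
proof -
  obtain D where D: "EQ b m (D 0) F" "GR a b m (kk t) (aa t) D" using C t unfolding Creg_def by auto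
  have "Hol a b (0 + m) t (D 0)" using D(2) kk_small[OF t] aa_small[OF t] unfolding GR_def by simp
  then show ?thesis using Hol_cong[OF D(1)] by simp
qed

lemma creg_cont: assumes lb: "lev b" and t: "0 \<le> t" "t \<le> 1" and C: "Creg a b m t F" shows "Cont a b m F"
proof (cases "t = 0")
  case True then show ?thesis using C unfolding Creg_def by simp
next
  case False then have "0 < t" using t by simp
  then show ?thesis using Hol_Cont[OF _ creg_hol[OF lb _ t(2) C]] by simp
qed

lemma creg_intro0: "MB a b m F \<Longrightarrow> Cont a b m F \<Longrightarrow> Creg a b m 0 F"
  unfolding Creg_def by simp

lemma creg_intro_hol: assumes t: "0 < t" "t \<le> 1" and M: "MB a b m F" and H: "Hol a b m t F" shows "Creg a b m t F"
proof -
  have "GR a b m (kk t) (aa t) (\<lambda>_. F)" unfolding GR_def using kk_small[OF t] aa_small[OF t] M H by simp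
  then show ?thesis unfolding Creg_def using t by auto
qed

lemma creg_cong: assumes lb: "lev b" and E: "EQ b m F F'" and C: "Creg a b m t F" shows "Creg a b m t F'"
proof (cases "t = 0")
  case True then show ?thesis using C MB_cong[OF lb E] Cont_cong[OF E] unfolding Creg_def by simp
next
  case False
  then obtain D where D: "EQ b m (D 0) F" "GR a b m (kk t) (aa t) D" using C unfolding Creg_def by auto
  have "EQ b m (D 0) F'" using D(1) E by simp
  then show ?thesis unfolding Creg_def using False D(2) by auto
qed

lemma creg_0: assumes lb: "lev b" and t: "0 < t" "t \<le> 1" and C: "Creg a b m t F" shows "Creg a b m 0 F"
  using creg_intro0 creg_MB[OF lb _ C] creg_cont[OF lb _ t(2) C] t by simp

lemma creg_der: assumes lb: "lev b" and t: "1 < t" and C: "Creg a b m t F"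
  shows "\<exists>G. Der a b m F G \<and> Creg a b (Suc m) (t - 1) G \<and> MB a b (Suc m) G"
proof -
  obtain D where D: "EQ b m (D 0) F" "GR a b m (kk t) (aa t) D" using C t unfolding Creg_def by auto
  have k: "kk t = Suc (kk (t - 1))" "aa t = aa (t - 1)" using kk_big[OF t] aa_big[OF t] by auto
  have M: "\<And>i. i \<le> kk t \<Longrightarrow> MB a b (i + m) (D i)" using D(2) unfolding GR_def by blast
  have De: "\<And>i. i < kk t \<Longrightarrow> Der a b (i + m) (D i) (D (Suc i))" using D(2) unfolding GR_def by blast
  have H: "Hol a b (kk t + m) (aa t) (D (kk t))" using D(2) unfolding GR_def by blast
  have d0: "Der a b m F (D 1)"
    using Der_cong[OF D(1), of "D 1" "D 1"] De[of 0] k by simp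
  have "GR a b (Suc m) (kk (t - 1)) (aa (t - 1)) (\<lambda>i. D (Suc i))"
    unfolding GR_def
  proof (intro conjI allI impI)
    fix i assume "i \<le> kk (t - 1)"
    then show "MB a b (i + Suc m) (D (Suc i))" using M[of "Suc i"] k by simp
  next
    fix i assume "i < kk (t - 1)"
    then show "Der a b (i + Suc m) (D (Suc i)) (D (Suc (Suc i)))" using De[of "Suc i"] k by simp
  next
    show "Hol a b (kk (t - 1) + Suc m) (aa (t - 1)) (D (Suc (kk (t - 1))))" using H k by simp
  qed
  then have "Creg a b (Suc m) (t - 1) (D 1)" unfolding Creg_def using t by auto
  moreover have "MB a b (Suc m) (D 1)" using M[of 1] k by simp
  ultimately show ?thesis using d0 by blast
qed

lemma creg_intro_der: assumes lb: "lev b" and t: "1 < t" and M: "MB a b m F" and De: "Der a b m F G"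
  and C: "Creg a b (Suc m) (t - 1) G" shows "Creg a b m t F"
proof -
  obtain DG where D: "EQ b (Suc m) (DG 0) G" "GR a b (Suc m) (kk (t - 1)) (aa (t - 1)) DG"
    using C t unfolding Creg_def by auto
  have k: "kk t = Suc (kk (t - 1))" "aa t = aa (t - 1)" using kk_big[OF t] aa_big[OF t] by auto
  have MG: "\<And>i. i \<le> kk (t - 1) \<Longrightarrow> MB a b (i + Suc m) (DG i)" using D(2) unfolding GR_def by blast
  have DeG: "\<And>i. i < kk (t - 1) \<Longrightarrow> Der a b (i + Suc m) (DG i) (DG (Suc i))" using D(2) unfolding GR_def by blast
  have HG: "Hol a b (kk (t - 1) + Suc m) (aa (t - 1)) (DG (kk (t - 1)))" using D(2) unfolding GR_def by blast
  define DD where "DD = (\<lambda>i. if i = 0 then F else DG (i - 1))"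
  have "GR a b m (kk t) (aa t) DD"
    unfolding GR_def
  proof (intro conjI allI impI)
    fix i assume i: "i \<le> kk t"
    show "MB a b (i + m) (DD i)"
    proof (cases i)
      case 0 then show ?thesis using M by (simp add: DD_def)
    next
      case (Suc i') then show ?thesis using MG[of i'] i k by (simp add: DD_def)
    qed
  next
    fix i assume i: "i < kk t"
    show "Der a b (i + m) (DD i) (DD (Suc i))"
    proof (cases i)
      case 0
      have "Der a b m F (DG 0)" by (rule Der_cong[OF _ EQ_sym[OF D(1)] De]) simp
      then show ?thesis using 0 by (simp add: DD_def)
    next
      case (Suc i') then show ?thesis using DeG[of i'] i k by (simp add: DD_def)
    qed
  next
    show "Hol a b (kk t + m) (aa t) (DD (kk t))" using HG k by (simp add: DD_def)
  qed
  moreover have "EQ b m (DD 0) F" by (simp add: DD_def)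
  ultimately show ?thesis unfolding Creg_def using t by auto
qed

lemma BO_bop_lcomp: "lev a \<Longrightarrow> lev c \<Longrightarrow> lev b \<Longrightarrow> bop a c L \<Longrightarrow> BO c b m F \<Longrightarrow> BO a b m (\<lambda>u hs x. L (F u hs x))"
  unfolding BO_def using bop_comp(1) by blast

lemma BO_bop_rcomp: "lev a \<Longrightarrow> lev c \<Longrightarrow> lev b \<Longrightarrow> bop c b L \<Longrightarrow> BO a c m F \<Longrightarrow> BO a b m (\<lambda>u hs x. F u hs (L x))"
  unfolding BO_def using bop_comp(1) by blast

lemma MB_lcomp: assumes la: "lev a" and lc: "lev c" and lb: "lev b" and L: "bop a c L" and M: "MB c b m F"
  shows "MB a b m (\<lambda>u hs x. L (F u hs x))"
proof -
  obtain C where C: "\<forall>u\<in>U. \<forall>hs. length hs = m \<longrightarrow> opn c b (F u hs) \<le> C * pn hs" using MB_bnd[OF M] by blast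
  show ?thesis
  proof (rule MB_intro[where C="opn a c L * C"])
    fix u and hs :: "'b list" assume u: "u \<in> U" and l: "length hs = m"
    show "bop a b (\<lambda>x. L (F u hs x))" using bop_comp(1)[OF la lc lb L MB_bop[OF M u l]] .
    have "opn a b (\<lambda>x. L (F u hs x)) \<le> opn a c L * opn c b (F u hs)" using bop_comp(2)[OF la lc lb L MB_bop[OF M u l]] .
    also have "\<dots> \<le> opn a c L * (C * pn hs)" using C u l opn_nn[OF la lc L] by (simp add: mult_left_mono)
    finally show "opn a b (\<lambda>x. L (F u hs x)) \<le> opn a c L * C * pn hs" by (simp add: mult.assoc)
  next
    fix u and hs :: "'b list" and p c' h h' x assume u: "u \<in> U" and l: "length hs = m" and p: "p < m" and x: "x \<in> V b"
    have l1: "length (hs[p := v]) = m" for v using l by simp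
    have in1: "F u (hs[p := v]) x \<in> V c" for v using bop_in[OF MB_bop[OF M u l1] x] .
    show "L (F u (hs[p := c' *\<^sub>R h + h']) x) = c' *\<^sub>R L (F u (hs[p := h]) x) + L (F u (hs[p := h']) x)"
      unfolding MB_lin[OF M u l p x]
      using bop_add[OF L Vscale[OF lc in1] in1] bop_scale[OF L in1] by simp
  qed
qed

lemma MB_rcomp: assumes la: "lev a" and lc: "lev c" and lb: "lev b" and L: "bop c b L" and M: "MB a c m F"
  shows "MB a b m (\<lambda>u hs x. F u hs (L x))"
proof -
  obtain C where C: "\<forall>u\<in>U. \<forall>hs. length hs = m \<longrightarrow> opn a c (F u hs) \<le> C * pn hs" using MB_bnd[OF M] by blast
  show ?thesis
  proof (rule MB_intro[where C="C * opn c b L"])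
    fix u and hs :: "'b list" assume u: "u \<in> U" and l: "length hs = m"
    show "bop a b (\<lambda>x. F u hs (L x))" using bop_comp(1)[OF la lc lb MB_bop[OF M u l] L] .
    have "opn a b (\<lambda>x. F u hs (L x)) \<le> opn a c (F u hs) * opn c b L" using bop_comp(2)[OF la lc lb MB_bop[OF M u l] L] .
    also have "\<dots> \<le> (C * pn hs) * opn c b L" using C u l opn_nn[OF lc lb L] by (simp add: mult_right_mono)
    finally show "opn a b (\<lambda>x. F u hs (L x)) \<le> C * opn c b L * pn hs" by (simp add: algebra_simps)
  next
    fix u and hs :: "'b list" and p c' h h' x assume u: "u \<in> U" and l: "length hs = m" and p: "p < m" and x: "x \<in> V b"
    show "F u (hs[p := c' *\<^sub>R h + h']) (L x) = c' *\<^sub>R F u (hs[p := h]) (L x) + F u (hs[p := h']) (L x)"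
      using MB_lin[OF M u l p bop_in[OF L x]] .
  qed
qed

lemma bop_D3: assumes la: "lev a" and lb: "lev b" and A: "bop a b A" and B: "bop a b B" and C: "bop a b C"
  shows "bop a b (\<lambda>x. A x - B x - C x)"
  using bop_minus(1)[OF la lb bop_minus(1)[OF la lb A B] C] .

lemma Der_lcomp: assumes la: "lev a" and lc: "lev c" and lb: "lev b" and L: "bop a c L"
  and BF: "BO c b m F" and BG: "BO c b (Suc m) G" and De: "Der c b m F G"
  shows "Der a b m (\<lambda>u hs x. L (F u hs x)) (\<lambda>u hs x. L (G u hs x))"
  unfolding Der_def
proof (intro ballI allI impI)
  fix u e assume u: "u \<in> U" and e: "(0::real) < e"
  define e' where "e' = e / (opn a c L + 1)"
  have Lp: "0 \<le> opn a c L" using opn_nn[OF la lc L] .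
  have e': "e' > 0" unfolding e'_def using e Lp by simp
  obtain d where d: "d > 0" "\<forall>h. norm h < d \<and> u + h \<in> U \<longrightarrow>
      (\<forall>hs. length hs = m \<longrightarrow> opn c b (\<lambda>x. F (u + h) hs x - F u hs x - G u (h # hs) x) \<le> e' * norm h * pn hs)"
    using De u e' unfolding Der_def by blast
  show "\<exists>d>0. \<forall>h. norm h < d \<and> u + h \<in> U \<longrightarrow> (\<forall>hs. length hs = m \<longrightarrow>
     opn a b (\<lambda>x. L (F (u + h) hs x) - L (F u hs x) - L (G u (h # hs) x)) \<le> e * norm h * pn hs)"
  proof (intro exI[of _ d] conjI allI impI)
    fix h and hs :: "'b list" assume h: "norm h < d \<and> u + h \<in> U" and l: "length hs = m"
    have l2: "length (h # hs) = Suc m" using l by simp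
    have b1: "bop c b (F (u + h) hs)" using BO_D[OF BF _ l] h by blast
    have b2: "bop c b (F u hs)" using BO_D[OF BF u l] .
    have b3: "bop c b (G u (h # hs))" using BO_D[OF BG u l2] .
    define T where "T = (\<lambda>x. F (u + h) hs x - F u hs x - G u (h # hs) x)"
    have bT: "bop c b T" unfolding T_def by (rule bop_D3[OF lc lb b1 b2 b3])
    have "opn a b (\<lambda>x. L (F (u + h) hs x) - L (F u hs x) - L (G u (h # hs) x)) = opn a b (\<lambda>x. L (T x))"
    proof (rule opn_cong)
      fix x assume x: "x \<in> V b"
      have i1: "F (u + h) hs x \<in> V c" "F u hs x \<in> V c" "G u (h # hs) x \<in> V c"
        using bop_in[OF b1 x] bop_in[OF b2 x] bop_in[OF b3 x] by auto
      show "L (F (u + h) hs x) - L (F u hs x) - L (G u (h # hs) x) = L (T x)"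
        unfolding T_def using bop_diff[OF lc L Vdiff[OF lc i1(1) i1(2)] i1(3)] bop_diff[OF lc L i1(1) i1(2)] by simp
    qed
    also have "\<dots> \<le> opn a c L * opn c b T" using bop_comp(2)[OF la lc lb L bT] .
    also have "\<dots> \<le> opn a c L * (e' * norm h * pn hs)" using d(2) h l Lp unfolding T_def by (simp add: mult_left_mono)
    also have "\<dots> \<le> e * norm h * pn hs"
    proof -
      have "opn a c L * e' \<le> e" unfolding e'_def using e Lp by (simp add: field_simps)
      then have "(opn a c L * e') * (norm h * pn hs) \<le> e * (norm h * pn hs)"
        using pn_nn[of hs] by (simp add: mult_right_mono)
      then show ?thesis by (simp add: algebra_simps)
    qed
    finally show "opn a b (\<lambda>x. L (F (u + h) hs x) - L (F u hs x) - L (G u (h # hs) x)) \<le> e * norm h * pn hs" .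
  qed (rule d)
qed

lemma Der_rcomp: assumes la: "lev a" and lc: "lev c" and lb: "lev b" and L: "bop c b L"
  and BF: "BO a c m F" and BG: "BO a c (Suc m) G" and De: "Der a c m F G"
  shows "Der a b m (\<lambda>u hs x. F u hs (L x)) (\<lambda>u hs x. G u hs (L x))"
  unfolding Der_def
proof (intro ballI allI impI)
  fix u e assume u: "u \<in> U" and e: "(0::real) < e"
  define e' where "e' = e / (opn c b L + 1)"
  have Lp: "0 \<le> opn c b L" using opn_nn[OF lc lb L] .
  have e': "e' > 0" unfolding e'_def using e Lp by simp
  obtain d where d: "d > 0" "\<forall>h. norm h < d \<and> u + h \<in> U \<longrightarrow>
      (\<forall>hs. length hs = m \<longrightarrow> opn a c (\<lambda>x. F (u + h) hs x - F u hs x - G u (h # hs) x) \<le> e' * norm h * pn hs)"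
    using De u e' unfolding Der_def by blast
  show "\<exists>d>0. \<forall>h. norm h < d \<and> u + h \<in> U \<longrightarrow> (\<forall>hs. length hs = m \<longrightarrow>
     opn a b (\<lambda>x. F (u + h) hs (L x) - F u hs (L x) - G u (h # hs) (L x)) \<le> e * norm h * pn hs)"
  proof (intro exI[of _ d] conjI allI impI)
    fix h and hs :: "'b list" assume h: "norm h < d \<and> u + h \<in> U" and l: "length hs = m"
    have l2: "length (h # hs) = Suc m" using l by simp
    have b1: "bop a c (F (u + h) hs)" using BO_D[OF BF _ l] h by blast
    have b2: "bop a c (F u hs)" using BO_D[OF BF u l] .
    have b3: "bop a c (G u (h # hs))" using BO_D[OF BG u l2] .
    define T where "T = (\<lambda>x. F (u + h) hs x - F u hs x - G u (h # hs) x)"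
    have bT: "bop a c T" unfolding T_def by (rule bop_D3[OF la lc b1 b2 b3])
    have "opn a b (\<lambda>x. F (u + h) hs (L x) - F u hs (L x) - G u (h # hs) (L x)) = opn a b (\<lambda>x. T (L x))"
      unfolding T_def by simp
    also have "\<dots> \<le> opn a c T * opn c b L" using bop_comp(2)[OF la lc lb bT L] .
    also have "\<dots> \<le> (e' * norm h * pn hs) * opn c b L" using d(2) h l Lp unfolding T_def by (simp add: mult_right_mono)
    also have "\<dots> \<le> e * norm h * pn hs"
    proof -
      have "opn c b L * e' \<le> e" unfolding e'_def using e Lp by (simp add: field_simps)
      then have "(opn c b L * e') * (norm h * pn hs) \<le> e * (norm h * pn hs)"
        using pn_nn[of hs] by (simp add: mult_right_mono)
      then show ?thesis by (simp add: algebra_simps)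
    qed
    finally show "opn a b (\<lambda>x. F (u + h) hs (L x) - F u hs (L x) - G u (h # hs) (L x)) \<le> e * norm h * pn hs" .
  qed (rule d)
qed

end

context sc begin

lemma MB_zero_slot: assumes M: "MB a b (Suc m) G" and u: "u \<in> U" and l: "length hs = m" and x: "x \<in> V b"
  shows "G u (0 # hs) x = 0"
proof -
  have l2: "length (0 # hs) = Suc m" using l by simp
  have "G u ((0 # hs)[0 := 1 *\<^sub>R 0 + 0]) x = 1 *\<^sub>R G u ((0 # hs)[0 := 0]) x + G u ((0 # hs)[0 := 0]) x"
    by (rule MB_lin[OF M u l2 _ x]) simp
  then show ?thesis by simp
qed

lemma MB_scale_slot: assumes M: "MB a b (Suc m) G" and u: "u \<in> U" and l: "length hs = m" and x: "x \<in> V b"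
  shows "G u ((c *\<^sub>R h) # hs) x = c *\<^sub>R G u (h # hs) x"
proof -
  have l2: "length (h # hs) = Suc m" using l by simp
  have "G u ((h # hs)[0 := c *\<^sub>R h + 0]) x = c *\<^sub>R G u ((h # hs)[0 := h]) x + G u ((h # hs)[0 := 0]) x"
    by (rule MB_lin[OF M u l2 _ x]) simp
  then show ?thesis using MB_zero_slot[OF M u l x] by simp
qed

lemma der_unique: assumes la: "lev a" and lb: "lev b" and BF: "BO a b m F"
  and M1: "MB a b (Suc m) G1" and M2: "MB a b (Suc m) G2" and D1: "Der a b m F G1" and D2: "Der a b m F G2"
  and u: "u \<in> U" and l: "length hs = Suc m" and x: "x \<in> V b"
  shows "G1 u hs x = G2 u hs x"
proof -
  obtain h hs' where hs: "hs = h # hs'" using l by (cases hs) auto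
  have l': "length hs' = m" using l hs by simp
  define \<Delta> where "\<Delta> = (\<lambda>y. G1 u (h # hs') y - G2 u (h # hs') y)"
  have bD: "bop a b \<Delta>" unfolding \<Delta>_def using bop_minus(1)[OF la lb MB_bop[OF M1 u] MB_bop[OF M2 u]] l hs by simp
  have main: "opn a b \<Delta> \<le> e * (2 * norm h * pn hs')" if e: "e > 0" for e
  proof -
    obtain d1 where d1: "d1 > 0" "\<forall>h. norm h < d1 \<and> u + h \<in> U \<longrightarrow>
      (\<forall>hs. length hs = m \<longrightarrow> opn a b (\<lambda>x. F (u + h) hs x - F u hs x - G1 u (h # hs) x) \<le> e * norm h * pn hs)"
      using D1 u e unfolding Der_def by blast
    obtain d2 where d2: "d2 > 0" "\<forall>h. norm h < d2 \<and> u + h \<in> U \<longrightarrow>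
      (\<forall>hs. length hs = m \<longrightarrow> opn a b (\<lambda>x. F (u + h) hs x - F u hs x - G2 u (h # hs) x) \<le> e * norm h * pn hs)"
      using D2 u e unfolding Der_def by blast
    obtain r where r: "r > 0" "ball u r \<subseteq> U" using opU u open_contains_ball by blast
    define d where "d = min (min d1 d2) r"
    have dp: "d > 0" unfolding d_def using d1 d2 r by simp
    define N where "N = norm h + 1"
    have Np: "N > 0" unfolding N_def by (smt (verit) norm_ge_zero)
    define \<tau> where "\<tau> = d / (2 * N)"
    have tp: "\<tau> > 0" unfolding \<tau>_def using dp Np by simp
    have tn: "\<tau> * norm h < d"
    proof -
      have "\<tau> * norm h \<le> \<tau> * N" using tp unfolding N_def by simp
      also have "\<dots> = d / 2" unfolding \<tau>_def using Np by simp
      finally show ?thesis using dp by simp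
    qed
    define h' where "h' = \<tau> *\<^sub>R h"
    have nh': "norm h' = \<tau> * norm h" unfolding h'_def using tp by simp
    have h'U: "u + h' \<in> U" using r(2) nh' tn unfolding d_def by (auto simp: dist_norm)
    have n1: "norm h' < d1" "norm h' < d2" using nh' tn unfolding d_def by auto
    have l2: "length (h' # hs') = Suc m" using l' by simp
    define A1 where "A1 = (\<lambda>x. F (u + h') hs' x - F u hs' x - G1 u (h' # hs') x)"
    define A2 where "A2 = (\<lambda>x. F (u + h') hs' x - F u hs' x - G2 u (h' # hs') x)"
    have bA1: "bop a b A1" unfolding A1_def
      by (rule bop_D3[OF la lb BO_D[OF BF h'U l'] BO_D[OF BF u l'] MB_bop[OF M1 u l2]])
    have bA2: "bop a b A2" unfolding A2_def
      by (rule bop_D3[OF la lb BO_D[OF BF h'U l'] BO_D[OF BF u l'] MB_bop[OF M2 u l2]])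
    have oA1: "opn a b A1 \<le> e * norm h' * pn hs'" unfolding A1_def using d1(2) n1 h'U l' by blast
    have oA2: "opn a b A2 \<le> e * norm h' * pn hs'" unfolding A2_def using d2(2) n1 h'U l' by blast
    have "opn a b \<Delta> = opn a b (\<lambda>y. (1 / \<tau>) *\<^sub>R (A2 y - A1 y))"
    proof (rule opn_cong)
      fix y assume y: "y \<in> V b"
      have "A2 y - A1 y = G1 u (h' # hs') y - G2 u (h' # hs') y" unfolding A1_def A2_def by simp
      also have "\<dots> = \<tau> *\<^sub>R \<Delta> y" unfolding h'_def \<Delta>_def
        using MB_scale_slot[OF M1 u l' y] MB_scale_slot[OF M2 u l' y] by (simp add: scaleR_diff_right)
      finally show "\<Delta> y = (1 / \<tau>) *\<^sub>R (A2 y - A1 y)" using tp by simp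
    qed
    also have "\<dots> \<le> \<bar>1 / \<tau>\<bar> * opn a b (\<lambda>y. A2 y - A1 y)" by (rule bop_smul(2)[OF la lb bop_minus(1)[OF la lb bA2 bA1]])
    also have "\<dots> \<le> (1 / \<tau>) * (opn a b A2 + opn a b A1)"
      using bop_minus(2)[OF la lb bA2 bA1] tp by (simp add: divide_right_mono)
    also have "\<dots> \<le> (1 / \<tau>) * (2 * (e * norm h' * pn hs'))" using oA1 oA2 tp by (simp add: divide_right_mono)
    also have "\<dots> = e * (2 * norm h * pn hs')" unfolding nh' using tp by simp
    finally show ?thesis .
  qed
  have "opn a b \<Delta> \<le> 0" by (rule le_eps[OF _ main]) (simp add: pn_nn)
  then have "\<Delta> x = 0" by (rule opn_eq0[OF la lb bD _ x])
  then show ?thesis unfolding \<Delta>_def hs by simp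
qed

lemma MB_add: assumes la: "lev a" and lb: "lev b" and M1: "MB a b m F" and M2: "MB a b m G"
  shows "MB a b m (\<lambda>u hs x. F u hs x + G u hs x)"
proof -
  obtain C1 where C1: "\<forall>u\<in>U. \<forall>hs. length hs = m \<longrightarrow> opn a b (F u hs) \<le> C1 * pn hs" using MB_bnd[OF M1] by blast
  obtain C2 where C2: "\<forall>u\<in>U. \<forall>hs. length hs = m \<longrightarrow> opn a b (G u hs) \<le> C2 * pn hs" using MB_bnd[OF M2] by blast
  show ?thesis
  proof (rule MB_intro[where C="C1 + C2"])
    fix u and hs :: "'b list" assume u: "u \<in> U" and l: "length hs = m"
    show "bop a b (\<lambda>x. F u hs x + G u hs x)" by (rule bop_plus(1)[OF la lb MB_bop[OF M1 u l] MB_bop[OF M2 u l]])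
    have "opn a b (\<lambda>x. F u hs x + G u hs x) \<le> opn a b (F u hs) + opn a b (G u hs)"
      by (rule bop_plus(2)[OF la lb MB_bop[OF M1 u l] MB_bop[OF M2 u l]])
    also have "\<dots> \<le> C1 * pn hs + C2 * pn hs"
    proof (rule add_mono)
      show "opn a b (F u hs) \<le> C1 * pn hs" using C1 u l by blast
      show "opn a b (G u hs) \<le> C2 * pn hs" using C2 u l by blast
    qed
    finally show "opn a b (\<lambda>x. F u hs x + G u hs x) \<le> (C1 + C2) * pn hs" by (simp add: algebra_simps)
  next
    fix u and hs :: "'b list" and p c h h' x assume u: "u \<in> U" and l: "length hs = m" and p: "p < m" and x: "x \<in> V b"
    show "F u (hs[p := c *\<^sub>R h + h']) x + G u (hs[p := c *\<^sub>R h + h']) x =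
          c *\<^sub>R (F u (hs[p := h]) x + G u (hs[p := h]) x) + (F u (hs[p := h']) x + G u (hs[p := h']) x)"
      unfolding MB_lin[OF M1 u l p x] MB_lin[OF M2 u l p x] by (simp add: algebra_simps)
  qed
qed

lemma Cont_add: assumes la: "lev a" and lb: "lev b" and B1: "BO a b m F" and B2: "BO a b m G"
  and M1: "Cont a b m F" and M2: "Cont a b m G"
  shows "Cont a b m (\<lambda>u hs x. F u hs x + G u hs x)"
  unfolding Cont_def
proof (intro ballI allI impI)
  fix u e assume u: "u \<in> U" and e: "(0::real) < e"
  obtain d1 where d1: "d1 > 0" "\<forall>v\<in>U. norm (v - u) < d1 \<longrightarrow>
      (\<forall>hs. length hs = m \<longrightarrow> opn a b (\<lambda>x. F v hs x - F u hs x) \<le> (e/2) * pn hs)"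
    using M1 u e unfolding Cont_def by (meson half_gt_zero)
  obtain d2 where d2: "d2 > 0" "\<forall>v\<in>U. norm (v - u) < d2 \<longrightarrow>
      (\<forall>hs. length hs = m \<longrightarrow> opn a b (\<lambda>x. G v hs x - G u hs x) \<le> (e/2) * pn hs)"
    using M2 u e unfolding Cont_def by (meson half_gt_zero)
  show "\<exists>d>0. \<forall>v\<in>U. norm (v - u) < d \<longrightarrow> (\<forall>hs. length hs = m \<longrightarrow>
     opn a b (\<lambda>x. F v hs x + G v hs x - (F u hs x + G u hs x)) \<le> e * pn hs)"
  proof (intro exI[of _ "min d1 d2"] conjI ballI impI allI)
    fix v and hs :: "'b list" assume v: "v \<in> U" and nv: "norm (v - u) < min d1 d2" and l: "length hs = m"
    have b1: "bop a b (\<lambda>x. F v hs x - F u hs x)" by (rule bop_minus(1)[OF la lb BO_D[OF B1 v l] BO_D[OF B1 u l]])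
    have b2: "bop a b (\<lambda>x. G v hs x - G u hs x)" by (rule bop_minus(1)[OF la lb BO_D[OF B2 v l] BO_D[OF B2 u l]])
    have "opn a b (\<lambda>x. F v hs x + G v hs x - (F u hs x + G u hs x)) =
          opn a b (\<lambda>x. (F v hs x - F u hs x) + (G v hs x - G u hs x))" by (rule opn_cong) (simp add: algebra_simps)
    also have "\<dots> \<le> opn a b (\<lambda>x. F v hs x - F u hs x) + opn a b (\<lambda>x. G v hs x - G u hs x)"
      by (rule bop_plus(2)[OF la lb b1 b2])
    also have "\<dots> \<le> (e/2) * pn hs + (e/2) * pn hs"
    proof (rule add_mono)
      show "opn a b (\<lambda>x. F v hs x - F u hs x) \<le> (e/2) * pn hs" using d1(2) v nv l by simp
      show "opn a b (\<lambda>x. G v hs x - G u hs x) \<le> (e/2) * pn hs" using d2(2) v nv l by simp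
    qed
    finally show "opn a b (\<lambda>x. F v hs x + G v hs x - (F u hs x + G u hs x)) \<le> e * pn hs" by simp
  qed (use d1 d2 in simp)
qed

lemma Hol_add: assumes la: "lev a" and lb: "lev b" and B1: "BO a b m F" and B2: "BO a b m G"
  and M1: "Hol a b m \<alpha> F" and M2: "Hol a b m \<alpha> G"
  shows "Hol a b m \<alpha> (\<lambda>u hs x. F u hs x + G u hs x)"
proof -
  obtain C1 where C1: "\<forall>u\<in>U. \<forall>v\<in>U. \<forall>hs. length hs = m \<longrightarrow>
      opn a b (\<lambda>x. F u hs x - F v hs x) \<le> C1 * norm (u - v) powr \<alpha> * pn hs" using M1 unfolding Hol_def by blast
  obtain C2 where C2: "\<forall>u\<in>U. \<forall>v\<in>U. \<forall>hs. length hs = m \<longrightarrow>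
      opn a b (\<lambda>x. G u hs x - G v hs x) \<le> C2 * norm (u - v) powr \<alpha> * pn hs" using M2 unfolding Hol_def by blast
  show ?thesis unfolding Hol_def
  proof (intro exI[of _ "C1 + C2"] ballI allI impI)
    fix u v and hs :: "'b list" assume u: "u \<in> U" and v: "v \<in> U" and l: "length hs = m"
    have b1: "bop a b (\<lambda>x. F u hs x - F v hs x)" by (rule bop_minus(1)[OF la lb BO_D[OF B1 u l] BO_D[OF B1 v l]])
    have b2: "bop a b (\<lambda>x. G u hs x - G v hs x)" by (rule bop_minus(1)[OF la lb BO_D[OF B2 u l] BO_D[OF B2 v l]])
    have "opn a b (\<lambda>x. F u hs x + G u hs x - (F v hs x + G v hs x)) =
          opn a b (\<lambda>x. (F u hs x - F v hs x) + (G u hs x - G v hs x))" by (rule opn_cong) (simp add: algebra_simps)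
    also have "\<dots> \<le> opn a b (\<lambda>x. F u hs x - F v hs x) + opn a b (\<lambda>x. G u hs x - G v hs x)"
      by (rule bop_plus(2)[OF la lb b1 b2])
    also have "\<dots> \<le> C1 * norm (u - v) powr \<alpha> * pn hs + C2 * norm (u - v) powr \<alpha> * pn hs"
    proof (rule add_mono)
      show "opn a b (\<lambda>x. F u hs x - F v hs x) \<le> C1 * norm (u - v) powr \<alpha> * pn hs" using C1 u v l by blast
      show "opn a b (\<lambda>x. G u hs x - G v hs x) \<le> C2 * norm (u - v) powr \<alpha> * pn hs" using C2 u v l by blast
    qed
    finally show "opn a b (\<lambda>x. F u hs x + G u hs x - (F v hs x + G v hs x)) \<le> (C1 + C2) * norm (u - v) powr \<alpha> * pn hs"
      by (simp add: algebra_simps)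
  qed
qed

lemma Der_add: assumes la: "lev a" and lb: "lev b" and B1: "BO a b m F" and B2: "BO a b m G"
  and B3: "BO a b (Suc m) F'" and B4: "BO a b (Suc m) G'"
  and M1: "Der a b m F F'" and M2: "Der a b m G G'"
  shows "Der a b m (\<lambda>u hs x. F u hs x + G u hs x) (\<lambda>u hs x. F' u hs x + G' u hs x)"
  unfolding Der_def
proof (intro ballI allI impI)
  fix u e assume u: "u \<in> U" and e: "(0::real) < e"
  obtain d1 where d1: "d1 > 0" "\<forall>h. norm h < d1 \<and> u + h \<in> U \<longrightarrow>
      (\<forall>hs. length hs = m \<longrightarrow> opn a b (\<lambda>x. F (u + h) hs x - F u hs x - F' u (h # hs) x) \<le> (e/2) * norm h * pn hs)"
    using M1 u e unfolding Der_def by (meson half_gt_zero)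
  obtain d2 where d2: "d2 > 0" "\<forall>h. norm h < d2 \<and> u + h \<in> U \<longrightarrow>
      (\<forall>hs. length hs = m \<longrightarrow> opn a b (\<lambda>x. G (u + h) hs x - G u hs x - G' u (h # hs) x) \<le> (e/2) * norm h * pn hs)"
    using M2 u e unfolding Der_def by (meson half_gt_zero)
  show "\<exists>d>0. \<forall>h. norm h < d \<and> u + h \<in> U \<longrightarrow> (\<forall>hs. length hs = m \<longrightarrow>
     opn a b (\<lambda>x. F (u + h) hs x + G (u + h) hs x - (F u hs x + G u hs x) - (F' u (h # hs) x + G' u (h # hs) x))
       \<le> e * norm h * pn hs)"
  proof (intro exI[of _ "min d1 d2"] conjI allI impI)
    fix h and hs :: "'b list" assume h: "norm h < min d1 d2 \<and> u + h \<in> U" and l: "length hs = m"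
    have l2: "length (h # hs) = Suc m" using l by simp
    have hU: "u + h \<in> U" using h by simp
    have b1: "bop a b (\<lambda>x. F (u + h) hs x - F u hs x - F' u (h # hs) x)"
      by (rule bop_D3[OF la lb BO_D[OF B1 hU l] BO_D[OF B1 u l] BO_D[OF B3 u l2]])
    have b2: "bop a b (\<lambda>x. G (u + h) hs x - G u hs x - G' u (h # hs) x)"
      by (rule bop_D3[OF la lb BO_D[OF B2 hU l] BO_D[OF B2 u l] BO_D[OF B4 u l2]])
    have "opn a b (\<lambda>x. F (u + h) hs x + G (u + h) hs x - (F u hs x + G u hs x) - (F' u (h # hs) x + G' u (h # hs) x)) =
          opn a b (\<lambda>x. (F (u + h) hs x - F u hs x - F' u (h # hs) x) + (G (u + h) hs x - G u hs x - G' u (h # hs) x))"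
      by (rule opn_cong) (simp add: algebra_simps)
    also have "\<dots> \<le> opn a b (\<lambda>x. F (u + h) hs x - F u hs x - F' u (h # hs) x) + opn a b (\<lambda>x. G (u + h) hs x - G u hs x - G' u (h # hs) x)"
      by (rule bop_plus(2)[OF la lb b1 b2])
    also have "\<dots> \<le> (e/2) * norm h * pn hs + (e/2) * norm h * pn hs"
    proof (rule add_mono)
      show "opn a b (\<lambda>x. F (u + h) hs x - F u hs x - F' u (h # hs) x) \<le> (e/2) * norm h * pn hs" using d1(2) h l by simp
      show "opn a b (\<lambda>x. G (u + h) hs x - G u hs x - G' u (h # hs) x) \<le> (e/2) * norm h * pn hs" using d2(2) h l by simp
    qed
    finally show "opn a b (\<lambda>x. F (u + h) hs x + G (u + h) hs x - (F u hs x + G u hs x) - (F' u (h # hs) x + G' u (h # hs) x))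
       \<le> e * norm h * pn hs" by simp
  qed (use d1 d2 in simp)
qed

lemma creg_add: assumes la: "lev a" and lb: "lev b" and t: "0 \<le> t" and C1: "Creg a b m t F" and C2: "Creg a b m t G"
  shows "Creg a b m t (\<lambda>u hs x. F u hs x + G u hs x)"
proof (cases "t = 0")
  case True
  then show ?thesis using C1 C2 MB_add[OF la lb] Cont_add[OF la lb] MB_BO unfolding Creg_def by simp
next
  case False
  obtain D1 where D1: "EQ b m (D1 0) F" "GR a b m (kk t) (aa t) D1" using C1 False unfolding Creg_def by auto
  obtain D2 where D2: "EQ b m (D2 0) G" "GR a b m (kk t) (aa t) D2" using C2 False unfolding Creg_def by auto
  define D where "D = (\<lambda>i u hs x. D1 i u hs x + D2 i u hs x)"
  have "GR a b m (kk t) (aa t) D" unfolding GR_def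
  proof (intro conjI allI impI)
    fix i assume "i \<le> kk t"
    then have "MB a b (i + m) (D1 i)" "MB a b (i + m) (D2 i)" using D1(2) D2(2) unfolding GR_def by auto
    then show "MB a b (i + m) (D i)" unfolding D_def using MB_add[OF la lb] by blast
  next
    fix i assume i: "i < kk t"
    have G1: "\<forall>i\<le>kk t. MB a b (i + m) (D1 i)" "\<forall>i\<le>kk t. MB a b (i + m) (D2 i)" using D1(2) D2(2) unfolding GR_def by auto
    have "MB a b (i + m) (D1 i)" "MB a b (i + m) (D2 i)" using G1 i by auto
    moreover have "MB a b (Suc i + m) (D1 (Suc i))" "MB a b (Suc i + m) (D2 (Suc i))"
      using G1 i by (meson Suc_leI)+
    ultimately have "MB a b (i + m) (D1 i)" "MB a b (i + m) (D2 i)" "MB a b (Suc i + m) (D1 (Suc i))" "MB a b (Suc i + m) (D2 (Suc i))"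
      by auto
    moreover have "Der a b (i + m) (D1 i) (D1 (Suc i))" "Der a b (i + m) (D2 i) (D2 (Suc i))" using i D1(2) D2(2) unfolding GR_def by auto
    ultimately show "Der a b (i + m) (D i) (D (Suc i))" unfolding D_def using Der_add[OF la lb] MB_BO by simp
  next
    have "MB a b (kk t + m) (D1 (kk t))" "MB a b (kk t + m) (D2 (kk t))" using D1(2) D2(2) unfolding GR_def by auto
    moreover have "Hol a b (kk t + m) (aa t) (D1 (kk t))" "Hol a b (kk t + m) (aa t) (D2 (kk t))" using D1(2) D2(2) unfolding GR_def by auto
    ultimately show "Hol a b (kk t + m) (aa t) (D (kk t))" unfolding D_def using Hol_add[OF la lb] MB_BO by blast
  qed
  moreover have "EQ b m (D 0) (\<lambda>u hs x. F u hs x + G u hs x)" unfolding D_def using D1(1) D2(1) by simp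
  ultimately show ?thesis unfolding Creg_def using False by auto
qed

end

context sc begin

lemma j_bop: assumes "0 < a" "a \<le> c" "c \<le> r0" shows "bop a c (j a c)"
  using bs assms unfolding banach_scale_def by blast
lemma j_inj: assumes "0 < a" "a \<le> c" "c \<le> r0" shows "inj_on (j a c) (V c)"
  using bs assms unfolding banach_scale_def by blast
lemma j_id: assumes "0 < a" "a \<le> r0" "x \<in> V a" shows "j a a x = x"
  using bs assms unfolding banach_scale_def by blast
lemma j_comp: assumes "0 < a" "a \<le> c" "c \<le> b" "b \<le> r0" "x \<in> V b" shows "j a c (j c b x) = j a b x"
  using bs assms unfolding banach_scale_def by blast

definition FReg :: "(real \<Rightarrow> real \<Rightarrow> 'b \<Rightarrow> 'b list \<Rightarrow> 'x \<Rightarrow> 'x) \<Rightarrow> nat \<Rightarrow> real \<Rightarrow> real \<Rightarrow> bool" where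
  "FReg \<Phi> m \<delta> g \<longleftrightarrow> (\<forall>a b t. 0 < a \<longrightarrow> b \<le> r0 \<longrightarrow> 0 \<le> t \<longrightarrow> t < b - a - \<delta> \<longrightarrow> t < g \<longrightarrow> Creg a b m t (\<Phi> a b))"

definition Coh :: "(real \<Rightarrow> real \<Rightarrow> 'b \<Rightarrow> 'b list \<Rightarrow> 'x \<Rightarrow> 'x) \<Rightarrow> nat \<Rightarrow> real \<Rightarrow> bool" where
  "Coh \<Phi> m \<delta> \<longleftrightarrow> (\<forall>u\<in>U. \<forall>hs. length hs = m \<longrightarrow>
     (\<forall>a c b x. 0 < a \<longrightarrow> a \<le> c \<longrightarrow> c + \<delta> < b \<longrightarrow> b \<le> r0 \<longrightarrow> x \<in> V b \<longrightarrow> \<Phi> a b u hs x = j a c (\<Phi> c b u hs x)) \<and>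
     (\<forall>a c b x. 0 < a \<longrightarrow> a + \<delta> < c \<longrightarrow> c \<le> b \<longrightarrow> b \<le> r0 \<longrightarrow> x \<in> V b \<longrightarrow> \<Phi> a b u hs x = \<Phi> a c u hs (j c b x)))"

definition Fam :: "(real \<Rightarrow> real \<Rightarrow> 'b \<Rightarrow> 'b list \<Rightarrow> 'x \<Rightarrow> 'x) \<Rightarrow> nat \<Rightarrow> real \<Rightarrow> real \<Rightarrow> bool" where
  "Fam \<Phi> m \<delta> g \<longleftrightarrow> 0 \<le> \<delta> \<and> FReg \<Phi> m \<delta> g \<and> (0 < g \<longrightarrow> Coh \<Phi> m \<delta>)"

lemma fam_creg: "Fam \<Phi> m \<delta> g \<Longrightarrow> 0 < a \<Longrightarrow> b \<le> r0 \<Longrightarrow> 0 \<le> t \<Longrightarrow> t < b - a - \<delta> \<Longrightarrow> t < g \<Longrightarrow> Creg a b m t (\<Phi> a b)"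
  unfolding Fam_def FReg_def by blast

lemma fam_MB: assumes F: "Fam \<Phi> m \<delta> g" and g: "0 < g" and a: "0 < a" "a + \<delta> < b" "b \<le> r0"
  shows "MB a b m (\<Phi> a b)"
proof -
  have d: "0 \<le> \<delta>" using F unfolding Fam_def by simp
  have lb: "lev b" using a d by simp
  show ?thesis using creg_MB[OF lb _ fam_creg[OF F a(1) a(3) _ _ g]] a by simp
qed

lemma fam_BO: "Fam \<Phi> m \<delta> g \<Longrightarrow> 0 < g \<Longrightarrow> 0 < a \<Longrightarrow> a + \<delta> < b \<Longrightarrow> b \<le> r0 \<Longrightarrow> BO a b m (\<Phi> a b)"
  using fam_MB MB_BO by blast

lemma fam_cont: assumes F: "Fam \<Phi> m \<delta> g" and g: "0 < g" and a: "0 < a" "a + \<delta> < b" "b \<le> r0"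
  shows "Cont a b m (\<Phi> a b)"
proof -
  have d: "0 \<le> \<delta>" using F unfolding Fam_def by simp
  have lb: "lev b" using a d by simp
  show ?thesis using creg_cont[OF lb _ _ fam_creg[OF F a(1) a(3) _ _ g]] a by simp
qed

lemma fam_hol: assumes F: "Fam \<Phi> m \<delta> g" and t: "0 < t" "t \<le> 1" "t < g" and a: "0 < a" "t < b - a - \<delta>" "b \<le> r0"
  shows "Hol a b m t (\<Phi> a b)"
proof -
  have d: "0 \<le> \<delta>" using F unfolding Fam_def by simp
  have lb: "lev b" using a d t by simp
  show ?thesis using creg_hol[OF lb t(1,2) fam_creg[OF F a(1) a(3) _ a(2) t(3)]] t by simp
qed

lemma fam_coh1: "Fam \<Phi> m \<delta> g \<Longrightarrow> 0 < g \<Longrightarrow> u \<in> U \<Longrightarrow> length hs = m \<Longrightarrow> 0 < a \<Longrightarrow> a \<le> c \<Longrightarrow> c + \<delta> < b \<Longrightarrow> b \<le> r0 \<Longrightarrow> x \<in> V b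
   \<Longrightarrow> \<Phi> a b u hs x = j a c (\<Phi> c b u hs x)"
  unfolding Fam_def Coh_def by blast

lemma fam_coh2: "Fam \<Phi> m \<delta> g \<Longrightarrow> 0 < g \<Longrightarrow> u \<in> U \<Longrightarrow> length hs = m \<Longrightarrow> 0 < a \<Longrightarrow> a + \<delta> < c \<Longrightarrow> c \<le> b \<Longrightarrow> b \<le> r0 \<Longrightarrow> x \<in> V b
   \<Longrightarrow> \<Phi> a b u hs x = \<Phi> a c u hs (j c b x)"
  unfolding Fam_def Coh_def by blast

definition DF :: "(real \<Rightarrow> real \<Rightarrow> 'b \<Rightarrow> 'b list \<Rightarrow> 'x \<Rightarrow> 'x) \<Rightarrow> nat \<Rightarrow> real \<Rightarrow> real \<Rightarrow> 'b \<Rightarrow> 'b list \<Rightarrow> 'x \<Rightarrow> 'x" where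
  "DF \<Phi> m a b = (SOME G. Der a b m (\<Phi> a b) G \<and> MB a b (Suc m) G)"

lemma DF_spec: "Der a b m (\<Phi> a b) G \<Longrightarrow> MB a b (Suc m) G \<Longrightarrow> Der a b m (\<Phi> a b) (DF \<Phi> m a b) \<and> MB a b (Suc m) (DF \<Phi> m a b)"
  unfolding DF_def by (rule someI[where P="\<lambda>G. Der a b m (\<Phi> a b) G \<and> MB a b (Suc m) G"]) simp

lemma fam_der_ex: assumes F: "Fam \<Phi> m \<delta> g" and g: "1 < g" and a: "0 < a" "a + \<delta> + 1 < b" "b \<le> r0"
  shows "Der a b m (\<Phi> a b) (DF \<Phi> m a b) \<and> MB a b (Suc m) (DF \<Phi> m a b)"
proof -
  have d: "0 \<le> \<delta>" using F unfolding Fam_def by simp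
  have lb: "lev b" using a d by simp
  define \<beta> where "\<beta> = min 1 (min (b - a - \<delta> - 1) (g - 1)) / 2"
  have mm: "min 1 (min (b - a - \<delta> - 1) (g - 1)) \<le> 1" "min 1 (min (b - a - \<delta> - 1) (g - 1)) \<le> b - a - \<delta> - 1"
    "min 1 (min (b - a - \<delta> - 1) (g - 1)) \<le> g - 1" "0 < min 1 (min (b - a - \<delta> - 1) (g - 1))" using a g by auto
  have bp: "0 < \<beta>" "\<beta> \<le> 1" "1 + \<beta> < b - a - \<delta>" "1 + \<beta> < g" unfolding \<beta>_def using mm by linarith+
  have C: "Creg a b m (1 + \<beta>) (\<Phi> a b)" by (rule fam_creg[OF F a(1) a(3)]) (use bp in auto)
  obtain G where G: "Der a b m (\<Phi> a b) G" "MB a b (Suc m) G" using creg_der[OF lb _ C] bp by auto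
  show ?thesis by (rule DF_spec[where \<Phi>=\<Phi>, OF G])
qed

lemma fam_DF: assumes F: "Fam \<Phi> m \<delta> g" and g: "1 < g"
  shows "Fam (DF \<Phi> m) (Suc m) (\<delta> + 1) (g - 1)"
proof -
  have d: "0 \<le> \<delta>" using F unfolding Fam_def by simp
  have FR: "FReg (DF \<Phi> m) (Suc m) (\<delta> + 1) (g - 1)" unfolding FReg_def
  proof (intro allI impI)
    fix a b t assume a: "0 < a" and b: "b \<le> r0" and t: "0 \<le> t" and tb: "t < b - a - (\<delta> + 1)" and tg: "t < g - 1"
    have lb: "lev b" and la: "lev a" using a b d t tb by auto
    have DV: "Der a b m (\<Phi> a b) (DF \<Phi> m a b)" "MB a b (Suc m) (DF \<Phi> m a b)"
      using fam_der_ex[OF F g a _ b] tb t by auto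
    have BF: "BO a b m (\<Phi> a b)" using fam_BO[OF F _ a _ b] g tb t by simp
    show "Creg a b (Suc m) t (DF \<Phi> m a b)"
    proof (cases "t = 0")
      case False
      then have tp: "t > 0" using t by simp
      have C: "Creg a b m (t + 1) (\<Phi> a b)" by (rule fam_creg[OF F a b]) (use t tb tg in auto)
      obtain G where G: "Der a b m (\<Phi> a b) G" "Creg a b (Suc m) t G" "MB a b (Suc m) G"
        using creg_der[OF lb _ C] tp by auto
      have "EQ b (Suc m) G (DF \<Phi> m a b)" using der_unique[OF la lb BF G(3) DV(2) G(1) DV(1)] by blast
      then show ?thesis using creg_cong[OF lb _ G(2)] by blast
    next
      case True
      define \<beta> where "\<beta> = min 1 (min (b - a - \<delta> - 1) (g - 1)) / 2"
      have mm: "min 1 (min (b - a - \<delta> - 1) (g - 1)) \<le> 1" "min 1 (min (b - a - \<delta> - 1) (g - 1)) \<le> b - a - \<delta> - 1"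
        "min 1 (min (b - a - \<delta> - 1) (g - 1)) \<le> g - 1" "0 < min 1 (min (b - a - \<delta> - 1) (g - 1))" using a g tb True by auto
      have bp: "0 < \<beta>" "\<beta> \<le> 1" "1 + \<beta> < b - a - \<delta>" "1 + \<beta> < g" unfolding \<beta>_def using mm by linarith+
      have C: "Creg a b m (1 + \<beta>) (\<Phi> a b)" by (rule fam_creg[OF F a b]) (use bp in auto)
      obtain G where G: "Der a b m (\<Phi> a b) G" "Creg a b (Suc m) \<beta> G" "MB a b (Suc m) G"
        using creg_der[OF lb _ C] bp by auto
      have "EQ b (Suc m) G (DF \<Phi> m a b)" using der_unique[OF la lb BF G(3) DV(2) G(1) DV(1)] by blast
      then have "Creg a b (Suc m) \<beta> (DF \<Phi> m a b)" using creg_cong[OF lb _ G(2)] by blast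
      then show ?thesis using creg_0[OF lb bp(1,2)] True by simp
    qed
  qed
  have CO: "Coh (DF \<Phi> m) (Suc m) (\<delta> + 1)" unfolding Coh_def
  proof (intro ballI allI impI conjI)
    fix u and hs :: "'b list" and a c b x
    assume u: "u \<in> U" and l: "length hs = Suc m" and a: "0 < a" and ac: "a \<le> c" and cb: "c + (\<delta> + 1) < b"
      and b: "b \<le> r0" and x: "x \<in> V b"
    have la: "lev a" and lc: "lev c" and lb: "lev b" using a ac cb b d by auto
    have J: "bop a c (j a c)" using j_bop a ac cb b d by simp
    have DVc: "Der c b m (\<Phi> c b) (DF \<Phi> m c b)" "MB c b (Suc m) (DF \<Phi> m c b)"
      using fam_der_ex[OF F g _ _ b] a ac cb by auto
    have DVa: "Der a b m (\<Phi> a b) (DF \<Phi> m a b)" "MB a b (Suc m) (DF \<Phi> m a b)"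
      using fam_der_ex[OF F g a _ b] ac cb by auto
    have BFc: "BO c b m (\<Phi> c b)" using fam_BO[OF F _ _ _ b] g a ac cb by simp
    have BFa: "BO a b m (\<Phi> a b)" using fam_BO[OF F _ a _ b] g ac cb by simp
    have D1: "Der a b m (\<lambda>u hs x. j a c (\<Phi> c b u hs x)) (\<lambda>u hs x. j a c (DF \<Phi> m c b u hs x))"
      by (rule Der_lcomp[OF la lc lb J BFc MB_BO[OF DVc(2)] DVc(1)])
    have E: "EQ b m (\<lambda>u hs x. j a c (\<Phi> c b u hs x)) (\<Phi> a b)"
      using fam_coh1[OF F _ _ _ a ac _ b] g cb by simp
    have D2: "Der a b m (\<Phi> a b) (\<lambda>u hs x. j a c (DF \<Phi> m c b u hs x))" by (rule Der_cong[OF E _ D1]) simp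
    have M2: "MB a b (Suc m) (\<lambda>u hs x. j a c (DF \<Phi> m c b u hs x))" by (rule MB_lcomp[OF la lc lb J DVc(2)])
    show "DF \<Phi> m a b u hs x = j a c (DF \<Phi> m c b u hs x)"
      using der_unique[OF la lb BFa DVa(2) M2 DVa(1) D2 u l x] .
  next
    fix u and hs :: "'b list" and a c b x
    assume u: "u \<in> U" and l: "length hs = Suc m" and a: "0 < a" and ac: "a + (\<delta> + 1) < c" and cb: "c \<le> b"
      and b: "b \<le> r0" and x: "x \<in> V b"
    have la: "lev a" and lc: "lev c" and lb: "lev b" using a ac cb b d by auto
    have J: "bop c b (j c b)" using j_bop a ac cb b d by simp
    have DVc: "Der a c m (\<Phi> a c) (DF \<Phi> m a c)" "MB a c (Suc m) (DF \<Phi> m a c)"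
      using fam_der_ex[OF F g a _ ] a ac cb b by auto
    have DVa: "Der a b m (\<Phi> a b) (DF \<Phi> m a b)" "MB a b (Suc m) (DF \<Phi> m a b)"
      using fam_der_ex[OF F g a _ b] ac cb by auto
    have BFc: "BO a c m (\<Phi> a c)" using fam_BO[OF F _ a] g a ac cb b by simp
    have BFa: "BO a b m (\<Phi> a b)" using fam_BO[OF F _ a _ b] g ac cb by simp
    have D1: "Der a b m (\<lambda>u hs x. \<Phi> a c u hs (j c b x)) (\<lambda>u hs x. DF \<Phi> m a c u hs (j c b x))"
      by (rule Der_rcomp[OF la lc lb J BFc MB_BO[OF DVc(2)] DVc(1)])
    have E: "EQ b m (\<lambda>u hs x. \<Phi> a c u hs (j c b x)) (\<Phi> a b)"
      using fam_coh2[OF F _ _ _ a _ cb b] g ac by simp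
    have D2: "Der a b m (\<Phi> a b) (\<lambda>u hs x. DF \<Phi> m a c u hs (j c b x))" by (rule Der_cong[OF E _ D1]) simp
    have M2: "MB a b (Suc m) (\<lambda>u hs x. DF \<Phi> m a c u hs (j c b x))" by (rule MB_rcomp[OF la lc lb J DVc(2)])
    show "DF \<Phi> m a b u hs x = DF \<Phi> m a c u hs (j c b x)"
      using der_unique[OF la lb BFa DVa(2) M2 DVa(1) D2 u l x] .
  qed
  show ?thesis unfolding Fam_def using FR CO d by simp
qed

end

definition selT :: "bool list \<Rightarrow> 'a list \<Rightarrow> 'a list" where "selT ms gs = map fst (filter snd (zip gs ms))"
definition selF :: "bool list \<Rightarrow> 'a list \<Rightarrow> 'a list" where "selF ms gs = map fst (filter (Not \<circ> snd) (zip gs ms))"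
abbreviation cntT :: "bool list \<Rightarrow> nat" where "cntT ms \<equiv> length (filter (\<lambda>b. b) ms)"
abbreviation cntF :: "bool list \<Rightarrow> nat" where "cntF ms \<equiv> length (filter Not ms)"

lemma selT_Nil[simp]: "selT [] gs = []" "selT ms [] = []" unfolding selT_def by auto
lemma selF_Nil[simp]: "selF [] gs = []" "selF ms [] = []" unfolding selF_def by auto
lemma sel_Cons[simp]: "selT (True # ms) (g # gs) = g # selT ms gs" "selT (False # ms) (g # gs) = selT ms gs"
  "selF (True # ms) (g # gs) = selF ms gs" "selF (False # ms) (g # gs) = g # selF ms gs"
  unfolding selT_def selF_def by auto

lemma len_sel: "length gs = length ms \<Longrightarrow> length (selT ms gs) = cntT ms \<and> length (selF ms gs) = cntF ms"
proof (induction gs ms rule: list_induct2)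
  case Nil then show ?case by simp
next
  case (Cons g gs m ms) then show ?case by (cases m) auto
qed

lemma cnt_sum: "cntT ms + cntF ms = length ms"
  by (induction ms) auto

lemma pn_sel: "length gs = length ms \<Longrightarrow> pn gs = pn (selT ms gs) * pn (selF ms gs)"
proof (induction gs ms rule: list_induct2)
  case Nil then show ?case by simp
next
  case (Cons g gs m ms) then show ?case by (cases m) auto
qed

lemma upd_T: "length gs = length ms \<Longrightarrow> p < length ms \<Longrightarrow> ms ! p \<Longrightarrow>
  selT ms (gs[p := v]) = (selT ms gs)[cntT (take p ms) := v] \<and> selF ms (gs[p := v]) = selF ms gs \<and> cntT (take p ms) < cntT ms"
proof (induction gs ms arbitrary: p rule: list_induct2)
  case Nil then show ?case by simp
next
  case (Cons g gs m ms)
  show ?case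
  proof (cases p)
    case 0 then show ?thesis using Cons by auto
  next
    case (Suc p')
    then have "selT ms (gs[p' := v]) = (selT ms gs)[cntT (take p' ms) := v] \<and> selF ms (gs[p' := v]) = selF ms gs \<and> cntT (take p' ms) < cntT ms"
      using Cons by simp
    then show ?thesis using Suc by (cases m) auto
  qed
qed

lemma upd_F: "length gs = length ms \<Longrightarrow> p < length ms \<Longrightarrow> \<not> ms ! p \<Longrightarrow>
  selF ms (gs[p := v]) = (selF ms gs)[cntF (take p ms) := v] \<and> selT ms (gs[p := v]) = selT ms gs \<and> cntF (take p ms) < cntF ms"
proof (induction gs ms arbitrary: p rule: list_induct2)
  case Nil then show ?case by simp
next
  case (Cons g gs m ms)
  show ?case
  proof (cases p)
    case 0 then show ?thesis using Cons by auto
  next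
    case (Suc p')
    then have "selF ms (gs[p' := v]) = (selF ms gs)[cntF (take p' ms) := v] \<and> selT ms (gs[p' := v]) = selT ms gs \<and> cntF (take p' ms) < cntF ms"
      using Cons by simp
    then show ?thesis using Suc by (cases m) auto
  qed
qed

context sc begin

lemma MB_bnd0: assumes M: "MB a b m F" shows "\<exists>C\<ge>0. \<forall>u\<in>U. \<forall>hs. length hs = m \<longrightarrow> opn a b (F u hs) \<le> C * pn hs"
proof -
  obtain C where C: "\<forall>u\<in>U. \<forall>hs. length hs = m \<longrightarrow> opn a b (F u hs) \<le> C * pn hs" using MB_bnd[OF M] by blast
  have "\<forall>u\<in>U. \<forall>hs. length hs = m \<longrightarrow> opn a b (F u hs) \<le> max C 0 * pn hs"
  proof (intro ballI allI impI)
    fix u and hs :: "'b list" assume u: "u \<in> U" and l: "length hs = m"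
    have "C * pn hs \<le> max C 0 * pn hs" using pn_nn[of hs] by (simp add: mult_right_mono)
    then show "opn a b (F u hs) \<le> max C 0 * pn hs" using C u l by fastforce
  qed
  then show ?thesis by (intro exI[of _ "max C 0"]) simp
qed

lemma MB_prod: assumes la: "lev a" and lc: "lev c" and lb: "lev b" and A: "MB a c m1 A" and B: "MB c b m2 B"
  and ms: "length ms = m1 + m2" "cntT ms = m1"
  shows "MB a b (m1 + m2) (\<lambda>u gs x. A u (selT ms gs) (B u (selF ms gs) x))"
proof -
  have ms2: "cntF ms = m2" using cnt_sum[of ms] ms by simp
  obtain CA where CA: "CA \<ge> 0" "\<forall>u\<in>U. \<forall>hs. length hs = m1 \<longrightarrow> opn a c (A u hs) \<le> CA * pn hs" using MB_bnd0[OF A] by blast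
  obtain CB where CB: "CB \<ge> 0" "\<forall>u\<in>U. \<forall>hs. length hs = m2 \<longrightarrow> opn c b (B u hs) \<le> CB * pn hs" using MB_bnd0[OF B] by blast
  have LS: "length (selT ms gs) = m1" "length (selF ms gs) = m2" if "length gs = m1 + m2" for gs :: "'b list"
    using len_sel[of gs ms] that ms ms2 by auto
  show ?thesis
  proof (rule MB_intro[where C="CA * CB"])
    fix u and hs :: "'b list" assume u: "u \<in> U" and l: "length hs = m1 + m2"
    have bA: "bop a c (A u (selT ms hs))" using MB_bop[OF A u LS(1)[OF l]] .
    have bB: "bop c b (B u (selF ms hs))" using MB_bop[OF B u LS(2)[OF l]] .
    show "bop a b (\<lambda>x. A u (selT ms hs) (B u (selF ms hs) x))" using bop_comp(1)[OF la lc lb bA bB] .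
    have "opn a b (\<lambda>x. A u (selT ms hs) (B u (selF ms hs) x)) \<le> opn a c (A u (selT ms hs)) * opn c b (B u (selF ms hs))"
      using bop_comp(2)[OF la lc lb bA bB] .
    also have "\<dots> \<le> (CA * pn (selT ms hs)) * (CB * pn (selF ms hs))"
    proof (rule mult_mono)
      show "opn a c (A u (selT ms hs)) \<le> CA * pn (selT ms hs)" using CA(2) u LS(1)[OF l] by blast
      show "opn c b (B u (selF ms hs)) \<le> CB * pn (selF ms hs)" using CB(2) u LS(2)[OF l] by blast
      show "0 \<le> CA * pn (selT ms hs)" by (rule mult_nonneg_nonneg[OF CA(1) pn_nn])
      show "0 \<le> opn c b (B u (selF ms hs))" using opn_nn[OF lc lb bB] .
    qed
    also have "\<dots> = CA * CB * pn hs" using pn_sel[of hs ms] l ms by simp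
    finally show "opn a b (\<lambda>x. A u (selT ms hs) (B u (selF ms hs) x)) \<le> CA * CB * pn hs" .
  next
    fix u and hs :: "'b list" and p c' h h' x assume u: "u \<in> U" and l: "length hs = m1 + m2" and p: "p < m1 + m2" and x: "x \<in> V b"
    have l1: "length hs = length ms" using l ms by simp
    have lu: "length (hs[p := w]) = m1 + m2" for w using l by simp
    show "A u (selT ms (hs[p := c' *\<^sub>R h + h'])) (B u (selF ms (hs[p := c' *\<^sub>R h + h'])) x) =
          c' *\<^sub>R A u (selT ms (hs[p := h])) (B u (selF ms (hs[p := h])) x) + A u (selT ms (hs[p := h'])) (B u (selF ms (hs[p := h'])) x)"
    proof (cases "ms ! p")
      case True
      note U = upd_T[OF l1 _ True] p ms
      have y: "B u (selF ms hs) x \<in> V c" using bop_in[OF MB_bop[OF B u LS(2)[OF l]] x] .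
      have q: "cntT (take p ms) < m1" using U by auto
      show ?thesis using U MB_lin[OF A u LS(1)[OF l] q y] by auto
    next
      case False
      note U = upd_F[OF l1 _ False] p ms
      have q: "cntF (take p ms) < m2" using U ms2 by auto
      have bA: "bop a c (A u (selT ms hs))" using MB_bop[OF A u LS(1)[OF l]] .
      have e: "B u ((selF ms hs)[cntF (take p ms) := c' *\<^sub>R h + h']) x =
        c' *\<^sub>R B u ((selF ms hs)[cntF (take p ms) := h]) x + B u ((selF ms hs)[cntF (take p ms) := h']) x"
        using MB_lin[OF B u LS(2)[OF l] q x] .
      have yy: "B u ((selF ms hs)[cntF (take p ms) := w]) x \<in> V c" for w
        using bop_in[OF MB_bop[OF B u] x] LS(2)[OF l] by simp
      show ?thesis using U e bop_add[OF bA Vscale[OF lc yy] yy] bop_scale[OF bA yy] by auto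
    qed
  qed
qed

definition md :: "real \<Rightarrow> real \<Rightarrow> real \<Rightarrow> real \<Rightarrow> real" where "md d1 d2 a b = a + d1 + (b - a - d1 - d2) / 2"

definition Pf :: "bool list \<Rightarrow> real \<Rightarrow> real \<Rightarrow> (real \<Rightarrow> real \<Rightarrow> 'b \<Rightarrow> 'b list \<Rightarrow> 'x \<Rightarrow> 'x) \<Rightarrow> (real \<Rightarrow> real \<Rightarrow> 'b \<Rightarrow> 'b list \<Rightarrow> 'x \<Rightarrow> 'x)
   \<Rightarrow> real \<Rightarrow> real \<Rightarrow> 'b \<Rightarrow> 'b list \<Rightarrow> 'x \<Rightarrow> 'x" where
  "Pf ms d1 d2 \<Phi> \<Psi> a b u gs x = \<Phi> a (md d1 d2 a b) u (selT ms gs) (\<Psi> (md d1 d2 a b) b u (selF ms gs) x)"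

lemma md_bounds: assumes "a + d1 + d2 < b" shows "a + d1 < md d1 d2 a b" "md d1 d2 a b + d2 < b"
proof -
  have "0 < (b - a - d1 - d2) / 2" using assms by simp
  then show "a + d1 < md d1 d2 a b" "md d1 d2 a b + d2 < b" unfolding md_def by (simp_all add: field_simps)
qed

lemma prod_at1: assumes F1: "Fam \<Phi> m1 d1 g1" and F2: "Fam \<Psi> m2 d2 g2" and g: "0 < g1" "0 < g2"
  and a: "0 < a" and c: "a + d1 < c" "c + d2 < b" and c': "a + d1 < c'" "c' + d2 < b" and cc: "c \<le> c'" and b: "b \<le> r0"
  and u: "u \<in> U" "v \<in> U" and l: "length gs1 = m1" "length gs2 = m2" and x: "x \<in> V b"
  shows "\<Phi> a c u gs1 (\<Psi> c b v gs2 x) = \<Phi> a c' u gs1 (\<Psi> c' b v gs2 x)"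
proof -
  have d: "0 \<le> d1" "0 \<le> d2" using F1 F2 unfolding Fam_def by auto
  have y: "\<Psi> c' b v gs2 x \<in> V c'" using bop_in[OF BO_D[OF fam_BO[OF F2 g(2) _ c'(2) b] u(2) l(2)] x] a c' d by simp
  have "\<Psi> c b v gs2 x = j c c' (\<Psi> c' b v gs2 x)" by (rule fam_coh1[OF F2 g(2) u(2) l(2) _ cc c'(2) b x]) (use a c d in simp)
  moreover have "\<Phi> a c' u gs1 (\<Psi> c' b v gs2 x) = \<Phi> a c u gs1 (j c c' (\<Psi> c' b v gs2 x))"
    by (rule fam_coh2[OF F1 g(1) u(1) l(1) a c(1) cc _ y]) (use b c' d in simp)
  ultimately show ?thesis by simp
qed

lemma prod_at: assumes F1: "Fam \<Phi> m1 d1 g1" and F2: "Fam \<Psi> m2 d2 g2" and g: "0 < g1" "0 < g2"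
  and a: "0 < a" and c: "a + d1 < c" "c + d2 < b" and c': "a + d1 < c'" "c' + d2 < b" and b: "b \<le> r0"
  and u: "u \<in> U" "v \<in> U" and l: "length gs1 = m1" "length gs2 = m2" and x: "x \<in> V b"
  shows "\<Phi> a c u gs1 (\<Psi> c b v gs2 x) = \<Phi> a c' u gs1 (\<Psi> c' b v gs2 x)"
proof (cases "c \<le> c'")
  case True show ?thesis using prod_at1[OF F1 F2 g a c c' True b u l x] .
next
  case False then show ?thesis using prod_at1[OF F1 F2 g a c' c _ b u l x] by simp
qed

lemma pf_at: assumes F1: "Fam \<Phi> m1 d1 g1" and F2: "Fam \<Psi> m2 d2 g2" and g: "0 < g1" "0 < g2"
  and ms: "length ms = m1 + m2" "cntT ms = m1"
  and a: "0 < a" and c: "a + d1 < c" "c + d2 < b" and b: "b \<le> r0"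
  and u: "u \<in> U" and l: "length gs = m1 + m2" and x: "x \<in> V b"
  shows "Pf ms d1 d2 \<Phi> \<Psi> a b u gs x = \<Phi> a c u (selT ms gs) (\<Psi> c b u (selF ms gs) x)"
proof -
  have ms2: "cntF ms = m2" using cnt_sum[of ms] ms by simp
  have LS: "length (selT ms gs) = m1" "length (selF ms gs) = m2" using len_sel[of gs ms] l ms ms2 by auto
  have "a + d1 + d2 < b" using c by simp
  note M = md_bounds[OF this]
  show ?thesis unfolding Pf_def using prod_at[OF F1 F2 g a _ _ c b u u LS x] M by simp
qed

lemma pf_coh: assumes F1: "Fam \<Phi> m1 d1 g1" and F2: "Fam \<Psi> m2 d2 g2" and g: "0 < g1" "0 < g2"
  and ms: "length ms = m1 + m2" "cntT ms = m1"
  shows "Coh (Pf ms d1 d2 \<Phi> \<Psi>) (m1 + m2) (d1 + d2)"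
  unfolding Coh_def
proof (intro ballI allI impI conjI)
  have d: "0 \<le> d1" "0 \<le> d2" using F1 F2 unfolding Fam_def by auto
  have ms2: "cntF ms = m2" using cnt_sum[of ms] ms by simp
  fix u and hs :: "'b list"
  assume u: "u \<in> U" and l: "length hs = m1 + m2"
  have LS: "length (selT ms hs) = m1" "length (selF ms hs) = m2" using len_sel[of hs ms] l ms ms2 by auto
  {
    fix a c b x assume a: "0 < a" and ac: "a \<le> c" and cb: "c + (d1 + d2) < b" and b: "b \<le> r0" and x: "x \<in> V b"
    define m where "m = md d1 d2 c b"
    have M: "c + d1 < m" "m + d2 < b" using md_bounds[of c d1 d2 b] cb unfolding m_def by auto
    have y: "\<Psi> m b u (selF ms hs) x \<in> V m" using bop_in[OF BO_D[OF fam_BO[OF F2 g(2) _ M(2) b] u LS(2)] x] a ac d M by simp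
    have "j a c (Pf ms d1 d2 \<Phi> \<Psi> c b u hs x) = j a c (\<Phi> c m u (selT ms hs) (\<Psi> m b u (selF ms hs) x))"
      unfolding Pf_def m_def ..
    also have "\<dots> = \<Phi> a m u (selT ms hs) (\<Psi> m b u (selF ms hs) x)"
    proof -
      have "m \<le> r0" using M b d by simp
      then show ?thesis using fam_coh1[OF F1 g(1) u LS(1) a ac M(1) _ y] by simp
    qed
    also have "\<dots> = Pf ms d1 d2 \<Phi> \<Psi> a b u hs x"
      by (rule pf_at[OF F1 F2 g ms a _ M(2) b u l x, symmetric]) (use ac M in simp)
    finally show "Pf ms d1 d2 \<Phi> \<Psi> a b u hs x = j a c (Pf ms d1 d2 \<Phi> \<Psi> c b u hs x)" by simp
  }
  {
    fix a c b x assume a: "0 < a" and ac: "a + (d1 + d2) < c" and cb: "c \<le> b" and b: "b \<le> r0" and x: "x \<in> V b"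
    define m where "m = md d1 d2 a c"
    have M: "a + d1 < m" "m + d2 < c" using md_bounds[of a d1 d2 c] ac unfolding m_def by auto
    have jx: "j c b x \<in> V c" using bop_in[OF j_bop x] a ac cb b d by simp
    have "Pf ms d1 d2 \<Phi> \<Psi> a c u hs (j c b x) = \<Phi> a m u (selT ms hs) (\<Psi> m c u (selF ms hs) (j c b x))"
      unfolding Pf_def m_def ..
    also have "\<dots> = \<Phi> a m u (selT ms hs) (\<Psi> m b u (selF ms hs) x)"
      using fam_coh2[OF F2 g(2) u LS(2) _ M(2) cb b x] a M d by simp
    also have "\<dots> = Pf ms d1 d2 \<Phi> \<Psi> a b u hs x"
      by (rule pf_at[OF F1 F2 g ms a M(1) _ b u l x, symmetric]) (use cb M in simp)
    finally show "Pf ms d1 d2 \<Phi> \<Psi> a b u hs x = Pf ms d1 d2 \<Phi> \<Psi> a c u hs (j c b x)" by simp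
  }
qed

end

context sc begin

lemma opn_comp_le: assumes la: "lev a" and lc: "lev c" and lb: "lev b" and S: "bop a c S" and T: "bop c b T"
  and X: "opn a c S \<le> X" and Y: "opn c b T \<le> Y" shows "opn a b (\<lambda>x. S (T x)) \<le> X * Y"
proof -
  have "opn a b (\<lambda>x. S (T x)) \<le> opn a c S * opn c b T" using bop_comp(2)[OF la lc lb S T] .
  also have "\<dots> \<le> X * Y" by (rule mult_mono[OF X Y]) (use opn_nn[OF la lc S] opn_nn[OF lc lb T] X in auto)
  finally show ?thesis .
qed

lemma opn_two: assumes la: "lev a" and lc: "lev c" and ld: "lev d" and lb: "lev b"
  and S1: "bop a c S1" and T1: "bop c b T1" and S2: "bop a d S2" and T2: "bop d b T2"
  and X1: "opn a c S1 \<le> X1" and Y1: "opn c b T1 \<le> Y1" and X2: "opn a d S2 \<le> X2" and Y2: "opn d b T2 \<le> Y2"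
  and E: "\<And>x. x \<in> V b \<Longrightarrow> P x = S1 (T1 x) + S2 (T2 x)"
  shows "opn a b P \<le> X1 * Y1 + X2 * Y2"
proof -
  have "opn a b P = opn a b (\<lambda>x. S1 (T1 x) + S2 (T2 x))" by (rule opn_cong) (rule E)
  also have "\<dots> \<le> opn a b (\<lambda>x. S1 (T1 x)) + opn a b (\<lambda>x. S2 (T2 x))"
    by (rule bop_plus(2)[OF la lb bop_comp(1)[OF la lc lb S1 T1] bop_comp(1)[OF la ld lb S2 T2]])
  also have "\<dots> \<le> X1 * Y1 + X2 * Y2"
    using opn_comp_le[OF la lc lb S1 T1 X1 Y1] opn_comp_le[OF la ld lb S2 T2 X2 Y2] by simp
  finally show ?thesis .
qed

lemma opn_three: assumes la: "lev a" and lc: "lev c" and ld: "lev d" and le: "lev e" and lb: "lev b"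
  and S1: "bop a c S1" and T1: "bop c b T1" and S2: "bop a d S2" and T2: "bop d b T2" and S3: "bop a e S3" and T3: "bop e b T3"
  and X1: "opn a c S1 \<le> X1" and Y1: "opn c b T1 \<le> Y1" and X2: "opn a d S2 \<le> X2" and Y2: "opn d b T2 \<le> Y2"
  and X3: "opn a e S3 \<le> X3" and Y3: "opn e b T3 \<le> Y3"
  and E: "\<And>x. x \<in> V b \<Longrightarrow> P x = S1 (T1 x) + S2 (T2 x) + S3 (T3 x)"
  shows "opn a b P \<le> X1 * Y1 + X2 * Y2 + X3 * Y3"
proof -
  have b1: "bop a b (\<lambda>x. S1 (T1 x))" "bop a b (\<lambda>x. S2 (T2 x))" "bop a b (\<lambda>x. S3 (T3 x))"
    using bop_comp(1)[OF la lc lb S1 T1] bop_comp(1)[OF la ld lb S2 T2] bop_comp(1)[OF la le lb S3 T3] by auto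
  have "opn a b P = opn a b (\<lambda>x. (S1 (T1 x) + S2 (T2 x)) + S3 (T3 x))" by (rule opn_cong) (rule E)
  also have "\<dots> \<le> opn a b (\<lambda>x. S1 (T1 x) + S2 (T2 x)) + opn a b (\<lambda>x. S3 (T3 x))"
    by (rule bop_plus(2)[OF la lb bop_plus(1)[OF la lb b1(1) b1(2)] b1(3)])
  also have "\<dots> \<le> (opn a b (\<lambda>x. S1 (T1 x)) + opn a b (\<lambda>x. S2 (T2 x))) + opn a b (\<lambda>x. S3 (T3 x))"
    using bop_plus(2)[OF la lb b1(1) b1(2)] by simp
  also have "\<dots> \<le> X1 * Y1 + X2 * Y2 + X3 * Y3"
    using opn_comp_le[OF la lc lb S1 T1 X1 Y1] opn_comp_le[OF la ld lb S2 T2 X2 Y2] opn_comp_le[OF la le lb S3 T3 X3 Y3] by simp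
  finally show ?thesis .
qed

lemma pf_eq: "Pf ms d1 d2 \<Phi> \<Psi> a b = (\<lambda>u gs x. \<Phi> a (md d1 d2 a b) u (selT ms gs) (\<Psi> (md d1 d2 a b) b u (selF ms gs) x))"
  by (intro ext) (simp add: Pf_def)

lemma lenS: assumes ms: "length ms = m1 + m2" "cntT ms = m1" and l: "length gs = m1 + m2"
  shows "length (selT ms gs) = m1" "length (selF ms gs) = m2"
proof -
  have ms2: "cntF ms = m2" using cnt_sum[of ms] ms by simp
  show "length (selT ms gs) = m1" "length (selF ms gs) = m2" using len_sel[of gs ms] l ms ms2 by auto
qed

lemma pf_MB: assumes F1: "Fam \<Phi> m1 d1 g1" and F2: "Fam \<Psi> m2 d2 g2" and g: "0 < g1" "0 < g2"
  and ms: "length ms = m1 + m2" "cntT ms = m1" and a: "0 < a" "a + d1 + d2 < b" "b \<le> r0"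
  shows "MB a b (m1 + m2) (Pf ms d1 d2 \<Phi> \<Psi> a b)"
proof -
  have d: "0 \<le> d1" "0 \<le> d2" using F1 F2 unfolding Fam_def by auto
  define c where "c = md d1 d2 a b"
  have M: "a + d1 < c" "c + d2 < b" using md_bounds[OF a(2)] unfolding c_def by auto
  have la: "lev a" and lc: "lev c" and lb: "lev b" using a M d by auto
  show ?thesis unfolding pf_eq c_def[symmetric]
    by (rule MB_prod[OF la lc lb fam_MB[OF F1 g(1) a(1) M(1)] fam_MB[OF F2 g(2) _ M(2) a(3)] ms]) (use lc lb in auto)
qed

lemma Cont_prod: assumes la: "lev a" and lc: "lev c" and lb: "lev b" and A: "MB a c m1 A" and B: "MB c b m2 B"
  and CA: "Cont a c m1 A" and CB: "Cont c b m2 B"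
  and ms: "length ms = m1 + m2" "cntT ms = m1"
  shows "Cont a b (m1 + m2) (\<lambda>u gs x. A u (selT ms gs) (B u (selF ms gs) x))"
  unfolding Cont_def
proof (intro ballI allI impI)
  fix u e assume u: "u \<in> U" and e: "(0::real) < e"
  obtain KA where KA: "KA \<ge> 0" "\<forall>u\<in>U. \<forall>hs. length hs = m1 \<longrightarrow> opn a c (A u hs) \<le> KA * pn hs" using MB_bnd0[OF A] by blast
  obtain KB where KB: "KB \<ge> 0" "\<forall>u\<in>U. \<forall>hs. length hs = m2 \<longrightarrow> opn c b (B u hs) \<le> KB * pn hs" using MB_bnd0[OF B] by blast
  define e1 where "e1 = e / (2 * (KB + 1))"
  define e2 where "e2 = e / (2 * (KA + 1))"
  have e1: "e1 > 0" and e2: "e2 > 0" unfolding e1_def e2_def using e KA KB by auto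
  obtain d1 where d1: "d1 > 0" "\<forall>v\<in>U. norm (v - u) < d1 \<longrightarrow>
      (\<forall>hs. length hs = m1 \<longrightarrow> opn a c (\<lambda>x. A v hs x - A u hs x) \<le> e1 * pn hs)"
    using CA u e1 unfolding Cont_def by blast
  obtain d2 where d2: "d2 > 0" "\<forall>v\<in>U. norm (v - u) < d2 \<longrightarrow>
      (\<forall>hs. length hs = m2 \<longrightarrow> opn c b (\<lambda>x. B v hs x - B u hs x) \<le> e2 * pn hs)"
    using CB u e2 unfolding Cont_def by blast
  show "\<exists>d>0. \<forall>v\<in>U. norm (v - u) < d \<longrightarrow> (\<forall>hs. length hs = m1 + m2 \<longrightarrow>
     opn a b (\<lambda>x. A v (selT ms hs) (B v (selF ms hs) x) - A u (selT ms hs) (B u (selF ms hs) x)) \<le> e * pn hs)"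
  proof (intro exI[of _ "min d1 d2"] conjI ballI impI allI)
    fix v and hs :: "'b list" assume v: "v \<in> U" and nv: "norm (v - u) < min d1 d2" and l: "length hs = m1 + m2"
    note L = lenS[OF ms l]
    have bAv: "bop a c (A v (selT ms hs))" and bAu: "bop a c (A u (selT ms hs))" using MB_bop[OF A _ L(1)] u v by auto
    have bBv: "bop c b (B v (selF ms hs))" and bBu: "bop c b (B u (selF ms hs))" using MB_bop[OF B _ L(2)] u v by auto
    have S1: "bop a c (\<lambda>y. A v (selT ms hs) y - A u (selT ms hs) y)" by (rule bop_minus(1)[OF la lc bAv bAu])
    have T2: "bop c b (\<lambda>y. B v (selF ms hs) y - B u (selF ms hs) y)" by (rule bop_minus(1)[OF lc lb bBv bBu])
    have "opn a b (\<lambda>x. A v (selT ms hs) (B v (selF ms hs) x) - A u (selT ms hs) (B u (selF ms hs) x))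
      \<le> (e1 * pn (selT ms hs)) * (KB * pn (selF ms hs)) + (KA * pn (selT ms hs)) * (e2 * pn (selF ms hs))"
    proof (rule opn_two[OF la lc lc lb S1 bBv bAu T2])
      show "opn a c (\<lambda>y. A v (selT ms hs) y - A u (selT ms hs) y) \<le> e1 * pn (selT ms hs)" using d1(2) v nv L by simp
      show "opn c b (B v (selF ms hs)) \<le> KB * pn (selF ms hs)" using KB(2) v L by simp
      show "opn a c (A u (selT ms hs)) \<le> KA * pn (selT ms hs)" using KA(2) u L by simp
      show "opn c b (\<lambda>y. B v (selF ms hs) y - B u (selF ms hs) y) \<le> e2 * pn (selF ms hs)" using d2(2) v nv L by simp
    next
      fix x assume x: "x \<in> V b"
      have y: "B v (selF ms hs) x \<in> V c" "B u (selF ms hs) x \<in> V c" using bop_in[OF bBv x] bop_in[OF bBu x] by auto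
      show "A v (selT ms hs) (B v (selF ms hs) x) - A u (selT ms hs) (B u (selF ms hs) x) =
        (A v (selT ms hs) (B v (selF ms hs) x) - A u (selT ms hs) (B v (selF ms hs) x)) + A u (selT ms hs) (B v (selF ms hs) x - B u (selF ms hs) x)"
        using bop_diff[OF lc bAu y] by simp
    qed
    also have "\<dots> = (e1 * KB + KA * e2) * pn hs" using pn_sel[of hs ms] l ms by (simp add: algebra_simps)
    also have "\<dots> \<le> e * pn hs"
    proof (rule mult_right_mono[OF _ pn_nn])
      have "e1 * KB \<le> e / 2" unfolding e1_def using KB e by (simp add: field_simps)
      moreover have "KA * e2 \<le> e / 2" unfolding e2_def using KA e by (simp add: field_simps)
      ultimately show "e1 * KB + KA * e2 \<le> e" by simp
    qed
    finally show "opn a b (\<lambda>x. A v (selT ms hs) (B v (selF ms hs) x) - A u (selT ms hs) (B u (selF ms hs) x)) \<le> e * pn hs" .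
  qed (use d1 d2 in simp)
qed

lemma pf_cont: assumes F1: "Fam \<Phi> m1 d1 g1" and F2: "Fam \<Psi> m2 d2 g2" and g: "0 < g1" "0 < g2"
  and ms: "length ms = m1 + m2" "cntT ms = m1" and a: "0 < a" "a + d1 + d2 < b" "b \<le> r0"
  shows "Cont a b (m1 + m2) (Pf ms d1 d2 \<Phi> \<Psi> a b)"
proof -
  have d: "0 \<le> d1" "0 \<le> d2" using F1 F2 unfolding Fam_def by auto
  define c where "c = md d1 d2 a b"
  have M: "a + d1 < c" "c + d2 < b" using md_bounds[OF a(2)] unfolding c_def by auto
  have la: "lev a" and lc: "lev c" and lb: "lev b" using a M d by auto
  have cr: "c \<le> r0" "0 < c" using lc by auto
  show ?thesis unfolding pf_eq c_def[symmetric]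
    by (rule Cont_prod[OF la lc lb fam_MB[OF F1 g(1) a(1) M(1) cr(1)] fam_MB[OF F2 g(2) cr(2) M(2) a(3)]
          fam_cont[OF F1 g(1) a(1) M(1) cr(1)] fam_cont[OF F2 g(2) cr(2) M(2) a(3)] ms])
qed

lemma pf_hol: assumes F1: "Fam \<Phi> m1 d1 g1" and F2: "Fam \<Psi> m2 d2 g2"
  and ms: "length ms = m1 + m2" "cntT ms = m1" and al: "0 < \<alpha>" "\<alpha> \<le> 1" "\<alpha> < g1" "\<alpha> < g2"
  and a: "0 < a" "\<alpha> < b - a - d1 - d2" "b \<le> r0"
  shows "Hol a b (m1 + m2) \<alpha> (Pf ms d1 d2 \<Phi> \<Psi> a b)"
proof -
  have d: "0 \<le> d1" "0 \<le> d2" using F1 F2 unfolding Fam_def by auto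
  have g: "0 < g1" "0 < g2" using al by auto
  define s where "s = (b - a - d1 - d2 - \<alpha>) / 2"
  have sp: "0 < s" unfolding s_def using a by simp
  define c1 where "c1 = b - d2 - s"
  define c2 where "c2 = a + d1 + s"
  have s2: "2 * s = b - a - d1 - d2 - \<alpha>" unfolding s_def by simp
  have c1: "a + d1 < c1" "c1 + d2 < b" "\<alpha> < c1 - a - d1" unfolding c1_def using s2 sp a al by linarith+
  have c2: "a + d1 < c2" "c2 + d2 < b" "\<alpha> < b - c2 - d2" unfolding c2_def using s2 sp a al by linarith+
  have la: "lev a" and lc1: "lev c1" and lc2: "lev c2" and lb: "lev b" using a c1 c2 d al by auto
  have H1: "Hol a c1 m1 \<alpha> (\<Phi> a c1)" by (rule fam_hol[OF F1 al(1,2,3) a(1)]) (use c1 lc1 in auto)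
  have H2: "Hol c2 b m2 \<alpha> (\<Psi> c2 b)" by (rule fam_hol[OF F2 al(1,2,4) _ c2(3) a(3)]) (use lc2 in auto)
  have MA: "MB a c1 m1 (\<Phi> a c1)" "MB a c2 m1 (\<Phi> a c2)" using fam_MB[OF F1 g(1) a(1)] c1 c2 lc1 lc2 by auto
  have MB': "MB c1 b m2 (\<Psi> c1 b)" "MB c2 b m2 (\<Psi> c2 b)" using fam_MB[OF F2 g(2) _ _ a(3)] c1 c2 lc1 lc2 by auto
  obtain KA where KA: "KA \<ge> 0" "\<forall>u\<in>U. \<forall>hs. length hs = m1 \<longrightarrow> opn a c2 (\<Phi> a c2 u hs) \<le> KA * pn hs" using MB_bnd0[OF MA(2)] by blast
  obtain KB where KB: "KB \<ge> 0" "\<forall>u\<in>U. \<forall>hs. length hs = m2 \<longrightarrow> opn c1 b (\<Psi> c1 b u hs) \<le> KB * pn hs" using MB_bnd0[OF MB'(1)] by blast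
  obtain C1 where C1: "\<forall>u\<in>U. \<forall>v\<in>U. \<forall>hs. length hs = m1 \<longrightarrow>
      opn a c1 (\<lambda>x. \<Phi> a c1 u hs x - \<Phi> a c1 v hs x) \<le> C1 * norm (u - v) powr \<alpha> * pn hs" using H1 unfolding Hol_def by blast
  obtain C2 where C2: "\<forall>u\<in>U. \<forall>v\<in>U. \<forall>hs. length hs = m2 \<longrightarrow>
      opn c2 b (\<lambda>x. \<Psi> c2 b u hs x - \<Psi> c2 b v hs x) \<le> C2 * norm (u - v) powr \<alpha> * pn hs" using H2 unfolding Hol_def by blast
  show ?thesis unfolding Hol_def
  proof (intro exI[of _ "C1 * KB + KA * C2"] ballI allI impI)
    fix u v and hs :: "'b list" assume u: "u \<in> U" and v: "v \<in> U" and l: "length hs = m1 + m2"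
    note L = lenS[OF ms l]
    define g1' where "g1' = selT ms hs"
    define g2' where "g2' = selF ms hs"
    have L': "length g1' = m1" "length g2' = m2" using L unfolding g1'_def g2'_def by auto
    have S1: "bop a c1 (\<lambda>y. \<Phi> a c1 u g1' y - \<Phi> a c1 v g1' y)"
      by (rule bop_minus(1)[OF la lc1 MB_bop[OF MA(1) u L'(1)] MB_bop[OF MA(1) v L'(1)]])
    have T1: "bop c1 b (\<Psi> c1 b u g2')" using MB_bop[OF MB'(1) u L'(2)] .
    have S2: "bop a c2 (\<Phi> a c2 v g1')" using MB_bop[OF MA(2) v L'(1)] .
    have bB2: "bop c2 b (\<Psi> c2 b u g2')" "bop c2 b (\<Psi> c2 b v g2')" using MB_bop[OF MB'(2) _ L'(2)] u v by auto
    have T2: "bop c2 b (\<lambda>x. \<Psi> c2 b u g2' x - \<Psi> c2 b v g2' x)" by (rule bop_minus(1)[OF lc2 lb bB2])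
    have "opn a b (\<lambda>x. Pf ms d1 d2 \<Phi> \<Psi> a b u hs x - Pf ms d1 d2 \<Phi> \<Psi> a b v hs x)
       \<le> (C1 * norm (u - v) powr \<alpha> * pn g1') * (KB * pn g2') + (KA * pn g1') * (C2 * norm (u - v) powr \<alpha> * pn g2')"
    proof (rule opn_two[OF la lc1 lc2 lb S1 T1 S2 T2])
      show "opn a c1 (\<lambda>y. \<Phi> a c1 u g1' y - \<Phi> a c1 v g1' y) \<le> C1 * norm (u - v) powr \<alpha> * pn g1'" using C1 u v L' by simp
      show "opn c1 b (\<Psi> c1 b u g2') \<le> KB * pn g2'" using KB(2) u L' by simp
      show "opn a c2 (\<Phi> a c2 v g1') \<le> KA * pn g1'" using KA(2) v L' by simp
      show "opn c2 b (\<lambda>x. \<Psi> c2 b u g2' x - \<Psi> c2 b v g2' x) \<le> C2 * norm (u - v) powr \<alpha> * pn g2'" using C2 u v L' by simp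
    next
      fix x assume x: "x \<in> V b"
      have e1: "Pf ms d1 d2 \<Phi> \<Psi> a b u hs x = \<Phi> a c1 u g1' (\<Psi> c1 b u g2' x)"
        unfolding g1'_def g2'_def by (rule pf_at[OF F1 F2 g ms a(1) c1(1,2) a(3) u l x])
      have e2: "Pf ms d1 d2 \<Phi> \<Psi> a b v hs x = \<Phi> a c2 v g1' (\<Psi> c2 b v g2' x)"
        unfolding g1'_def g2'_def by (rule pf_at[OF F1 F2 g ms a(1) c2(1,2) a(3) v l x])
      have e3: "\<Phi> a c1 v g1' (\<Psi> c1 b u g2' x) = \<Phi> a c2 v g1' (\<Psi> c2 b u g2' x)"
        by (rule prod_at[OF F1 F2 g a(1) c1(1,2) c2(1,2) a(3) v u L' x])
      have y: "\<Psi> c2 b u g2' x \<in> V c2" "\<Psi> c2 b v g2' x \<in> V c2" using bop_in[OF bB2(1) x] bop_in[OF bB2(2) x] by auto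
      show "Pf ms d1 d2 \<Phi> \<Psi> a b u hs x - Pf ms d1 d2 \<Phi> \<Psi> a b v hs x =
        (\<Phi> a c1 u g1' (\<Psi> c1 b u g2' x) - \<Phi> a c1 v g1' (\<Psi> c1 b u g2' x)) + \<Phi> a c2 v g1' (\<Psi> c2 b u g2' x - \<Psi> c2 b v g2' x)"
        unfolding e1 e2 using e3 bop_diff[OF lc2 S2 y] by simp
    qed
    also have "\<dots> = (C1 * KB + KA * C2) * norm (u - v) powr \<alpha> * pn hs"
      using pn_sel[of hs ms] l ms unfolding g1'_def g2'_def by (simp add: algebra_simps)
    finally show "opn a b (\<lambda>x. Pf ms d1 d2 \<Phi> \<Psi> a b u hs x - Pf ms d1 d2 \<Phi> \<Psi> a b v hs x)
       \<le> (C1 * KB + KA * C2) * norm (u - v) powr \<alpha> * pn hs" .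
  qed
qed

lemma pf_der: assumes F1: "Fam \<Phi> m1 d1 g1" and F2: "Fam \<Psi> m2 d2 g2"
  and ms: "length ms = m1 + m2" "cntT ms = m1" and g: "1 < g1" "1 < g2"
  and a: "0 < a" "1 < b - a - d1 - d2" "b \<le> r0"
  shows "Der a b (m1 + m2) (Pf ms d1 d2 \<Phi> \<Psi> a b)
    (\<lambda>u gs x. Pf (True # ms) (d1 + 1) d2 (DF \<Phi> m1) \<Psi> a b u gs x + Pf (False # ms) d1 (d2 + 1) \<Phi> (DF \<Psi> m2) a b u gs x)"
  unfolding Der_def
proof (intro ballI allI impI)
  have d: "0 \<le> d1" "0 \<le> d2" using F1 F2 unfolding Fam_def by auto
  have g0: "0 < g1" "0 < g2" "0 < g1 - 1" "0 < g2 - 1" using g by auto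
  have FD1: "Fam (DF \<Phi> m1) (Suc m1) (d1 + 1) (g1 - 1)" by (rule fam_DF[OF F1 g(1)])
  have FD2: "Fam (DF \<Psi> m2) (Suc m2) (d2 + 1) (g2 - 1)" by (rule fam_DF[OF F2 g(2)])
  have ms1: "length (True # ms) = Suc m1 + m2" "cntT (True # ms) = Suc m1" using ms by auto
  have ms2: "length (False # ms) = m1 + Suc m2" "cntT (False # ms) = m1" using ms by auto
  define s where "s = (b - a - d1 - d2 - 1) / 2"
  have sp: "0 < s" unfolding s_def using a by simp
  have s2: "2 * s = b - a - d1 - d2 - 1" unfolding s_def by simp
  define c where "c = b - d2 - s"
  define c3 where "c3 = a + d1 + s"
  have c: "a + (d1 + 1) < c" "c + d2 < b" "a + d1 + 1 < c" "a + d1 < c" unfolding c_def using s2 sp a by linarith+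
  have c3: "a + d1 < c3" "c3 + (d2 + 1) < b" "c3 + d2 + 1 < b" "c3 + d2 < b" unfolding c3_def using s2 sp a by linarith+
  have la: "lev a" and lc: "lev c" and lc3: "lev c3" and lb: "lev b" using a c c3 d by auto
  have cr: "c \<le> r0" "0 < c" "c3 \<le> r0" "0 < c3" using lc lc3 by auto
  have DP: "Der a c m1 (\<Phi> a c) (DF \<Phi> m1 a c)" "MB a c (Suc m1) (DF \<Phi> m1 a c)"
    using fam_der_ex[OF F1 g(1) a(1) c(3) cr(1)] by auto
  have MP: "MB c b m2 (\<Psi> c b)" and CP: "Cont c b m2 (\<Psi> c b)"
    using fam_MB[OF F2 g0(2) cr(2) c(2) a(3)] fam_cont[OF F2 g0(2) cr(2) c(2) a(3)] by auto
  have BPh: "MB a c m1 (\<Phi> a c)" using fam_MB[OF F1 g0(1) a(1) c(4) cr(1)] .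
  have MP3: "MB a c3 m1 (\<Phi> a c3)" using fam_MB[OF F1 g0(1) a(1) c3(1) cr(3)] .
  have DQ: "Der c3 b m2 (\<Psi> c3 b) (DF \<Psi> m2 c3 b)" "MB c3 b (Suc m2) (DF \<Psi> m2 c3 b)"
    using fam_der_ex[OF F2 g(2) cr(4) c3(3) a(3)] by auto
  have MQ3: "MB c3 b m2 (\<Psi> c3 b)" using fam_MB[OF F2 g0(2) cr(4) c3(4) a(3)] .
  obtain K1 where K1: "K1 \<ge> 0" "\<forall>u\<in>U. \<forall>hs. length hs = Suc m1 \<longrightarrow> opn a c (DF \<Phi> m1 a c u hs) \<le> K1 * pn hs"
    using MB_bnd0[OF DP(2)] by blast
  obtain K2 where K2: "K2 \<ge> 0" "\<forall>u\<in>U. \<forall>hs. length hs = m2 \<longrightarrow> opn c b (\<Psi> c b u hs) \<le> K2 * pn hs"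
    using MB_bnd0[OF MP] by blast
  obtain K3 where K3: "K3 \<ge> 0" "\<forall>u\<in>U. \<forall>hs. length hs = m1 \<longrightarrow> opn a c3 (\<Phi> a c3 u hs) \<le> K3 * pn hs"
    using MB_bnd0[OF MP3] by blast
  fix u e assume u: "u \<in> U" and e: "(0::real) < e"
  define e1 where "e1 = e / (3 * (K2 + 1))"
  define e2 where "e2 = e / (3 * (K1 + 1))"
  define e3 where "e3 = e / (3 * (K3 + 1))"
  have ep: "e1 > 0" "e2 > 0" "e3 > 0" unfolding e1_def e2_def e3_def using e K1 K2 K3 by auto
  obtain r1 where r1: "r1 > 0" "\<forall>h. norm h < r1 \<and> u + h \<in> U \<longrightarrow>
      (\<forall>hs. length hs = m1 \<longrightarrow> opn a c (\<lambda>x. \<Phi> a c (u + h) hs x - \<Phi> a c u hs x - DF \<Phi> m1 a c u (h # hs) x) \<le> e1 * norm h * pn hs)"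
    using DP(1) u ep(1) unfolding Der_def by blast
  obtain r2 where r2: "r2 > 0" "\<forall>v\<in>U. norm (v - u) < r2 \<longrightarrow>
      (\<forall>hs. length hs = m2 \<longrightarrow> opn c b (\<lambda>x. \<Psi> c b v hs x - \<Psi> c b u hs x) \<le> e2 * pn hs)"
    using CP u ep(2) unfolding Cont_def by blast
  obtain r3 where r3: "r3 > 0" "\<forall>h. norm h < r3 \<and> u + h \<in> U \<longrightarrow>
      (\<forall>hs. length hs = m2 \<longrightarrow> opn c3 b (\<lambda>x. \<Psi> c3 b (u + h) hs x - \<Psi> c3 b u hs x - DF \<Psi> m2 c3 b u (h # hs) x) \<le> e3 * norm h * pn hs)"
    using DQ(1) u ep(3) unfolding Der_def by blast
  show "\<exists>d>0. \<forall>h. norm h < d \<and> u + h \<in> U \<longrightarrow> (\<forall>hs. length hs = m1 + m2 \<longrightarrow>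
     opn a b (\<lambda>x. Pf ms d1 d2 \<Phi> \<Psi> a b (u + h) hs x - Pf ms d1 d2 \<Phi> \<Psi> a b u hs x -
        (Pf (True # ms) (d1 + 1) d2 (DF \<Phi> m1) \<Psi> a b u (h # hs) x + Pf (False # ms) d1 (d2 + 1) \<Phi> (DF \<Psi> m2) a b u (h # hs) x))
     \<le> e * norm h * pn hs)"
  proof (intro exI[of _ "min r1 (min r2 r3)"] conjI allI impI)
    fix h and hs :: "'b list" assume h: "norm h < min r1 (min r2 r3) \<and> u + h \<in> U" and l: "length hs = m1 + m2"
    have hU: "u + h \<in> U" using h by simp
    note L = lenS[OF ms l]
    define g1' where "g1' = selT ms hs"
    define g2' where "g2' = selF ms hs"
    have L': "length g1' = m1" "length g2' = m2" "length (h # g1') = Suc m1" "length (h # g2') = Suc m2"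
      using L unfolding g1'_def g2'_def by auto
    have lh: "length (h # hs) = Suc m1 + m2" "length (h # hs) = m1 + Suc m2" using l by auto
    have bPh: "bop a c (\<Phi> a c (u + h) g1')" "bop a c (\<Phi> a c u g1')" using MB_bop[OF BPh _ L'(1)] u hU by auto
    have bD1: "bop a c (DF \<Phi> m1 a c u (h # g1'))" using MB_bop[OF DP(2) u L'(3)] .
    have S1: "bop a c (\<lambda>y. \<Phi> a c (u + h) g1' y - \<Phi> a c u g1' y - DF \<Phi> m1 a c u (h # g1') y)"
      by (rule bop_D3[OF la lc bPh bD1])
    have T1: "bop c b (\<Psi> c b (u + h) g2')" using MB_bop[OF MP hU L'(2)] .
    have bPs: "bop c b (\<Psi> c b u g2')" using MB_bop[OF MP u L'(2)] .
    have T2: "bop c b (\<lambda>x. \<Psi> c b (u + h) g2' x - \<Psi> c b u g2' x)" by (rule bop_minus(1)[OF lc lb T1 bPs])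
    have S3: "bop a c3 (\<Phi> a c3 u g1')" using MB_bop[OF MP3 u L'(1)] .
    have bQ: "bop c3 b (\<Psi> c3 b (u + h) g2')" "bop c3 b (\<Psi> c3 b u g2')" using MB_bop[OF MQ3 _ L'(2)] u hU by auto
    have bD2: "bop c3 b (DF \<Psi> m2 c3 b u (h # g2'))" using MB_bop[OF DQ(2) u L'(4)] .
    have T3: "bop c3 b (\<lambda>x. \<Psi> c3 b (u + h) g2' x - \<Psi> c3 b u g2' x - DF \<Psi> m2 c3 b u (h # g2') x)"
      by (rule bop_D3[OF lc3 lb bQ bD2])
    have "opn a b (\<lambda>x. Pf ms d1 d2 \<Phi> \<Psi> a b (u + h) hs x - Pf ms d1 d2 \<Phi> \<Psi> a b u hs x -
        (Pf (True # ms) (d1 + 1) d2 (DF \<Phi> m1) \<Psi> a b u (h # hs) x + Pf (False # ms) d1 (d2 + 1) \<Phi> (DF \<Psi> m2) a b u (h # hs) x))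
      \<le> (e1 * norm h * pn g1') * (K2 * pn g2') + (K1 * pn (h # g1')) * (e2 * pn g2') + (K3 * pn g1') * (e3 * norm h * pn g2')"
    proof (rule opn_three[OF la lc lc lc3 lb S1 T1 bD1 T2 S3 T3])
      show "opn a c (\<lambda>y. \<Phi> a c (u + h) g1' y - \<Phi> a c u g1' y - DF \<Phi> m1 a c u (h # g1') y) \<le> e1 * norm h * pn g1'"
        using r1(2) h L' by simp
      show "opn c b (\<Psi> c b (u + h) g2') \<le> K2 * pn g2'" using K2(2) hU L' by simp
      show "opn a c (DF \<Phi> m1 a c u (h # g1')) \<le> K1 * pn (h # g1')" using K1(2) u L'(3) by blast
      show "opn c b (\<lambda>x. \<Psi> c b (u + h) g2' x - \<Psi> c b u g2' x) \<le> e2 * pn g2'" using r2(2) hU h L' by simp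
      show "opn a c3 (\<Phi> a c3 u g1') \<le> K3 * pn g1'" using K3(2) u L' by simp
      show "opn c3 b (\<lambda>x. \<Psi> c3 b (u + h) g2' x - \<Psi> c3 b u g2' x - DF \<Psi> m2 c3 b u (h # g2') x) \<le> e3 * norm h * pn g2'"
        using r3(2) h L' by simp
    next
      fix x assume x: "x \<in> V b"
      have E1: "Pf ms d1 d2 \<Phi> \<Psi> a b (u + h) hs x = \<Phi> a c (u + h) g1' (\<Psi> c b (u + h) g2' x)"
        unfolding g1'_def g2'_def by (rule pf_at[OF F1 F2 g0(1,2) ms a(1) c(4) c(2) a(3) hU l x])
      have E2: "Pf ms d1 d2 \<Phi> \<Psi> a b u hs x = \<Phi> a c3 u g1' (\<Psi> c3 b u g2' x)"
        unfolding g1'_def g2'_def by (rule pf_at[OF F1 F2 g0(1,2) ms a(1) c3(1) c3(4) a(3) u l x])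
      have E3: "Pf (True # ms) (d1 + 1) d2 (DF \<Phi> m1) \<Psi> a b u (h # hs) x = DF \<Phi> m1 a c u (h # g1') (\<Psi> c b u g2' x)"
        using pf_at[OF FD1 F2 g0(3) g0(2) ms1 a(1) c(1) c(2) a(3) u lh(1) x] unfolding g1'_def g2'_def by simp
      have E4: "Pf (False # ms) d1 (d2 + 1) \<Phi> (DF \<Psi> m2) a b u (h # hs) x = \<Phi> a c3 u g1' (DF \<Psi> m2 c3 b u (h # g2') x)"
        using pf_at[OF F1 FD2 g0(1) g0(4) ms2 a(1) c3(1) c3(2) a(3) u lh(2) x] unfolding g1'_def g2'_def by simp
      have E5: "\<Phi> a c u g1' (\<Psi> c b (u + h) g2' x) = \<Phi> a c3 u g1' (\<Psi> c3 b (u + h) g2' x)"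
        by (rule prod_at[OF F1 F2 g0(1,2) a(1) c(4) c(2) c3(1) c3(4) a(3) u hU L'(1,2) x])
      have y: "\<Psi> c b (u + h) g2' x \<in> V c" "\<Psi> c b u g2' x \<in> V c" using bop_in[OF T1 x] bop_in[OF bPs x] by auto
      have y3: "\<Psi> c3 b (u + h) g2' x \<in> V c3" "\<Psi> c3 b u g2' x \<in> V c3" "DF \<Psi> m2 c3 b u (h # g2') x \<in> V c3"
        using bop_in[OF bQ(1) x] bop_in[OF bQ(2) x] bop_in[OF bD2 x] by auto
      have A2: "DF \<Phi> m1 a c u (h # g1') (\<Psi> c b (u + h) g2' x - \<Psi> c b u g2' x) =
         DF \<Phi> m1 a c u (h # g1') (\<Psi> c b (u + h) g2' x) - DF \<Phi> m1 a c u (h # g1') (\<Psi> c b u g2' x)"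
        by (rule bop_diff[OF lc bD1 y])
      have A3: "\<Phi> a c3 u g1' (\<Psi> c3 b (u + h) g2' x - \<Psi> c3 b u g2' x - DF \<Psi> m2 c3 b u (h # g2') x) =
         \<Phi> a c3 u g1' (\<Psi> c3 b (u + h) g2' x) - \<Phi> a c3 u g1' (\<Psi> c3 b u g2' x) - \<Phi> a c3 u g1' (DF \<Psi> m2 c3 b u (h # g2') x)"
        using bop_diff[OF lc3 S3 Vdiff[OF lc3 y3(1) y3(2)] y3(3)] bop_diff[OF lc3 S3 y3(1) y3(2)] by simp
      show "Pf ms d1 d2 \<Phi> \<Psi> a b (u + h) hs x - Pf ms d1 d2 \<Phi> \<Psi> a b u hs x -
        (Pf (True # ms) (d1 + 1) d2 (DF \<Phi> m1) \<Psi> a b u (h # hs) x + Pf (False # ms) d1 (d2 + 1) \<Phi> (DF \<Psi> m2) a b u (h # hs) x) =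
        (\<Phi> a c (u + h) g1' (\<Psi> c b (u + h) g2' x) - \<Phi> a c u g1' (\<Psi> c b (u + h) g2' x) - DF \<Phi> m1 a c u (h # g1') (\<Psi> c b (u + h) g2' x)) +
        DF \<Phi> m1 a c u (h # g1') (\<Psi> c b (u + h) g2' x - \<Psi> c b u g2' x) +
        \<Phi> a c3 u g1' (\<Psi> c3 b (u + h) g2' x - \<Psi> c3 b u g2' x - DF \<Psi> m2 c3 b u (h # g2') x)"
        unfolding E1 E2 E3 E4 A2 A3 E5 by (simp add: algebra_simps)
    qed
    also have "\<dots> = (e1 * K2 + K1 * e2 + K3 * e3) * norm h * pn hs"
      using pn_sel[of hs ms] l ms unfolding g1'_def g2'_def by (simp add: algebra_simps)
    also have "\<dots> \<le> e * norm h * pn hs"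
    proof -
      have "e1 * K2 \<le> e / 3" unfolding e1_def using K2 e by (simp add: field_simps)
      moreover have "K1 * e2 \<le> e / 3" unfolding e2_def using K1 e by (simp add: field_simps)
      moreover have "K3 * e3 \<le> e / 3" unfolding e3_def using K3 e by (simp add: field_simps)
      ultimately have "e1 * K2 + K1 * e2 + K3 * e3 \<le> e" by simp
      then show ?thesis using pn_nn[of hs] by (simp add: mult_right_mono)
    qed
    finally show "opn a b (\<lambda>x. Pf ms d1 d2 \<Phi> \<Psi> a b (u + h) hs x - Pf ms d1 d2 \<Phi> \<Psi> a b u hs x -
        (Pf (True # ms) (d1 + 1) d2 (DF \<Phi> m1) \<Psi> a b u (h # hs) x + Pf (False # ms) d1 (d2 + 1) \<Phi> (DF \<Psi> m2) a b u (h # hs) x))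
      \<le> e * norm h * pn hs" .
  qed (use r1 r2 r3 in simp)
qed

end

context sc begin

lemma prod_creg_base: assumes F1: "Fam \<Phi> m1 d1 g1" and F2: "Fam \<Psi> m2 d2 g2"
  and ms: "length ms = m1 + m2" "cntT ms = m1" and a: "0 < a" "b \<le> r0"
  and t: "0 \<le> t" "t \<le> 1" "t < b - a - d1 - d2" "t < g1" "t < g2"
  shows "Creg a b (m1 + m2) t (Pf ms d1 d2 \<Phi> \<Psi> a b)"
proof -
  have g: "0 < g1" "0 < g2" using t by auto
  have ab: "a + d1 + d2 < b" using t by simp
  have M: "MB a b (m1 + m2) (Pf ms d1 d2 \<Phi> \<Psi> a b)" by (rule pf_MB[OF F1 F2 g ms a(1) ab a(2)])
  show ?thesis
  proof (cases "t = 0")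
    case True
    then show ?thesis using creg_intro0[OF M pf_cont[OF F1 F2 g ms a(1) ab a(2)]] by simp
  next
    case False
    then have tp: "0 < t" using t by simp
    show ?thesis by (rule creg_intro_hol[OF tp t(2) M pf_hol[OF F1 F2 ms tp t(2) t(4) t(5) a(1) t(3) a(2)]])
  qed
qed

lemma prod_creg_n: "\<forall>\<Phi> \<Psi> m1 m2 d1 d2 g1 g2 ms a b t. Fam \<Phi> m1 d1 g1 \<longrightarrow> Fam \<Psi> m2 d2 g2 \<longrightarrow>
   length ms = m1 + m2 \<longrightarrow> cntT ms = m1 \<longrightarrow> 0 < a \<longrightarrow> b \<le> r0 \<longrightarrow> 0 \<le> t \<longrightarrow> t \<le> real n + 1 \<longrightarrow>
   t < b - a - d1 - d2 \<longrightarrow> t < g1 \<longrightarrow> t < g2 \<longrightarrow> Creg a b (m1 + m2) t (Pf ms d1 d2 \<Phi> \<Psi> a b)"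
proof (induction n)
  case 0
  show ?case using prod_creg_base by simp
next
  case (Suc n)
  show ?case
  proof (intro allI impI)
    fix \<Phi> \<Psi> m1 m2 d1 d2 g1 g2 ms a b t
    assume F1: "Fam \<Phi> m1 d1 g1" and F2: "Fam \<Psi> m2 d2 g2" and ms: "length ms = m1 + m2" "cntT ms = m1"
      and a: "0 < a" and b: "b \<le> r0" and t: "0 \<le> t" "t \<le> real (Suc n) + 1" "t < b - a - d1 - d2" "t < g1" "t < g2"
    show "Creg a b (m1 + m2) t (Pf ms d1 d2 \<Phi> \<Psi> a b)"
    proof (cases "t \<le> 1")
      case True then show ?thesis using prod_creg_base[OF F1 F2 ms a b t(1) True t(3-5)] by simp
    next
      case False
      then have t1: "1 < t" by simp
      have d: "0 \<le> d1" "0 \<le> d2" using F1 F2 unfolding Fam_def by auto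
      have lb: "lev b" using a b t d by simp
      have g: "1 < g1" "1 < g2" "0 < g1" "0 < g2" using t t1 by auto
      have ab: "a + d1 + d2 < b" "1 < b - a - d1 - d2" using t t1 by auto
      have M: "MB a b (m1 + m2) (Pf ms d1 d2 \<Phi> \<Psi> a b)" by (rule pf_MB[OF F1 F2 g(3,4) ms a ab(1) b])
      have De: "Der a b (m1 + m2) (Pf ms d1 d2 \<Phi> \<Psi> a b)
        (\<lambda>u gs x. Pf (True # ms) (d1 + 1) d2 (DF \<Phi> m1) \<Psi> a b u gs x + Pf (False # ms) d1 (d2 + 1) \<Phi> (DF \<Psi> m2) a b u gs x)"
        by (rule pf_der[OF F1 F2 ms g(1,2) a ab(2) b])
      have FD1: "Fam (DF \<Phi> m1) (Suc m1) (d1 + 1) (g1 - 1)" by (rule fam_DF[OF F1 g(1)])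
      have FD2: "Fam (DF \<Psi> m2) (Suc m2) (d2 + 1) (g2 - 1)" by (rule fam_DF[OF F2 g(2)])
      have ms1: "length (True # ms) = Suc m1 + m2" "cntT (True # ms) = Suc m1" using ms by auto
      have ms2: "length (False # ms) = m1 + Suc m2" "cntT (False # ms) = m1" using ms by auto
      have C1: "Creg a b (Suc m1 + m2) (t - 1) (Pf (True # ms) (d1 + 1) d2 (DF \<Phi> m1) \<Psi> a b)"
        by (rule Suc.IH[rule_format, OF FD1 F2 ms1 a b]) (use t t1 in auto)
      have C2: "Creg a b (m1 + Suc m2) (t - 1) (Pf (False # ms) d1 (d2 + 1) \<Phi> (DF \<Psi> m2) a b)"
        by (rule Suc.IH[rule_format, OF F1 FD2 ms2 a b]) (use t t1 in auto)
      have la: "lev a" using a b t d by simp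
      have CG: "Creg a b (Suc (m1 + m2)) (t - 1)
        (\<lambda>u gs x. Pf (True # ms) (d1 + 1) d2 (DF \<Phi> m1) \<Psi> a b u gs x + Pf (False # ms) d1 (d2 + 1) \<Phi> (DF \<Psi> m2) a b u gs x)"
        using creg_add[OF la lb _ C1[simplified] C2[simplified]] t1 by simp
      show ?thesis by (rule creg_intro_der[OF lb t1 M De CG])
    qed
  qed
qed

theorem prod_fam: assumes F1: "Fam \<Phi> m1 d1 g1" and F2: "Fam \<Psi> m2 d2 g2" and ms: "length ms = m1 + m2" "cntT ms = m1"
  shows "Fam (Pf ms d1 d2 \<Phi> \<Psi>) (m1 + m2) (d1 + d2) (min g1 g2)"
proof -
  have d: "0 \<le> d1" "0 \<le> d2" using F1 F2 unfolding Fam_def by auto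
  have FR: "FReg (Pf ms d1 d2 \<Phi> \<Psi>) (m1 + m2) (d1 + d2) (min g1 g2)" unfolding FReg_def
  proof (intro allI impI)
    fix a b t assume a: "0 < a" and b: "b \<le> r0" and t: "0 \<le> t" "t < b - a - (d1 + d2)" "t < min g1 g2"
    obtain n :: nat where n: "t \<le> real n + 1" using real_arch_simple[of t] by (metis add_increasing2 zero_le_one)
    show "Creg a b (m1 + m2) t (Pf ms d1 d2 \<Phi> \<Psi> a b)"
      using prod_creg_n[of n] F1 F2 ms a b t n by simp
  qed
  have CO: "0 < min g1 g2 \<longrightarrow> Coh (Pf ms d1 d2 \<Phi> \<Psi>) (m1 + m2) (d1 + d2)" using pf_coh[OF F1 F2 _ _ ms] by simp
  show ?thesis unfolding Fam_def using FR CO d by simp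
qed

end

locale scq = sc r0 V nrm j U
  for r0 :: real and V :: "real \<Rightarrow> 'x::real_vector set" and nrm :: "real \<Rightarrow> 'x \<Rightarrow> real"
    and j :: "real \<Rightarrow> real \<Rightarrow> 'x \<Rightarrow> 'x" and U :: "'b::real_normed_vector set" +
  fixes \<gamma> :: real and Q :: "real \<Rightarrow> real \<Rightarrow> 'b \<Rightarrow> 'x \<Rightarrow> 'x" and R :: "real \<Rightarrow> 'b \<Rightarrow> 'x \<Rightarrow> 'x"
  assumes gp: "0 < \<gamma>" and Qeq: "equivariant_regular r0 V nrm j U \<gamma> Q"
    and Rinv: "\<forall>s u. 0 < s \<and> s \<le> r0 \<and> u \<in> U \<longrightarrow>
           bounded_op V nrm s s (R s u) \<and>
           (\<forall>x\<in>V s. R s u (x - Q s s u x) = x) \<and>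
           (\<forall>x\<in>V s. R s u x - Q s s u (R s u x) = x)"
    and Rbd: "\<forall>\<epsilon>>0. \<exists>C. \<forall>s u. \<epsilon> < s \<and> s \<le> r0 \<and> u \<in> U \<longrightarrow> opnorm V nrm s s (R s u) \<le> C"
begin

lemma Q_bop: "0 < a \<Longrightarrow> a \<le> b \<Longrightarrow> b \<le> r0 \<Longrightarrow> u \<in> U \<Longrightarrow> bop a b (Q a b u)"
  using Qeq unfolding equivariant_regular_def by blast

lemma Q1: assumes "0 < c" "c < b" "b \<le> r0" "u \<in> U" "x \<in> V b" shows "j c b (Q b b u x) = Q c c u (j c b x)"
proof -
  have "\<forall>s r s' r' u. 0 < s \<and> s \<le> r \<and> r \<le> r0 \<and> 0 < s' \<and> s' \<le> r' \<and> r' \<le> r0 \<and> s < s' \<and> r < r' \<and> u \<in> U \<longrightarrow>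
        (\<forall>x\<in>V r'. j s s' (Q s' r' u x) = Q s r u (j r r' x))" using Qeq unfolding equivariant_regular_def by blast
  then show ?thesis using assms by simp
qed

lemma Q_Creg: assumes "0 < a" "a \<le> b" "b \<le> r0" "0 \<le> t" "t < min \<gamma> (b - a)" shows "C_t V nrm a b U t (Q a b)"
proof -
  have "\<forall>s r t. 0 < s \<and> s \<le> r \<and> r \<le> r0 \<and> 0 \<le> t \<and> t < min \<gamma> (r - s) \<longrightarrow> C_t V nrm s r U t (Q s r)"
    using Qeq unfolding equivariant_regular_def by blast
  then show ?thesis using assms by blast
qed

lemma Rb: "0 < s \<Longrightarrow> s \<le> r0 \<Longrightarrow> u \<in> U \<Longrightarrow> bop s s (R s u)" using Rinv by blast
lemma R_left: "0 < s \<Longrightarrow> s \<le> r0 \<Longrightarrow> u \<in> U \<Longrightarrow> x \<in> V s \<Longrightarrow> R s u (x - Q s s u x) = x" using Rinv by blast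
lemma R_right: "0 < s \<Longrightarrow> s \<le> r0 \<Longrightarrow> u \<in> U \<Longrightarrow> x \<in> V s \<Longrightarrow> R s u x - Q s s u (R s u x) = x" using Rinv by blast

lemma Q2: assumes a: "0 < a" "a \<le> b" "b \<le> r0" and u: "u \<in> U" and x: "x \<in> V b" shows "Q a b u x = Q a a u (j a b x)"
proof (cases "a = b")
  case True then show ?thesis using j_id a x by simp
next
  case False
  then have ab: "a < b" using a by simp
  define c where "c = a / 2"
  have c: "0 < c" "c < a" unfolding c_def using a by auto
  have E1: "\<forall>s r s' r' u. 0 < s \<and> s \<le> r \<and> r \<le> r0 \<and> 0 < s' \<and> s' \<le> r' \<and> r' \<le> r0 \<and> s < s' \<and> r < r' \<and> u \<in> U \<longrightarrow>
        (\<forall>x\<in>V r'. j s s' (Q s' r' u x) = Q s r u (j r r' x))" using Qeq unfolding equivariant_regular_def by blast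
  have e1: "j c a (Q a b u x) = Q c c u (j c b x)" using E1 c a ab u x by simp
  have jx: "j a b x \<in> V a" using bop_in[OF j_bop x] a by simp
  have e2: "j c a (Q a a u (j a b x)) = Q c c u (j c a (j a b x))" using E1 c a ab u jx by simp
  have e3: "j c a (j a b x) = j c b x" using j_comp c a x by simp
  have i1: "Q a b u x \<in> V a" "Q a a u (j a b x) \<in> V a" using bop_in[OF Q_bop x] bop_in[OF Q_bop jx] a u by auto
  have "j c a (Q a b u x) = j c a (Q a a u (j a b x))" using e1 e2 e3 by simp
  then show ?thesis using j_inj[of c a] c a i1 unfolding inj_on_def by auto
qed

lemma RQ: assumes c: "0 < c" "c \<le> b" "b \<le> r0" and u: "u \<in> U" and x: "x \<in> V b"
  shows "R c u (j c b x) = j c b (R b u x)"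
proof (cases "c = b")
  case True
  have "R b u x \<in> V b" using bop_in[OF Rb x] c u by simp
  then show ?thesis using True j_id c x by simp
next
  case False
  then have cb: "c < b" using c by simp
  have lb: "lev b" and lc: "lev c" using c by auto
  define y where "y = R b u x"
  have y: "y \<in> V b" unfolding y_def using bop_in[OF Rb x] c u by simp
  have qy: "Q b b u y \<in> V b" using bop_in[OF Q_bop y] c u by simp
  have xe: "x = y - Q b b u y" unfolding y_def using R_right c u x by simp
  have J: "bop c b (j c b)" using j_bop c by simp
  have jy: "j c b y \<in> V c" using bop_in[OF J y] .
  have "j c b x = j c b y - j c b (Q b b u y)" unfolding xe[symmetric] using bop_diff[OF lb J y qy] xe by simp
  also have "\<dots> = j c b y - Q c c u (j c b y)" using Q1[OF c(1) cb c(3) u y] by simp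
  finally have "R c u (j c b x) = R c u (j c b y - Q c c u (j c b y))" by simp
  also have "\<dots> = j c b y" using R_left c u jy by simp
  finally show ?thesis unfolding y_def .
qed

definition Qf :: "real \<Rightarrow> real \<Rightarrow> 'b \<Rightarrow> 'b list \<Rightarrow> 'x \<Rightarrow> 'x" where "Qf a b u hs x = Q a b u x"

lemma Qf_BO: "0 < a \<Longrightarrow> a \<le> b \<Longrightarrow> b \<le> r0 \<Longrightarrow> BO a b m (Qf a b)"
  unfolding BO_def Qf_def using Q_bop by auto

lemma Qf_coh1: assumes a: "0 < a" "a \<le> c" "c \<le> b" "b \<le> r0" and u: "u \<in> U" and x: "x \<in> V b"
  shows "Qf a b u hs x = j a c (Qf c b u hs x)"
proof (cases "a = c")
  case True
  have "Q c b u x \<in> V c" using bop_in[OF Q_bop x] a u by simp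
  then show ?thesis unfolding Qf_def using True j_id a by simp
next
  case False
  then have ac: "a < c" using a by simp
  have jx: "j c b x \<in> V c" using bop_in[OF j_bop x] a by simp
  have "j a c (Q c b u x) = j a c (Q c c u (j c b x))" using Q2[of c b u x] a u x by simp
  also have "\<dots> = Q a a u (j a c (j c b x))" using Q1[OF a(1) ac _ u jx] a by simp
  also have "\<dots> = Q a a u (j a b x)" using j_comp a x by simp
  also have "\<dots> = Q a b u x" using Q2[of a b u x] a u x by simp
  finally show ?thesis unfolding Qf_def by simp
qed

lemma Qf_coh2: assumes a: "0 < a" "a \<le> c" "c \<le> b" "b \<le> r0" and u: "u \<in> U" and x: "x \<in> V b"
  shows "Qf a b u hs x = Qf a c u hs (j c b x)"
proof -
  have jx: "j c b x \<in> V c" using bop_in[OF j_bop x] a by simp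
  have "Q a c u (j c b x) = Q a a u (j a c (j c b x))" using Q2[of a c u "j c b x"] a u jx by simp
  also have "\<dots> = Q a a u (j a b x)" using j_comp a x by simp
  also have "\<dots> = Q a b u x" using Q2[of a b u x] a u x by simp
  finally show ?thesis unfolding Qf_def by simp
qed

lemma Ck_unpack: fixes F :: "'b \<Rightarrow> 'x \<Rightarrow> 'x" assumes CK: "C_k_alpha V nrm a b U K A F"
  obtains D :: "nat \<Rightarrow> 'b \<Rightarrow> 'b list \<Rightarrow> 'x \<Rightarrow> 'x" where "\<forall>u\<in>U. \<forall>x\<in>V b. D 0 u [] x = F u x"
    "\<forall>i\<le>K. \<forall>u\<in>U. \<forall>hs. length hs = i \<longrightarrow> bounded_op V nrm a b (D i u hs)"
    "\<forall>i\<le>K. \<forall>u\<in>U. \<forall>hs p a' h h'. length hs = i \<and> p < i \<longrightarrow>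
          (\<forall>x\<in>V b. D i u (hs[p := a' *\<^sub>R h + h']) x
                      = a' *\<^sub>R D i u (hs[p := h]) x + D i u (hs[p := h']) x)"
    "\<forall>i\<le>K. \<forall>u\<in>U. \<exists>C. \<forall>hs. length hs = i \<longrightarrow>
          opnorm V nrm a b (D i u hs) \<le> C * prod_list (map norm hs)"
    "\<forall>i<K. \<forall>u\<in>U. \<forall>e>0. \<exists>d>0. \<forall>h. norm h < d \<and> u + h \<in> U \<longrightarrow>
          (\<forall>hs. length hs = i \<longrightarrow>
             opnorm V nrm a b (\<lambda>x. D i (u + h) hs x - D i u hs x - D (Suc i) u (h # hs) x)
               \<le> e * norm h * prod_list (map norm hs))"
    "\<forall>i. 1 \<le> i \<and> i \<le> K \<longrightarrow> (\<exists>C. \<forall>u\<in>U. \<forall>hs. length hs = i \<longrightarrow>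
          opnorm V nrm a b (D i u hs) \<le> C * prod_list (map norm hs))"
    "\<exists>C. \<forall>u\<in>U. \<forall>v\<in>U. \<forall>hs. length hs = K \<longrightarrow>
          opnorm V nrm a b (\<lambda>x. D K u hs x - D K v hs x)
            \<le> C * norm (u - v) powr A * prod_list (map norm hs)"
proof -
  from CK obtain D :: "nat \<Rightarrow> 'b \<Rightarrow> 'b list \<Rightarrow> 'x \<Rightarrow> 'x" where DD: "(\<forall>u\<in>U. \<forall>x\<in>V b. D 0 u [] x = F u x) \<and>
      (\<forall>i\<le>K. \<forall>u\<in>U. \<forall>hs. length hs = i \<longrightarrow> bounded_op V nrm a b (D i u hs)) \<and>
      (\<forall>i\<le>K. \<forall>u\<in>U. \<forall>hs p a' h h'. length hs = i \<and> p < i \<longrightarrow>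
          (\<forall>x\<in>V b. D i u (hs[p := a' *\<^sub>R h + h']) x
                      = a' *\<^sub>R D i u (hs[p := h]) x + D i u (hs[p := h']) x)) \<and>
      (\<forall>i\<le>K. \<forall>u\<in>U. \<exists>C. \<forall>hs. length hs = i \<longrightarrow>
          opnorm V nrm a b (D i u hs) \<le> C * prod_list (map norm hs)) \<and>
      (\<forall>i<K. \<forall>u\<in>U. \<forall>e>0. \<exists>d>0. \<forall>h. norm h < d \<and> u + h \<in> U \<longrightarrow>
          (\<forall>hs. length hs = i \<longrightarrow>
             opnorm V nrm a b (\<lambda>x. D i (u + h) hs x - D i u hs x - D (Suc i) u (h # hs) x)
               \<le> e * norm h * prod_list (map norm hs))) \<and>
      (\<forall>i. 1 \<le> i \<and> i \<le> K \<longrightarrow> (\<exists>C. \<forall>u\<in>U. \<forall>hs. length hs = i \<longrightarrow>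
          opnorm V nrm a b (D i u hs) \<le> C * prod_list (map norm hs))) \<and>
      (\<exists>C. \<forall>u\<in>U. \<forall>v\<in>U. \<forall>hs. length hs = K \<longrightarrow>
          opnorm V nrm a b (\<lambda>x. D K u hs x - D K v hs x)
            \<le> C * norm (u - v) powr A * prod_list (map norm hs))"
    unfolding C_k_alpha_def ..
  show ?thesis by (rule that[OF DD[THEN conjunct1] DD[THEN conjunct2, THEN conjunct1] DD[THEN conjunct2, THEN conjunct2, THEN conjunct1] DD[THEN conjunct2, THEN conjunct2, THEN conjunct2, THEN conjunct1] DD[THEN conjunct2, THEN conjunct2, THEN conjunct2, THEN conjunct2, THEN conjunct1] DD[THEN conjunct2, THEN conjunct2, THEN conjunct2, THEN conjunct2, THEN conjunct2, THEN conjunct1] DD[THEN conjunct2, THEN conjunct2, THEN conjunct2, THEN conjunct2, THEN conjunct2, THEN conjunct2]])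
qed

lemma Q_hol: assumes t: "0 < t" "t \<le> 1" "t < \<gamma>" and a: "0 < a" "t < b - a" "b \<le> r0"
  shows "Hol a b 0 t (Qf a b)"
proof -
  have C: "C_t V nrm a b U t (Q a b)" by (rule Q_Creg) (use t a in auto)
  have k: "nat (\<lceil>t\<rceil> - 1) = 0" "t - real (nat (\<lceil>t\<rceil> - 1)) = t" using kk_small[OF t(1,2)] unfolding kk_def by auto
  have tne: "\<not> (t = 0)" using t by simp
  have CK: "C_k_alpha V nrm a b U 0 t (Q a b)" using C unfolding C_t_def if_not_P[OF tne] k(1) by simp
  obtain D :: "nat \<Rightarrow> 'b \<Rightarrow> 'b list \<Rightarrow> 'x \<Rightarrow> 'x" where D1: "\<forall>u\<in>U. \<forall>x\<in>V b. D 0 u [] x = Q a b u x"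
    and Dh: "\<exists>C. \<forall>u\<in>U. \<forall>v\<in>U. \<forall>hs. length hs = 0 \<longrightarrow>
          opnorm V nrm a b (\<lambda>x. D 0 u hs x - D 0 v hs x) \<le> C * norm (u - v) powr t * prod_list (map norm hs)"
    by (rule Ck_unpack[OF CK])
  obtain C0 where C0: "\<forall>u\<in>U. \<forall>v\<in>U. \<forall>hs. length hs = 0 \<longrightarrow>
          opnorm V nrm a b (\<lambda>x. D 0 u hs x - D 0 v hs x) \<le> C0 * norm (u - v) powr t * prod_list (map norm hs)"
    using Dh by (elim exE)
  show ?thesis unfolding Hol_def
  proof (intro exI[of _ C0] ballI allI impI)
    fix u v and hs :: "'b list" assume u: "u \<in> U" and v: "v \<in> U" and l: "length hs = 0"
    have "opn a b (\<lambda>x. Qf a b u hs x - Qf a b v hs x) = opn a b (\<lambda>x. D 0 u [] x - D 0 v [] x)"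
      by (rule opn_cong) (use D1 u v l in \<open>simp add: Qf_def\<close>)
    then show "opn a b (\<lambda>x. Qf a b u hs x - Qf a b v hs x) \<le> C0 * norm (u - v) powr t * pn hs"
      using C0 u v l by simp
  qed
qed

lemma Q_der: assumes t: "1 < t" "t < \<gamma>" and a: "0 < a" "t < b - a" "b \<le> r0"
  shows "\<exists>G. Der a b 0 (Qf a b) G \<and> Creg a b 1 (t - 1) G \<and> MB a b 1 G"
proof -
  have lb: "lev b" and la: "lev a" using a t by auto
  have C: "C_t V nrm a b U t (Q a b)" by (rule Q_Creg) (use t a in auto)
  have k: "kk t = Suc (kk (t - 1))" "aa t = aa (t - 1)" using kk_big[OF t(1)] aa_big[OF t(1)] by auto
  have kd: "nat (\<lceil>t\<rceil> - 1) = kk t" "t - real (nat (\<lceil>t\<rceil> - 1)) = aa t" unfolding kk_def aa_def by auto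
  have tne: "\<not> (t = 0)" using t by simp
  have CK: "C_k_alpha V nrm a b U (kk t) (aa t) (Q a b)" using C unfolding C_t_def if_not_P[OF tne] kd(1) by (simp add: aa_def)
  obtain D :: "nat \<Rightarrow> 'b \<Rightarrow> 'b list \<Rightarrow> 'x \<Rightarrow> 'x" where D0: "\<forall>u\<in>U. \<forall>x\<in>V b. D 0 u [] x = Q a b u x"
    and Db: "\<forall>i\<le>kk t. \<forall>u\<in>U. \<forall>hs. length hs = i \<longrightarrow> bop a b (D i u hs)"
    and Dl: "\<forall>i\<le>kk t. \<forall>u\<in>U. \<forall>hs p c h h'. length hs = i \<and> p < i \<longrightarrow>
          (\<forall>x\<in>V b. D i u (hs[p := c *\<^sub>R h + h']) x = c *\<^sub>R D i u (hs[p := h]) x + D i u (hs[p := h']) x)"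
    and Dd: "\<forall>i<kk t. \<forall>u\<in>U. \<forall>e>0. \<exists>d>0. \<forall>h. norm h < d \<and> u + h \<in> U \<longrightarrow>
          (\<forall>hs. length hs = i \<longrightarrow>
             opnorm V nrm a b (\<lambda>x. D i (u + h) hs x - D i u hs x - D (Suc i) u (h # hs) x)
               \<le> e * norm h * prod_list (map norm hs))"
    and Du: "\<forall>i. 1 \<le> i \<and> i \<le> kk t \<longrightarrow> (\<exists>C. \<forall>u\<in>U. \<forall>hs. length hs = i \<longrightarrow>
          opnorm V nrm a b (D i u hs) \<le> C * prod_list (map norm hs))"
    and Dh: "\<exists>C. \<forall>u\<in>U. \<forall>v\<in>U. \<forall>hs. length hs = kk t \<longrightarrow>
          opnorm V nrm a b (\<lambda>x. D (kk t) u hs x - D (kk t) v hs x)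
            \<le> C * norm (u - v) powr (aa t) * prod_list (map norm hs)"
    by (rule Ck_unpack[OF CK])
  have MBi: "MB a b (Suc i) (D (Suc i))" if i: "Suc i \<le> kk t" for i
  proof -
    obtain C where C: "\<forall>u\<in>U. \<forall>hs. length hs = Suc i \<longrightarrow> opn a b (D (Suc i) u hs) \<le> C * pn hs" using Du i by fastforce
    show ?thesis
    proof (rule MB_intro[where C=C])
      fix u and hs :: "'b list" assume "u \<in> U" "length hs = Suc i" then show "bop a b (D (Suc i) u hs)" using Db i by blast
    next
      fix u and hs :: "'b list" and p c h h' x assume "u \<in> U" "length hs = Suc i" "p < Suc i" "x \<in> V b"
      then show "D (Suc i) u (hs[p := c *\<^sub>R h + h']) x = c *\<^sub>R D (Suc i) u (hs[p := h]) x + D (Suc i) u (hs[p := h']) x"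
        using Dl i by blast
    next
      fix u and hs :: "'b list" assume "u \<in> U" "length hs = Suc i" then show "opn a b (D (Suc i) u hs) \<le> C * pn hs" using C by blast
    qed
  qed
  have Deri: "Der a b (Suc i) (D (Suc i)) (D (Suc (Suc i)))" if i: "Suc i < kk t" for i
    unfolding Der_def using Dd i by blast
  have k0: "0 < kk t" using k by simp
  have Der0: "Der a b 0 (D 0) (D (Suc 0))" unfolding Der_def using mp[OF spec[OF Dd, of 0] k0] .
  have Der0': "Der a b 0 (Qf a b) (D 1)"
    by (rule Der_cong[OF _ _ Der0]) (use D0 in \<open>auto simp: Qf_def\<close>)
  have GR: "GR a b 1 (kk (t - 1)) (aa (t - 1)) (\<lambda>i. D (Suc i))" unfolding GR_def
  proof (intro conjI allI impI)
    fix i assume "i \<le> kk (t - 1)" then show "MB a b (i + 1) (D (Suc i))" using MBi[of i] k by simp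
  next
    fix i assume "i < kk (t - 1)" then show "Der a b (i + 1) (D (Suc i)) (D (Suc (Suc i)))" using Deri[of i] k by simp
  next
    obtain C where C: "\<forall>u\<in>U. \<forall>v\<in>U. \<forall>hs. length hs = kk t \<longrightarrow>
          opn a b (\<lambda>x. D (kk t) u hs x - D (kk t) v hs x) \<le> C * norm (u - v) powr (aa t) * pn hs" using Dh by blast
    show "Hol a b (kk (t - 1) + 1) (aa (t - 1)) (D (Suc (kk (t - 1))))" unfolding Hol_def
      using C k by (intro exI[of _ C]) simp
  qed
  have CG: "Creg a b 1 (t - 1) (D 1)" unfolding Creg_def using t GR by auto
  have MG: "MB a b 1 (D 1)" using MBi[of 0] k by simp
  show ?thesis using Der0' CG MG by blast
qed

definition DQ where "DQ = DF Qf 0"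

lemma DQ_ex: assumes g: "1 < \<gamma>" and a: "0 < a" "a + 1 < b" "b \<le> r0"
  shows "Der a b 0 (Qf a b) (DQ a b) \<and> MB a b 1 (DQ a b)"
proof -
  define \<beta> where "\<beta> = min 1 (min (b - a - 1) (\<gamma> - 1)) / 2"
  have mm: "min 1 (min (b - a - 1) (\<gamma> - 1)) \<le> 1" "min 1 (min (b - a - 1) (\<gamma> - 1)) \<le> b - a - 1"
    "min 1 (min (b - a - 1) (\<gamma> - 1)) \<le> \<gamma> - 1" "0 < min 1 (min (b - a - 1) (\<gamma> - 1))" using a g by auto
  have bp: "0 < \<beta>" "\<beta> \<le> 1" "1 + \<beta> < b - a" "1 + \<beta> < \<gamma>" unfolding \<beta>_def using mm by linarith+
  obtain G where G: "Der a b 0 (Qf a b) G" "MB a b (Suc 0) G" using Q_der[OF _ bp(4) a(1) bp(3) a(3)] bp by auto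
  show ?thesis unfolding DQ_def using DF_spec[where \<Phi>=Qf, OF G] by simp
qed

lemma fam_DQ: assumes g: "1 < \<gamma>" shows "Fam DQ 1 1 (\<gamma> - 1)"
proof -
  have FR: "FReg DQ 1 1 (\<gamma> - 1)" unfolding FReg_def
  proof (intro allI impI)
    fix a b t assume a: "0 < a" and b: "b \<le> r0" and t: "0 \<le> t" and tb: "t < b - a - 1" and tg: "t < \<gamma> - 1"
    have lb: "lev b" and la: "lev a" using a b t tb by auto
    have DV: "Der a b 0 (Qf a b) (DQ a b)" "MB a b 1 (DQ a b)" using DQ_ex[OF g a _ b] tb t by auto
    have BF: "BO a b 0 (Qf a b)" using Qf_BO a b t tb by simp
    show "Creg a b 1 t (DQ a b)"
    proof (cases "t = 0")
      case False
      then have tp: "t > 0" using t by simp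
      obtain G where G: "Der a b 0 (Qf a b) G" "Creg a b 1 (t + 1 - 1) G" "MB a b 1 G"
        using Q_der[of "t + 1" a b] tp tb tg a b by auto
      have "EQ b 1 G (DQ a b)" using der_unique[OF la lb BF G(3)[simplified] DV(2)[simplified] G(1) DV(1)] by simp
      then show ?thesis using creg_cong[OF lb _ G(2)] by simp
    next
      case True
      define \<beta> where "\<beta> = min 1 (min (b - a - 1) (\<gamma> - 1)) / 2"
      have mm: "min 1 (min (b - a - 1) (\<gamma> - 1)) \<le> 1" "min 1 (min (b - a - 1) (\<gamma> - 1)) \<le> b - a - 1"
        "min 1 (min (b - a - 1) (\<gamma> - 1)) \<le> \<gamma> - 1" "0 < min 1 (min (b - a - 1) (\<gamma> - 1))" using a g tb True by auto
      have bp: "0 < \<beta>" "\<beta> \<le> 1" "1 + \<beta> < b - a" "1 + \<beta> < \<gamma>" unfolding \<beta>_def using mm by linarith+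
      obtain G where G: "Der a b 0 (Qf a b) G" "Creg a b 1 (1 + \<beta> - 1) G" "MB a b 1 G"
        using Q_der[OF _ bp(4) a bp(3) b] bp by auto
      have "EQ b 1 G (DQ a b)" using der_unique[OF la lb BF G(3)[simplified] DV(2)[simplified] G(1) DV(1)] by simp
      then have "Creg a b 1 \<beta> (DQ a b)" using creg_cong[OF lb _ G(2)] by simp
      then show ?thesis using creg_0[OF lb bp(1,2)] True by simp
    qed
  qed
  have CO: "Coh DQ 1 1" unfolding Coh_def
  proof (intro ballI allI impI conjI)
    fix u and hs :: "'b list" and a c b x
    assume u: "u \<in> U" and l: "length hs = 1" and a: "0 < a" and ac: "a \<le> c" and cb: "c + 1 < b"
      and b: "b \<le> r0" and x: "x \<in> V b"
    have la: "lev a" and lc: "lev c" and lb: "lev b" using a ac cb b by auto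
    have J: "bop a c (j a c)" using j_bop a ac cb b by simp
    have DVc: "Der c b 0 (Qf c b) (DQ c b)" "MB c b 1 (DQ c b)" using DQ_ex[OF g _ cb b] a ac by auto
    have DVa: "Der a b 0 (Qf a b) (DQ a b)" "MB a b 1 (DQ a b)" using DQ_ex[OF g a _ b] ac cb by auto
    have BFc: "BO c b 0 (Qf c b)" using Qf_BO a ac cb b by simp
    have BFa: "BO a b 0 (Qf a b)" using Qf_BO a ac cb b by simp
    have D1: "Der a b 0 (\<lambda>u hs x. j a c (Qf c b u hs x)) (\<lambda>u hs x. j a c (DQ c b u hs x))"
      by (rule Der_lcomp[OF la lc lb J BFc MB_BO[OF DVc(2)[simplified]] DVc(1)])
    have E: "EQ b 0 (\<lambda>u hs x. j a c (Qf c b u hs x)) (Qf a b)"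
      using Qf_coh1 a ac cb b by simp
    have D2: "Der a b 0 (Qf a b) (\<lambda>u hs x. j a c (DQ c b u hs x))" by (rule Der_cong[OF E _ D1]) simp
    have M2: "MB a b 1 (\<lambda>u hs x. j a c (DQ c b u hs x))" by (rule MB_lcomp[OF la lc lb J DVc(2)])
    show "DQ a b u hs x = j a c (DQ c b u hs x)"
      using der_unique[OF la lb BFa DVa(2)[simplified] M2[simplified] DVa(1) D2 u _ x] l by simp
  next
    fix u and hs :: "'b list" and a c b x
    assume u: "u \<in> U" and l: "length hs = 1" and a: "0 < a" and ac: "a + 1 < c" and cb: "c \<le> b"
      and b: "b \<le> r0" and x: "x \<in> V b"
    have la: "lev a" and lc: "lev c" and lb: "lev b" using a ac cb b by auto
    have J: "bop c b (j c b)" using j_bop a ac cb b by simp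
    have DVc: "Der a c 0 (Qf a c) (DQ a c)" "MB a c 1 (DQ a c)" using DQ_ex[OF g a ac] cb b by auto
    have DVa: "Der a b 0 (Qf a b) (DQ a b)" "MB a b 1 (DQ a b)" using DQ_ex[OF g a _ b] ac cb by auto
    have BFc: "BO a c 0 (Qf a c)" using Qf_BO a ac cb b by simp
    have BFa: "BO a b 0 (Qf a b)" using Qf_BO a ac cb b by simp
    have D1: "Der a b 0 (\<lambda>u hs x. Qf a c u hs (j c b x)) (\<lambda>u hs x. DQ a c u hs (j c b x))"
      by (rule Der_rcomp[OF la lc lb J BFc MB_BO[OF DVc(2)[simplified]] DVc(1)])
    have E: "EQ b 0 (\<lambda>u hs x. Qf a c u hs (j c b x)) (Qf a b)"
    proof (intro ballI allI impI)
      fix u' and hs' :: "'b list" and x' assume "u' \<in> U" "length hs' = 0" "x' \<in> V b"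
      then show "Qf a c u' hs' (j c b x') = Qf a b u' hs' x'" using Qf_coh2[of a c b u' x' hs'] a ac cb b by simp
    qed
    have D2: "Der a b 0 (Qf a b) (\<lambda>u hs x. DQ a c u hs (j c b x))" by (rule Der_cong[OF E _ D1]) simp
    have M2: "MB a b 1 (\<lambda>u hs x. DQ a c u hs (j c b x))" by (rule MB_rcomp[OF la lc lb J DVc(2)])
    show "DQ a b u hs x = DQ a c u hs (j c b x)"
      using der_unique[OF la lb BFa DVa(2)[simplified] M2[simplified] DVa(1) D2 u _ x] l by simp
  qed
  show ?thesis unfolding Fam_def using FR CO by simp
qed

end

context scq begin

definition Rf :: "real \<Rightarrow> real \<Rightarrow> 'b \<Rightarrow> 'b list \<Rightarrow> 'x \<Rightarrow> 'x" where "Rf a b u hs x = j a b (R b u x)"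

lemma Rf_bop: assumes "0 < a" "a \<le> b" "b \<le> r0" "u \<in> U" shows "bop a b (Rf a b u hs)"
proof -
  have "bop a b (\<lambda>x. j a b (R b u x))" using bop_comp(1)[OF _ _ _ j_bop Rb] assms by simp
  then show ?thesis unfolding Rf_def by simp
qed

lemma Rf_in: "0 < a \<Longrightarrow> a \<le> b \<Longrightarrow> b \<le> r0 \<Longrightarrow> u \<in> U \<Longrightarrow> x \<in> V b \<Longrightarrow> Rf a b u hs x \<in> V a"
  using bop_in[OF Rf_bop] by blast

lemma Rf_bnd: assumes a: "0 < a" "a \<le> b" "b \<le> r0" shows "\<exists>K\<ge>0. \<forall>u\<in>U. \<forall>hs. opn a b (Rf a b u hs) \<le> K"
proof -
  obtain C where C: "\<forall>s u. a / 2 < s \<and> s \<le> r0 \<and> u \<in> U \<longrightarrow> opn s s (R s u) \<le> C" using Rbd a by (meson half_gt_zero)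
  have la: "lev a" and lb: "lev b" using a by auto
  have J: "bop a b (j a b)" using j_bop a by simp
  show ?thesis
  proof (intro exI[of _ "opn a b (j a b) * max C 0"] conjI ballI allI)
    show "0 \<le> opn a b (j a b) * max C 0" using opn_nn[OF la lb J] by simp
    fix u and hs :: "'b list" assume u: "u \<in> U"
    have RB: "bop b b (R b u)" using Rb a u by simp
    have "opn b b (R b u) \<le> max C 0" using C a u by force
    then have "opn a b (\<lambda>x. j a b (R b u x)) \<le> opn a b (j a b) * max C 0"
      using opn_comp_le[OF la lb lb J RB order.refl] by simp
    then show "opn a b (Rf a b u hs) \<le> opn a b (j a b) * max C 0" unfolding Rf_def by simp
  qed
qed

lemma Rf_MB: assumes a: "0 < a" "a \<le> b" "b \<le> r0" shows "MB a b 0 (Rf a b)"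
proof -
  obtain K where K: "K \<ge> 0" "\<forall>u\<in>U. \<forall>hs. opn a b (Rf a b u hs) \<le> K" using Rf_bnd[OF a] by blast
  show ?thesis
  proof (rule MB_intro[where C=K])
    fix u and hs :: "'b list" assume u: "u \<in> U" and l: "length hs = 0"
    show "bop a b (Rf a b u hs)" using Rf_bop a u by simp
    show "opn a b (Rf a b u hs) \<le> K * pn hs" using K u l by simp
  next
    fix u and hs :: "'b list" and p c h h' x assume "p < (0::nat)" then show "Rf a b u (hs[p := c *\<^sub>R h + h']) x = c *\<^sub>R Rf a b u (hs[p := h]) x + Rf a b u (hs[p := h']) x"
      by simp
  qed
qed

lemma Rf_coh: "Coh Rf 0 0" unfolding Coh_def
proof (intro ballI allI impI conjI)
  fix u and hs :: "'b list" and a c b x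
  assume u: "u \<in> U" and a: "0 < a" and ac: "a \<le> c" and cb: "c + 0 < b" and b: "b \<le> r0" and x: "x \<in> V b"
  have "R b u x \<in> V b" using bop_in[OF Rb x] a ac cb b u by simp
  then show "Rf a b u hs x = j a c (Rf c b u hs x)" unfolding Rf_def using j_comp a ac cb b by simp
next
  fix u and hs :: "'b list" and a c b x
  assume u: "u \<in> U" and a: "0 < a" and ac: "a + 0 < c" and cb: "c \<le> b" and b: "b \<le> r0" and x: "x \<in> V b"
  have rx: "R b u x \<in> V b" using bop_in[OF Rb x] a ac cb b u by simp
  have "Rf a c u hs (j c b x) = j a c (j c b (R b u x))" unfolding Rf_def using RQ[of c b u x] a ac cb b u x by simp
  also have "\<dots> = Rf a b u hs x" unfolding Rf_def using j_comp a ac cb b rx by simp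
  finally show "Rf a b u hs x = Rf a c u hs (j c b x)" by simp
qed

lemma Rdiff_same: assumes b: "0 < b" "b \<le> r0" and u: "u \<in> U" "v \<in> U" and x: "x \<in> V b"
  shows "R b u x - R b v x = R b u (Q b b u (R b v x) - Q b b v (R b v x))"
proof -
  have lb: "lev b" using b by simp
  define w where "w = R b v x"
  have w: "w \<in> V b" unfolding w_def using bop_in[OF Rb x] b u by simp
  have qu: "Q b b u w \<in> V b" "Q b b v w \<in> V b" using bop_in[OF Q_bop w] b u by auto
  have RU: "bop b b (R b u)" using Rb b u by simp
  have e1: "R b u (Q b b u w) = R b u w - w"
  proof -
    have "R b u (w - Q b b u w) = w" using R_left b u w by simp
    then have "R b u w - R b u (Q b b u w) = w" using bop_diff[OF lb RU w qu(1)] by simp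
    then show ?thesis by (simp add: algebra_simps)
  qed
  have e2: "Q b b v w = w - x" unfolding w_def using R_right[OF b(1,2) u(2) x] by (simp add: algebra_simps)
  have "R b u (Q b b u w - Q b b v w) = R b u (Q b b u w) - R b u (Q b b v w)" by (rule bop_diff[OF lb RU qu])
  also have "\<dots> = (R b u w - w) - R b u (w - x)" unfolding e1 e2 ..
  also have "\<dots> = R b u x - w" using bop_diff[OF lb RU w x] by simp
  finally show ?thesis unfolding w_def by simp
qed

lemma Rf_diff: assumes a: "0 < a" "a \<le> c" "c < c'" "c' \<le> b" "b \<le> r0" and u: "w \<in> U" "u \<in> U" and x: "x \<in> V b"
  shows "Rf a b w hs x - Rf a b u hs x = Rf a c w hs (Q c c' w (Rf c' b u hs x) - Q c c' u (Rf c' b u hs x))"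
proof -
  have la: "lev a" and lc: "lev c" and lb: "lev b" using a by auto
  define y where "y = R b u x"
  have y: "y \<in> V b" unfolding y_def using bop_in[OF Rb x] a u by simp
  have d1: "R b w x - R b u x = R b w (Q b b w y - Q b b u y)" unfolding y_def using Rdiff_same[OF _ _ u x] a by simp
  have qy: "Q b b w y - Q b b u y \<in> V b" using bop_in[OF Q_bop y] a u Vdiff[OF lb] by simp
  have J: "bop c b (j c b)" using j_bop a by simp
  have JA: "bop a b (j a b)" using j_bop a by simp
  have "Rf a b w hs x - Rf a b u hs x = j a b (R b w x - R b u x)" unfolding Rf_def
    using bop_diff[OF lb JA bop_in[OF Rb x] bop_in[OF Rb x]] a u by simp
  also have "\<dots> = j a c (j c b (R b w (Q b b w y - Q b b u y)))" unfolding d1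
    using j_comp[of a c b] a bop_in[OF Rb qy] u by simp
  also have "\<dots> = j a c (R c w (j c b (Q b b w y - Q b b u y)))" using RQ[of c b w] a u qy by simp
  also have "j c b (Q b b w y - Q b b u y) = Q c c w (j c b y) - Q c c u (j c b y)"
  proof (cases "c = b")
    case True then show ?thesis using j_id[of b] a qy y by simp
  next
    case False
    then have cb: "c < b" using a by simp
    have qq: "Q b b w y \<in> V b" "Q b b u y \<in> V b" using bop_in[OF Q_bop y] a u by auto
    show ?thesis using bop_diff[OF lb J qq] Q1[OF _ cb _ _ y] a u by simp
  qed
  also have "Q c c w (j c b y) - Q c c u (j c b y) = Q c c' w (j c' b y) - Q c c' u (j c' b y)"
  proof -
    have jy: "j c' b y \<in> V c'" using bop_in[OF j_bop y] a by simp
    have "j c b y = j c c' (j c' b y)" using j_comp[of c c' b y] a y by simp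
    then show ?thesis using Q2[of c c' w "j c' b y"] Q2[of c c' u "j c' b y"] a u jy by simp
  qed
  finally show ?thesis unfolding Rf_def y_def by simp
qed

lemma Rf_hol: assumes t: "0 < t" "t \<le> 1" "t < \<gamma>" and a: "0 < a" "t < b - a" "b \<le> r0"
  shows "Hol a b 0 t (Rf a b)"
proof -
  have la: "lev a" and lb: "lev b" using a t by auto
  obtain Ka where Ka: "Ka \<ge> 0" "\<forall>u\<in>U. \<forall>hs. opn a a (Rf a a u hs) \<le> Ka" using Rf_bnd[of a a] a t by auto
  obtain Kb where Kb: "Kb \<ge> 0" "\<forall>u\<in>U. \<forall>hs. opn b b (Rf b b u hs) \<le> Kb" using Rf_bnd[of b b] a t by auto
  obtain CQ where CQ: "\<forall>u\<in>U. \<forall>v\<in>U. \<forall>hs. length hs = 0 \<longrightarrow>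
      opn a b (\<lambda>x. Qf a b u hs x - Qf a b v hs x) \<le> CQ * norm (u - v) powr t * pn hs"
    using Q_hol[OF t a] unfolding Hol_def by blast
  show ?thesis unfolding Hol_def
  proof (intro exI[of _ "Ka * CQ * Kb"] ballI allI impI)
    fix u v and hs :: "'b list" assume u: "u \<in> U" and v: "v \<in> U" and l: "length hs = 0"
    have S: "bop a a (Rf a a u hs)" using Rf_bop a t u by simp
    have DQb: "bop a b (\<lambda>y. Q a b u y - Q a b v y)" using bop_minus(1)[OF la lb Q_bop Q_bop] a t u v by simp
    have W: "bop b b (Rf b b v hs)" using Rf_bop a t v by simp
    have oq: "opn a b (\<lambda>y. Q a b u y - Q a b v y) \<le> CQ * norm (u - v) powr t" using CQ u v l by (simp add: Qf_def)
    have "opn a b (\<lambda>x. Rf a b u hs x - Rf a b v hs x) = opn a b (\<lambda>x. Rf a a u hs ((\<lambda>y. Q a b u y - Q a b v y) (Rf b b v hs x)))"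
    proof (rule opn_cong)
      fix x assume x: "x \<in> V b"
      show "Rf a b u hs x - Rf a b v hs x = Rf a a u hs ((\<lambda>y. Q a b u y - Q a b v y) (Rf b b v hs x))"
        using Rf_diff[of a a b b u v x hs] a t u v x by simp
    qed
    also have "\<dots> \<le> Ka * ((CQ * norm (u - v) powr t) * Kb)"
      by (rule opn_comp_le[OF la la lb S bop_comp(1)[OF la lb lb DQb W]])
         (use Ka u in simp, rule opn_comp_le[OF la lb lb DQb W oq], use Kb v in simp)
    finally show "opn a b (\<lambda>x. Rf a b u hs x - Rf a b v hs x) \<le> Ka * CQ * Kb * norm (u - v) powr t * pn hs"
      using l by (simp add: algebra_simps)
  qed
qed

lemma Rf_base: assumes a: "0 < a" "b \<le> r0" and t: "0 \<le> t" "t \<le> 1" "t < b - a" "t < \<gamma>"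
  shows "Creg a b 0 t (Rf a b)"
proof -
  have M: "MB a b 0 (Rf a b)" using Rf_MB a t by simp
  show ?thesis
  proof (cases "t = 0")
    case False
    then have tp: "0 < t" using t by simp
    show ?thesis by (rule creg_intro_hol[OF tp t(2) M Rf_hol[OF tp t(2) t(4) a(1) t(3) a(2)]])
  next
    case True
    define \<beta> where "\<beta> = min 1 (min (b - a) \<gamma>) / 2"
    have mm: "min 1 (min (b - a) \<gamma>) \<le> 1" "min 1 (min (b - a) \<gamma>) \<le> b - a"
      "min 1 (min (b - a) \<gamma>) \<le> \<gamma>" "0 < min 1 (min (b - a) \<gamma>)" using t True by auto
    have bp: "0 < \<beta>" "\<beta> \<le> 1" "\<beta> < b - a" "\<beta> < \<gamma>" unfolding \<beta>_def using mm by linarith+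
    have "Cont a b 0 (Rf a b)" by (rule Hol_Cont[OF bp(1) Rf_hol[OF bp(1,2,4) a(1) bp(3) a(2)]])
    then show ?thesis using creg_intro0[OF M] True by simp
  qed
qed

end

lemma aux_frac: fixes P e :: real assumes P: "0 \<le> P" and e: "0 < e" shows "P * (e / (2 * (P + 1))) \<le> e / 2"
proof -
  have P1: "0 < P + 1" using P by simp
  have "P * (e / (2 * (P + 1))) = (e / 2) * (P / (P + 1))" using P1 by (simp add: field_simps)
  also have "\<dots> \<le> (e / 2) * 1" using P P1 e by (intro mult_left_mono) auto
  finally show ?thesis by simp
qed

context scq begin

lemma R_der: assumes FR: "Fam Rf 0 0 g" and g: "0 < g" and g1: "1 < \<gamma>" and a: "0 < a" "1 < b - a" "b \<le> r0"
  shows "Der a b 0 (Rf a b) (Pf [False] 0 1 Rf (Pf [True] 1 0 DQ Rf) a b)"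
  unfolding Der_def
proof (intro ballI allI impI)
  have FD: "Fam DQ 1 1 (\<gamma> - 1)" by (rule fam_DQ[OF g1])
  have FP: "Fam (Pf [True] 1 0 DQ Rf) 1 1 (min (\<gamma> - 1) g)" using prod_fam[OF FD FR, of "[True]"] by simp
  have gp: "0 < \<gamma> - 1" "0 < min (\<gamma> - 1) g" using g g1 by auto
  define s where "s = (b - a - 1) / 3"
  have sp: "0 < s" unfolding s_def using a by simp
  have s3: "3 * s = b - a - 1" unfolding s_def by simp
  define c where "c = a + s"
  define c' where "c' = b - s"
  have cc: "a < c" "c + 1 < c'" "c' < b" "a + 0 < c" "c + 1 < b" "a \<le> c" "c \<le> c'" "c < c'" "c' + 0 < b" "c' \<le> b"
    unfolding c_def c'_def using sp s3 by linarith+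
  have la: "lev a" and lc: "lev c" and lc': "lev c'" and lb: "lev b" using a cc by auto
  obtain KRa where KRa: "KRa \<ge> 0" "\<forall>w\<in>U. \<forall>hs. opn a c (Rf a c w hs) \<le> KRa" using Rf_bnd[of a c] a cc lc by auto
  obtain KRb where KRb: "KRb \<ge> 0" "\<forall>w\<in>U. \<forall>hs. opn c' b (Rf c' b w hs) \<le> KRb" using Rf_bnd[of c' b] a cc lc' by auto
  have DQV: "Der c c' 0 (Qf c c') (DQ c c')" "MB c c' 1 (DQ c c')" using DQ_ex[OF g1 _ cc(2)] lc lc' by auto
  obtain KDQ where KDQ: "KDQ \<ge> 0" "\<forall>w\<in>U. \<forall>hs. length hs = 1 \<longrightarrow> opn c c' (DQ c c' w hs) \<le> KDQ * pn hs"
    using MB_bnd0[OF DQV(2)] by blast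
  have CR: "Cont a c 0 (Rf a c)" using fam_cont[OF FR g a(1) cc(4)] lc by simp
  fix u e assume u: "u \<in> U" and e: "(0::real) < e"
  define e1 where "e1 = e / (2 * (KRa * KRb + 1))"
  define e2 where "e2 = e / (2 * ((1 + KDQ) * KRb + 1))"
  have ep: "e1 > 0" "e2 > 0" unfolding e1_def e2_def using e KRa KRb KDQ by (auto intro!: divide_pos_pos add_nonneg_pos)
  obtain d1 where d1: "d1 > 0" "\<forall>h. norm h < d1 \<and> u + h \<in> U \<longrightarrow>
      (\<forall>hs. length hs = 0 \<longrightarrow> opn c c' (\<lambda>x. Qf c c' (u + h) hs x - Qf c c' u hs x - DQ c c' u (h # hs) x) \<le> e1 * norm h * pn hs)"
    using DQV(1) u ep(1) unfolding Der_def by blast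
  obtain d0 where d0: "d0 > 0" "\<forall>h. norm h < d0 \<and> u + h \<in> U \<longrightarrow>
      (\<forall>hs. length hs = 0 \<longrightarrow> opn c c' (\<lambda>x. Qf c c' (u + h) hs x - Qf c c' u hs x - DQ c c' u (h # hs) x) \<le> 1 * norm h * pn hs)"
    using DQV(1) u unfolding Der_def by (meson zero_less_one)
  obtain d2 where d2: "d2 > 0" "\<forall>v\<in>U. norm (v - u) < d2 \<longrightarrow>
      (\<forall>hs. length hs = 0 \<longrightarrow> opn a c (\<lambda>x. Rf a c v hs x - Rf a c u hs x) \<le> e2 * pn hs)"
    using CR u ep(2) unfolding Cont_def by blast
  show "\<exists>d>0. \<forall>h. norm h < d \<and> u + h \<in> U \<longrightarrow> (\<forall>hs. length hs = 0 \<longrightarrow>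
     opn a b (\<lambda>x. Rf a b (u + h) hs x - Rf a b u hs x - Pf [False] 0 1 Rf (Pf [True] 1 0 DQ Rf) a b u (h # hs) x) \<le> e * norm h * pn hs)"
  proof (intro exI[of _ "min d1 (min d0 d2)"] conjI allI impI)
    fix h and hs :: "'b list" assume h: "norm h < min d1 (min d0 d2) \<and> u + h \<in> U" and l: "length hs = 0"
    have hs: "hs = []" using l by simp
    define w where "w = u + h"
    have w: "w \<in> U" using h unfolding w_def by simp
    have bQ: "bop c c' (Q c c' w)" "bop c c' (Q c c' u)" using Q_bop[of c c'] cc(7) lc lc' w u by auto
    have bD: "bop c c' (DQ c c' u [h])" using MB_bop[OF DQV(2) u] by simp
    define A where "A = (\<lambda>y. Q c c' w y - Q c c' u y - DQ c c' u [h] y)"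
    define DQQ where "DQQ = (\<lambda>y. Q c c' w y - Q c c' u y)"
    have bDQQ: "bop c c' DQQ" unfolding DQQ_def by (rule bop_minus(1)[OF lc lc' bQ])
    have bA: "bop c c' A" unfolding A_def by (rule bop_D3[OF lc lc' bQ bD])
    have oA: "opn c c' A \<le> e1 * norm h" using d1(2) h l unfolding A_def w_def Qf_def by fastforce
    have oA0: "opn c c' A \<le> norm h" using d0(2) h l unfolding A_def w_def Qf_def by fastforce
    have oD: "opn c c' (DQ c c' u [h]) \<le> KDQ * norm h"
    proof -
      have "length [h] = 1" by simp
      then have "opn c c' (DQ c c' u [h]) \<le> KDQ * pn [h]" using KDQ(2) u by blast
      then show ?thesis by simp
    qed
    have oDQQ: "opn c c' DQQ \<le> (1 + KDQ) * norm h"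
    proof -
      have "opn c c' DQQ = opn c c' (\<lambda>y. A y + DQ c c' u [h] y)" by (rule opn_cong) (simp add: A_def DQQ_def)
      also have "\<dots> \<le> opn c c' A + opn c c' (DQ c c' u [h])" by (rule bop_plus(2)[OF lc lc' bA bD])
      also have "\<dots> \<le> (1 + KDQ) * norm h" using oA0 oD by (simp add: algebra_simps)
      finally show ?thesis .
    qed
    have bRb: "bop c' b (Rf c' b u [])" using Rf_bop[of c' b u] lc' cc(10) lb u by simp
    have bRa: "bop a c (Rf a c u [])" "bop a c (Rf a c w [])" using Rf_bop[of a c] a(1) cc(6) lc u w by auto
    have S2: "bop a c (\<lambda>v. Rf a c w [] v - Rf a c u [] v)" by (rule bop_minus(1)[OF la lc bRa(2) bRa(1)])
    have T1: "bop c b (\<lambda>x. A (Rf c' b u [] x))" by (rule bop_comp(1)[OF lc lc' lb bA bRb])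
    have T2: "bop c b (\<lambda>x. DQQ (Rf c' b u [] x))" by (rule bop_comp(1)[OF lc lc' lb bDQQ bRb])
    have "opn a b (\<lambda>x. Rf a b (u + h) hs x - Rf a b u hs x - Pf [False] 0 1 Rf (Pf [True] 1 0 DQ Rf) a b u (h # hs) x)
       \<le> KRa * ((e1 * norm h) * KRb) + e2 * (((1 + KDQ) * norm h) * KRb)"
    proof (rule opn_two[OF la lc lc lb bRa(1) T1 S2 T2])
      show "opn a c (Rf a c u []) \<le> KRa" using KRa u by simp
      show "opn c b (\<lambda>x. A (Rf c' b u [] x)) \<le> e1 * norm h * KRb"
        by (rule opn_comp_le[OF lc lc' lb bA bRb oA]) (use KRb u in simp)
      show "opn a c (\<lambda>v. Rf a c w [] v - Rf a c u [] v) \<le> e2"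
        using d2(2) w h unfolding w_def by fastforce
      show "opn c b (\<lambda>x. DQQ (Rf c' b u [] x)) \<le> (1 + KDQ) * norm h * KRb"
        by (rule opn_comp_le[OF lc lc' lb bDQQ bRb oDQQ]) (use KRb u in simp)
    next
      fix x assume x: "x \<in> V b"
      define y' where "y' = Rf c' b u [] x"
      have y': "y' \<in> V c'" unfolding y'_def using Rf_in[of c' b u x] lc' cc(10) lb u x by simp
      have E1: "Rf a b w [] x - Rf a b u [] x = Rf a c w [] (DQQ y')"
        unfolding DQQ_def y'_def using Rf_diff[of a c c' b w u x "[]"] cc lb w u x a by simp
      have E2: "Pf [False] 0 1 Rf (Pf [True] 1 0 DQ Rf) a b u [h] x = Rf a c u [] (Pf [True] 1 0 DQ Rf c b u [h] x)"
        using pf_at[OF FR FP g gp(2) _ _ a(1) cc(4) cc(5) a(3) u _ x, of "[False]" "[h]"] by simp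
      have E3: "Pf [True] 1 0 DQ Rf c b u [h] x = DQ c c' u [h] y'"
        unfolding y'_def using pf_at[OF FD FR gp(1) g _ _ _ cc(2) cc(9) a(3) u _ x, of "[True]" "[h]"] lc by simp
      have i1: "DQQ y' \<in> V c" "DQ c c' u [h] y' \<in> V c" using bop_in[OF bDQQ y'] bop_in[OF bD y'] by auto
      have E4: "Rf a c u [] (A y') = Rf a c u [] (DQQ y') - Rf a c u [] (DQ c c' u [h] y')"
        unfolding A_def using bop_diff[OF lc bRa(1) i1] unfolding DQQ_def by simp
      show "Rf a b (u + h) hs x - Rf a b u hs x - Pf [False] 0 1 Rf (Pf [True] 1 0 DQ Rf) a b u (h # hs) x =
        Rf a c u [] (A (Rf c' b u [] x)) + (Rf a c w [] (DQQ (Rf c' b u [] x)) - Rf a c u [] (DQQ (Rf c' b u [] x)))"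
        unfolding hs w_def[symmetric] E2 E3 y'_def[symmetric] E4 using E1 by (simp add: algebra_simps)
    qed
    also have "\<dots> \<le> e * norm h * pn hs"
    proof -
      have n: "0 \<le> norm h" by simp
      have "KRa * e1 * KRb = (KRa * KRb) * (e / (2 * (KRa * KRb + 1)))" unfolding e1_def by (simp add: algebra_simps)
      also have "\<dots> \<le> e / 2" by (rule aux_frac) (use KRa KRb e in auto)
      finally have "KRa * e1 * KRb \<le> e / 2" .
      then have "(KRa * e1 * KRb) * norm h \<le> (e / 2) * norm h" using n by (rule mult_right_mono)
      then have t1: "KRa * ((e1 * norm h) * KRb) \<le> (e / 2) * norm h" by (simp add: algebra_simps)
      have "e2 * (1 + KDQ) * KRb = ((1 + KDQ) * KRb) * (e / (2 * ((1 + KDQ) * KRb + 1)))" unfolding e2_def by (simp add: algebra_simps)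
      also have "\<dots> \<le> e / 2" by (rule aux_frac) (use KRb KDQ e in auto)
      finally have "e2 * (1 + KDQ) * KRb \<le> e / 2" .
      then have "(e2 * (1 + KDQ) * KRb) * norm h \<le> (e / 2) * norm h" using n by (rule mult_right_mono)
      then have t2: "e2 * (((1 + KDQ) * norm h) * KRb) \<le> (e / 2) * norm h" by (simp add: algebra_simps)
      show ?thesis using t1 t2 hs by simp
    qed
    finally show "opn a b (\<lambda>x. Rf a b (u + h) hs x - Rf a b u hs x - Pf [False] 0 1 Rf (Pf [True] 1 0 DQ Rf) a b u (h # hs) x)
       \<le> e * norm h * pn hs" .
  qed (use d1 d0 d2 in simp)
qed

lemma R_creg_n: "\<forall>a b t. 0 < a \<longrightarrow> b \<le> r0 \<longrightarrow> 0 \<le> t \<longrightarrow> t < real n + 1 \<longrightarrow> t < b - a \<longrightarrow> t < \<gamma> \<longrightarrow>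
   Creg a b 0 t (Rf a b)"
proof (induction n)
  case 0
  show ?case
  proof (intro allI impI)
    fix a b t assume "0 < a" "b \<le> r0" "0 \<le> t" "t < real 0 + 1" "t < b - a" "t < \<gamma>"
    then show "Creg a b 0 t (Rf a b)" using Rf_base by simp
  qed
next
  case (Suc n)
  show ?case
  proof (intro allI impI)
    fix a b t assume a: "0 < a" and b: "b \<le> r0" and t: "0 \<le> t" "t < real (Suc n) + 1" "t < b - a" "t < \<gamma>"
    show "Creg a b 0 t (Rf a b)"
    proof (cases "t \<le> 1")
      case True then show ?thesis using Rf_base[OF a b t(1) True t(3,4)] by simp
    next
      case False
      then have t1: "1 < t" by simp
      have lb: "lev b" using a b t by simp
      have g1: "1 < \<gamma>" using t t1 by simp
      define g where "g = min \<gamma> (real n + 1)"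
      have gp: "0 < g" unfolding g_def using gp by simp
      have FR: "Fam Rf 0 0 g" unfolding Fam_def FReg_def
      proof (intro conjI allI impI)
        fix a' b' t' assume "0 < a'" "b' \<le> r0" "0 \<le> t'" "t' < b' - a' - 0" "t' < g"
        then show "Creg a' b' 0 t' (Rf a' b')" using Suc.IH unfolding g_def by simp
      qed (use Rf_coh in auto)
      have FD: "Fam DQ 1 1 (\<gamma> - 1)" by (rule fam_DQ[OF g1])
      have FP: "Fam (Pf [True] 1 0 DQ Rf) 1 1 (min (\<gamma> - 1) g)" using prod_fam[OF FD FR, of "[True]"] by simp
      have FO: "Fam (Pf [False] 0 1 Rf (Pf [True] 1 0 DQ Rf)) 1 1 (min g (min (\<gamma> - 1) g))"
        using prod_fam[OF FR FP, of "[False]"] by simp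
      have C: "Creg a b 1 (t - 1) (Pf [False] 0 1 Rf (Pf [True] 1 0 DQ Rf) a b)"
        by (rule fam_creg[OF FO a b]) (use t t1 in \<open>auto simp: g_def\<close>)
      have C': "Creg a b (Suc 0) (t - 1) (Pf [False] 0 1 Rf (Pf [True] 1 0 DQ Rf) a b)" using C by simp
      have D: "Der a b 0 (Rf a b) (Pf [False] 0 1 Rf (Pf [True] 1 0 DQ Rf) a b)"
        by (rule R_der[OF FR gp g1 a _ b]) (use t t1 in simp)
      have M: "MB a b 0 (Rf a b)" using Rf_MB a b t by simp
      show ?thesis by (rule creg_intro_der[OF lb t1 M D C'])
    qed
  qed
qed

lemma R_creg: assumes "0 < a" "b \<le> r0" "0 \<le> t" "t < b - a" "t < \<gamma>" shows "Creg a b 0 t (Rf a b)"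
proof -
  obtain n :: nat where n: "t < real n + 1" using reals_Archimedean2[of t] by (metis add.commute add_strict_increasing zero_less_one less_imp_le)
  show ?thesis using R_creg_n[of n] assms n by simp
qed

end

context sc begin

lemma creg_Ct: assumes la: "lev a" and lb: "lev b" and t: "0 \<le> t" and C: "Creg a b 0 t F"
  shows "C_t V nrm a b U t (\<lambda>u x. F u [] x)"
proof (cases "t = 0")
  case True
  have Co: "Cont a b 0 F" using C True unfolding Creg_def by simp
  show ?thesis unfolding C_t_def if_P[OF True]
  proof (intro ballI allI impI)
    fix u e assume u: "u \<in> U" and e: "(0::real) < e"
    obtain d where d: "d > 0" "\<forall>v\<in>U. norm (v - u) < d \<longrightarrow>
      (\<forall>hs. length hs = 0 \<longrightarrow> opn a b (\<lambda>x. F v hs x - F u hs x) \<le> (e / 2) * pn hs)"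
      using Co u e unfolding Cont_def by (meson half_gt_zero)
    show "\<exists>d>0. \<forall>v\<in>U. norm (v - u) < d \<longrightarrow> opnorm V nrm a b (\<lambda>x. F v [] x - F u [] x) < e"
    proof (intro exI[of _ d] conjI ballI impI)
      fix v assume v: "v \<in> U" "norm (v - u) < d"
      have "opn a b (\<lambda>x. F v [] x - F u [] x) \<le> (e / 2) * pn ([] :: 'b list)" using d(2) v by blast
      then show "opnorm V nrm a b (\<lambda>x. F v [] x - F u [] x) < e" using e by simp
    qed (rule d)
  qed
next
  case False
  obtain D where D: "EQ b 0 (D 0) F" "GR a b 0 (kk t) (aa t) D" using C False unfolding Creg_def by auto
  have M: "\<And>i. i \<le> kk t \<Longrightarrow> MB a b i (D i)" using D(2) unfolding GR_def by simp
  have De: "\<And>i. i < kk t \<Longrightarrow> Der a b i (D i) (D (Suc i))" using D(2) unfolding GR_def by simp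
  have H: "Hol a b (kk t) (aa t) (D (kk t))" using D(2) unfolding GR_def by simp
  have kd: "nat (\<lceil>t\<rceil> - 1) = kk t" "t - real (kk t) = aa t" unfolding kk_def aa_def by auto
  have "C_k_alpha V nrm a b U (kk t) (aa t) (\<lambda>u x. F u [] x)" unfolding C_k_alpha_def
  proof (intro exI[of _ D] conjI)
    show "\<forall>u\<in>U. \<forall>x\<in>V b. D 0 u [] x = F u [] x" using D(1) by simp
    show "\<forall>i\<le>kk t. \<forall>u\<in>U. \<forall>hs. length hs = i \<longrightarrow> bounded_op V nrm a b (D i u hs)" using M MB_bop by blast
    show "\<forall>i\<le>kk t. \<forall>u\<in>U. \<forall>hs p a' h h'. length hs = i \<and> p < i \<longrightarrow>
          (\<forall>x\<in>V b. D i u (hs[p := a' *\<^sub>R h + h']) x = a' *\<^sub>R D i u (hs[p := h]) x + D i u (hs[p := h']) x)"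
      using M MB_lin by blast
    show "\<forall>i\<le>kk t. \<forall>u\<in>U. \<exists>C. \<forall>hs. length hs = i \<longrightarrow> opnorm V nrm a b (D i u hs) \<le> C * prod_list (map norm hs)"
    proof (intro allI impI ballI)
      fix i u assume "i \<le> kk t" "u \<in> U"
      then obtain C where "\<forall>u\<in>U. \<forall>hs. length hs = i \<longrightarrow> opn a b (D i u hs) \<le> C * pn hs" using MB_bnd[OF M] by blast
      then show "\<exists>C. \<forall>hs. length hs = i \<longrightarrow> opnorm V nrm a b (D i u hs) \<le> C * prod_list (map norm hs)" using \<open>u \<in> U\<close> by blast
    qed
    show "\<forall>i<kk t. \<forall>u\<in>U. \<forall>e>0. \<exists>d>0. \<forall>h. norm h < d \<and> u + h \<in> U \<longrightarrow>
          (\<forall>hs. length hs = i \<longrightarrow>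
             opnorm V nrm a b (\<lambda>x. D i (u + h) hs x - D i u hs x - D (Suc i) u (h # hs) x)
               \<le> e * norm h * prod_list (map norm hs))"
    proof (intro allI impI)
      fix i assume ik: "i < kk t"
      show "\<forall>u\<in>U. \<forall>e>0. \<exists>d>0. \<forall>h. norm h < d \<and> u + h \<in> U \<longrightarrow>
          (\<forall>hs. length hs = i \<longrightarrow>
             opnorm V nrm a b (\<lambda>x. D i (u + h) hs x - D i u hs x - D (Suc i) u (h # hs) x)
               \<le> e * norm h * prod_list (map norm hs))" using De[OF ik] unfolding Der_def .
    qed
    show "\<forall>i. 1 \<le> i \<and> i \<le> kk t \<longrightarrow> (\<exists>C. \<forall>u\<in>U. \<forall>hs. length hs = i \<longrightarrow>
          opnorm V nrm a b (D i u hs) \<le> C * prod_list (map norm hs))"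
      using M MB_bnd by blast
    show "\<exists>C. \<forall>u\<in>U. \<forall>v\<in>U. \<forall>hs. length hs = kk t \<longrightarrow>
          opnorm V nrm a b (\<lambda>x. D (kk t) u hs x - D (kk t) v hs x)
            \<le> C * norm (u - v) powr (aa t) * prod_list (map norm hs)" using H unfolding Hol_def .
  qed
  then show ?thesis unfolding C_t_def kd using False by simp
qed

end

theorem lemmaD6:
  fixes r0 \<gamma> :: real
    and V :: "real \<Rightarrow> 'x::real_vector set" and nrm :: "real \<Rightarrow> 'x \<Rightarrow> real"
    and j :: "real \<Rightarrow> real \<Rightarrow> 'x \<Rightarrow> 'x"
    and U :: "'b::banach set"
    and Q :: "real \<Rightarrow> real \<Rightarrow> 'b \<Rightarrow> 'x \<Rightarrow> 'x"
    and R :: "real \<Rightarrow> 'b \<Rightarrow> 'x \<Rightarrow> 'x"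
  assumes "0 < r0" and "0 < \<gamma>" and "\<gamma> \<le> r0"
    and "banach_scale r0 V nrm j"
    and "open U" and "convex U" and "U \<noteq> {}"
    and "equivariant_regular r0 V nrm j U \<gamma> Q"
    and "\<forall>s u. 0 < s \<and> s \<le> r0 \<and> u \<in> U \<longrightarrow>
           bounded_op V nrm s s (R s u) \<and>
           (\<forall>x\<in>V s. R s u (x - Q s s u x) = x) \<and>
           (\<forall>x\<in>V s. R s u x - Q s s u (R s u x) = x)"
    and "\<forall>\<epsilon>>0. \<exists>C. \<forall>s u. \<epsilon> < s \<and> s \<le> r0 \<and> u \<in> U \<longrightarrow> opnorm V nrm s s (R s u) \<le> C"
  shows "equivariant_regular r0 V nrm j U \<gamma> (\<lambda>s r u x. j s r (R r u x))"
proof -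
  interpret scq r0 V nrm j U \<gamma> Q R
    by (intro scq.intro sc.intro scq_axioms.intro) (fact assms)+
  show ?thesis unfolding equivariant_regular_def
  proof (intro conjI allI impI)
    fix s r u assume H: "0 < s \<and> s \<le> r \<and> r \<le> r0 \<and> u \<in> U"
    then have "bop s r (Rf s r u [])" using Rf_bop by blast
    then show "bounded_op V nrm s r (\<lambda>x. j s r (R r u x))" unfolding Rf_def by simp
  next
    fix s r s' r' u assume H: "0 < s \<and> s \<le> r \<and> r \<le> r0 \<and> 0 < s' \<and> s' \<le> r' \<and> r' \<le> r0 \<and> s < s' \<and> r < r' \<and> u \<in> U"
    show "\<forall>x\<in>V r'. j s s' (j s' r' (R r' u x)) = j s r (R r u (j r r' x))"
    proof
      fix x assume x: "x \<in> V r'"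
      have rx: "R r' u x \<in> V r'" using bop_in[OF Rb x] H by simp
      have "j s s' (j s' r' (R r' u x)) = j s r' (R r' u x)" using j_comp[of s s' r'] H rx by simp
      also have "\<dots> = j s r (j r r' (R r' u x))" using j_comp[of s r r'] H rx by simp
      also have "\<dots> = j s r (R r u (j r r' x))" using RQ[of r r' u x] H x by simp
      finally show "j s s' (j s' r' (R r' u x)) = j s r (R r u (j r r' x))" .
    qed
  next
    fix s r t assume H: "0 < s \<and> s \<le> r \<and> r \<le> r0 \<and> 0 \<le> t \<and> t < min \<gamma> (r - s)"
    have C: "Creg s r 0 t (Rf s r)" using R_creg[of s r t] H by simp
    have "C_t V nrm s r U t (\<lambda>u x. Rf s r u [] x)" by (rule creg_Ct[OF _ _ _ C]) (use H in auto)
    then show "C_t V nrm s r U t (\<lambda>u x. j s r (R r u x))" unfolding Rf_def by simp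
  qed
qed


end
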